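(* The invariants $Q_b\in\mathbb{Z}_6$, $Q_g\in\mathbb{Z}_6$ and $Q_c\in\mathbb{Z}_4$ of a $T^*$-colored link diagram are conserved under topologically allowed local reconnections.
   Context: $T^*=\{\pm1,\pm i,\pm j,\pm k,\tfrac{\pm1\pm i\pm j\pm k}{2}\}$ is the binary tetrahedral group (unit quaternions, all sign combinations), $Q_8=\{\pm1,\pm i,\pm j,\pm k\}$. A $T^*$-colored link diagram is an oriented diagram of a tame link $\mathcal L\subset\mathbb{R}^3$ together with a homomorphism $\phi:\pi_1(\mathbb{R}^3\setminus\mathcal L)\to T^*$, each arc carrying the label $\phi(m_a)$ of its Wirtinger meridian (basepoint above the projection plane, sense given by the orientation of the arc; reversing orientation inverts labels). At a crossing $c$ where a component passes under an over-arc labeled $g$, incoming under-label $x$ and outgoing under-label $x'$ satisfy $x'=g^{\varepsilon_c}xg^{-\varepsilon_c}$, $\varepsilon_c\in\{\pm1\}$ determined by the sign of the crossing. A topologically allowed reconnection is an oriented band move (saddle) across a complementary region of the diagram between two arc segments on the boundary of that region which run in opposite directions across the region and carry the same label $x$; the two segments are cut and reconnected inside the region compatibly with the orientations, and the new arcs carry label $x$. A component is black if its labels lie in $\{\tfrac{1\pm i\pm j\pm k}{2}\}$, gray if in $\{\tfrac{-1\pm i\pm j\pm k}{2}\}$, a $Q_8$-loop if in $\{\pm i,\pm j,\pm k\}$, purple if its label is $-1$. Black components are oriented so their labels lie in the conjugacy class of $\tfrac{1-i-j-k}{2}$ (those $\tfrac{1\pm i\pm j\pm k}{2}$ with an odd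 number of minus signs); gray components so their labels lie in the conjugacy class of $\tfrac{-1+i+j+k}{2}$ (those $\tfrac{-1\pm i\pm j\pm k}{2}$ with an even number of minus signs); $Q_8$-loops carry arbitrary orientations. For a black or $Q_8$ component $L$ with basepoint $b$ on an arc with label $\chi(b)$ of order $n$: traverse $L$ from $b$, let $c_1,\dots,c_m$ be the successive crossings where $L$ passes under an arc whose label is not $-1$, with over-arc labels $g_r$, set $q(L,b)=g_m^{\varepsilon_{c_m}}\cdots g_1^{\varepsilon_{c_1}}$; then $q(L,b)=\chi(b)^{Q'(L)}$ with $Q'(L)\in\mathbb{Z}_n$ independent of $b$. Crossing signs use the right-hand rule. Define $Q_b=\sum_{L\text{ black}}Q'(L)-\omega_b-4l_{bg}\in\mathbb{Z}_6$, where $\omega_b$ is the signed count of crossings in which both strands are black and $l_{bg}$ the signed count of crossings where a black strand passes under a gray strand; $Q_g=Q_b(\rho(\mathcal D))$, where $\rho(\mathcal D)$ is the $T^*$-colored diagram obtained by replacing every label $a\notin Q_8$ by $-a$ (labels in $Q_8$ unchanged, orientations unchanged); $Q_c=\sum_{L\ Q_8\text{-loop}}Q'(L)-\omega_c\in\mathbb{Z}_4$, where $\omega_c$ is the signed count of crossings in which both strands belong to $Q_8$-loops (for any choice of orientations and basepoints of the $Q_8$-loops). *)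

theory Defs
  imports Complex_Main
begin

section \<open>Quaternions and the binary tetrahedral group\<close>

datatype quat = Quat (qre: real) (qi: real) (qj: real) (qk: real)

definition qone :: quat where "qone = Quat 1 0 0 0"

definition qneg :: "quat \<Rightarrow> quat" where
  "qneg q = Quat (- qre q) (- qi q) (- qj q) (- qk q)"

definition qmul :: "quat \<Rightarrow> quat \<Rightarrow> quat" where
  "qmul p q = Quat
     (qre p * qre q - qi p * qi q - qj p * qj q - qk p * qk q)
     (qre p * qi q + qi p * qre q + qj p * qk q - qk p * qj q)
     (qre p * qj q - qi p * qk q + qj p * qre q + qk p * qi q)
     (qre p * qk q + qi p * qj q - qj p * qi q + qk p * qre q)"

definition qinv :: "quat \<Rightarrow> quat" where
  "qinv q = (let n = (qre q)\<^sup>2 + (qi q)\<^sup>2 + (qj q)\<^sup>2 + (qk q)\<^sup>2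
             in Quat (qre q / n) (- qi q / n) (- qj q / n) (- qk q / n))"

primrec qpow :: "quat \<Rightarrow> nat \<Rightarrow> quat" where
  "qpow q 0 = qone"
| "qpow q (Suc n) = qmul q (qpow q n)"

definition qzpow :: "quat \<Rightarrow> int \<Rightarrow> quat" where
  "qzpow q k = (if 0 \<le> k then qpow q (nat k) else qpow (qinv q) (nat (- k)))"

definition Q8 :: "quat set" where
  "Q8 = {Quat s 0 0 0 | s. s \<in> {1, -1}} \<union> {Quat 0 s 0 0 | s. s \<in> {1, -1}}
      \<union> {Quat 0 0 s 0 | s. s \<in> {1, -1}} \<union> {Quat 0 0 0 s | s. s \<in> {1, -1}}"

definition Tstar :: "quat set" where
  "Tstar = Q8 \<union> {Quat a b c d | a b c d.
      a \<in> {1/2, -1/2} \<and> b \<in> {1/2, -1/2} \<and> c \<in> {1/2, -1/2} \<and> d \<in> {1/2, -1/2}}"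

text \<open>The "good" classes: black with an odd number of minus
  signs (conjugacy class of (1-i-j-k)/2), gray with an even number of minus signs
  (conjugacy class of (-1+i+j+k)/2).\<close>
definition is_black :: "quat \<Rightarrow> bool" where
  "is_black q \<longleftrightarrow> q \<in> Tstar \<and> qre q = 1/2"
definition black_good :: "quat \<Rightarrow> bool" where
  "black_good q \<longleftrightarrow> is_black q \<and> qi q * qj q * qk q < 0"
definition is_gray :: "quat \<Rightarrow> bool" where
  "is_gray q \<longleftrightarrow> q \<in> Tstar \<and> qre q = -1/2"
definition gray_good :: "quat \<Rightarrow> bool" where
  "gray_good q \<longleftrightarrow> is_gray q \<and> qi q * qj q * qk q > 0"
definition is_Q8loop :: "quat \<Rightarrow> bool" where
  "is_Q8loop q \<longleftrightarrow> q \<in> Tstar \<and> qre q = 0"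

section \<open>Combinatorial oriented link diagrams on the sphere\<close>

text \<open>
  A crossing c has four slots (c,0),(c,1),(c,2),(c,3) in counterclockwise order;
  the under-strand runs through slots 0 and 2, the over-strand through slots 1 and 3.
  Every edge in Es (a piece of the diagram between two crossing slots) has a tail slot
  and a head slot, and is oriented from tail to head.  Fs are the crossingless
  components (free loops).  A dart (e,True) is the
  left side of e, (e,False) its right side; ereg assigns to each side the
  complementary region of the diagram it faces.\<close>

record diagram =
  Xs :: "nat set"
  Es :: "nat set"
  Fs :: "nat set"
  etail :: "nat \<Rightarrow> nat \<times> nat"
  ehead :: "nat \<Rightarrow> nat \<times> nat"
  elab :: "nat \<Rightarrow> quat"
  ereg :: "nat \<times> bool \<Rightarrow> nat"

definition slots :: "diagram \<Rightarrow> (nat \<times> nat) set" where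
  "slots D = Xs D \<times> {0..<4}"

definition edge_end :: "diagram \<Rightarrow> nat \<times> bool \<Rightarrow> nat \<times> nat" where
  "edge_end D eb = (if snd eb then ehead D (fst eb) else etail D (fst eb))"

definition wf_pd :: "diagram \<Rightarrow> bool" where
  "wf_pd D \<longleftrightarrow> finite (Xs D) \<and> finite (Es D) \<and> finite (Fs D) \<and> Es D \<inter> Fs D = {}
     \<and> bij_betw (edge_end D) (Es D \<times> UNIV) (slots D)
     \<and> (\<forall>c\<in>Xs D. ((c,0) \<in> ehead D ` Es D \<longleftrightarrow> (c,2) \<in> etail D ` Es D)
                 \<and> ((c,1) \<in> ehead D ` Es D \<longleftrightarrow> (c,3) \<in> etail D ` Es D))"

definition edge_at :: "diagram \<Rightarrow> nat \<times> nat \<Rightarrow> nat" where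
  "edge_at D s = (THE e. e \<in> Es D \<and> (ehead D e = s \<or> etail D e = s))"

text \<open>incoming slot of the under-strand and of the over-strand at crossing c\<close>
definition uin :: "diagram \<Rightarrow> nat \<Rightarrow> nat" where
  "uin D c = (if (c,0) \<in> ehead D ` Es D then 0 else 2)"
definition oin :: "diagram \<Rightarrow> nat \<Rightarrow> nat" where
  "oin D c = (if (c,1) \<in> ehead D ` Es D then 1 else 3)"

text \<open>crossing sign (right-hand rule): positive iff, going counterclockwise from the
  incoming under-slot, the next slot is the outgoing over-slot\<close>
definition csign :: "diagram \<Rightarrow> nat \<Rightarrow> int" where
  "csign D c = (if oin D c = (uin D c + 3) mod 4 then 1 else -1)"

definition overlab :: "diagram \<Rightarrow> nat \<Rightarrow> quat" where
  "overlab D c = elab D (edge_at D (c, 1))"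
definition in_under :: "diagram \<Rightarrow> nat \<Rightarrow> nat" where
  "in_under D c = edge_at D (c, uin D c)"
definition out_under :: "diagram \<Rightarrow> nat \<Rightarrow> nat" where
  "out_under D c = edge_at D (c, (uin D c + 2) mod 4)"

text \<open>T*-coloring = Wirtinger relations (with epsilon_c = sign of c)\<close>
definition colored :: "diagram \<Rightarrow> bool" where
  "colored D \<longleftrightarrow> (\<forall>e \<in> Es D \<union> Fs D. elab D e \<in> Tstar)
     \<and> (\<forall>c\<in>Xs D. elab D (edge_at D (c,1)) = elab D (edge_at D (c,3))
         \<and> elab D (out_under D c) =
             qmul (qmul (qzpow (overlab D c) (csign D c)) (elab D (in_under D c)))
                  (qzpow (overlab D c) (- csign D c)))"

definition darts :: "diagram \<Rightarrow> (nat \<times> bool) set" where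
  "darts D = (Es D \<union> Fs D) \<times> UNIV"

text \<open>next dart along the boundary of a face, keeping the face on the left\<close>
definition dnext :: "diagram \<Rightarrow> nat \<times> bool \<Rightarrow> nat \<times> bool" where
  "dnext D d = (if fst d \<in> Fs D then d else
     (let cp = edge_end D d; s = (fst cp, (snd cp + 3) mod 4); e' = edge_at D s
      in (e', etail D e' = s)))"

definition equiv_closure :: "('a \<times> 'a) set \<Rightarrow> ('a \<times> 'a) set" where
  "equiv_closure R = (R \<union> R\<inverse>)\<^sup>*"

definition face_rel :: "diagram \<Rightarrow> ((nat \<times> bool) \<times> (nat \<times> bool)) set" where
  "face_rel D = equiv_closure {(d, dnext D d) | d. d \<in> darts D}"

definition piece_rel :: "diagram \<Rightarrow> ((nat \<times> bool) \<times> (nat \<times> bool)) set" where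
  "piece_rel D = equiv_closure ({(d, dnext D d) | d. d \<in> darts D}
                     \<union> {((e,b), (e, \<not> b)) | e b. (e,b) \<in> darts D})"

definition faces :: "diagram \<Rightarrow> (nat \<times> bool) set set" where
  "faces D = darts D // face_rel D"
definition pieces :: "diagram \<Rightarrow> (nat \<times> bool) set set" where
  "pieces D = darts D // piece_rel D"
definition regions :: "diagram \<Rightarrow> nat set" where
  "regions D = ereg D ` darts D"

text \<open>Planarity on the sphere: every connected piece is a genus-0 map (Euler), the
  region of a side is constant along face boundaries, and the incidence multigraph
  pieces--regions (one edge per face) is a tree.\<close>
definition planar :: "diagram \<Rightarrow> bool" where
  "planar D \<longleftrightarrow> (\<forall>d\<in>darts D. ereg D (dnext D d) = ereg D d)
     \<and> card (faces D) = card (Xs D) + 2 * card (pieces D)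
     \<and> (darts D \<noteq> {} \<longrightarrow> card (regions D) + card (pieces D) = card (faces D) + 1)
     \<and> darts D \<times> darts D \<subseteq> equiv_closure (piece_rel D \<union>
          {(d, d') | d d'. d \<in> darts D \<and> d' \<in> darts D \<and> ereg D d = ereg D d'})"

definition Tstar_diagram :: "diagram \<Rightarrow> bool" where
  "Tstar_diagram D \<longleftrightarrow> wf_pd D \<and> planar D \<and> colored D"

section \<open>Components and the invariants\<close>

definition esucc :: "diagram \<Rightarrow> nat \<Rightarrow> nat" where
  "esucc D e = (if e \<in> Es D then edge_at D (fst (ehead D e), (snd (ehead D e) + 2) mod 4)
                else e)"

definition components :: "diagram \<Rightarrow> nat set set" where
  "components D = {{(esucc D ^^ n) e | n. True} | e. e \<in> Es D \<union> Fs D}"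

definition period :: "diagram \<Rightarrow> nat \<Rightarrow> nat" where
  "period D e = (LEAST n. 0 < n \<and> (esucc D ^^ n) e = e)"

text \<open>contribution of an edge: if the edge ends by passing under an over-arc with label
  g \<noteq> -1 at crossing c, it contributes g^(eps_c)\<close>
definition ufactor :: "diagram \<Rightarrow> nat \<Rightarrow> quat" where
  "ufactor D e = (let c = fst (ehead D e) in
     if e \<in> Es D \<and> snd (ehead D e) \<in> {0, 2} \<and> overlab D c \<noteq> qneg qone
     then qzpow (overlab D c) (csign D c) else qone)"

primrec qprod :: "diagram \<Rightarrow> nat \<Rightarrow> nat \<Rightarrow> quat" where
  "qprod D b 0 = qone"
| "qprod D b (Suc t) = qmul (ufactor D ((esucc D ^^ t) b)) (qprod D b t)"

definition qLb :: "diagram \<Rightarrow> nat \<Rightarrow> quat" where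
  "qLb D b = qprod D b (period D b)"

text \<open>Q'(L): q(L,b) = chi(b)^Q'(L) for every basepoint b on L (an integer
  representative of the class in Z_n)\<close>
definition Qprime :: "diagram \<Rightarrow> nat set \<Rightarrow> int" where
  "Qprime D L = (SOME k. \<forall>b\<in>L. qLb D b = qzpow (elab D b) k)"

definition black_comp :: "diagram \<Rightarrow> nat set \<Rightarrow> bool" where
  "black_comp D L \<longleftrightarrow> (\<forall>e\<in>L. is_black (elab D e))"
definition Q8_comp :: "diagram \<Rightarrow> nat set \<Rightarrow> bool" where
  "Q8_comp D L \<longleftrightarrow> (\<forall>e\<in>L. is_Q8loop (elab D e))"

definition reverse_edges :: "nat set \<Rightarrow> diagram \<Rightarrow> diagram" where
  "reverse_edges S D = D\<lparr>
     etail := (\<lambda>e. if e \<in> S then ehead D e else etail D e),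
     ehead := (\<lambda>e. if e \<in> S then etail D e else ehead D e),
     elab := (\<lambda>e. if e \<in> S then qinv (elab D e) else elab D e),
     ereg := (\<lambda>(e,b). if e \<in> S then ereg D (e, \<not> b) else ereg D (e, b))\<rparr>"

definition orient_bg :: "diagram \<Rightarrow> diagram" where
  "orient_bg D = reverse_edges {e \<in> Es D \<union> Fs D.
       (is_black (elab D e) \<and> \<not> black_good (elab D e))
     \<or> (is_gray (elab D e) \<and> \<not> gray_good (elab D e))} D"

definition omega_b :: "diagram \<Rightarrow> int" where
  "omega_b D = (\<Sum>c\<in>Xs D. if is_black (overlab D c) \<and> is_black (elab D (in_under D c))
                            then csign D c else 0)"

definition l_bg :: "diagram \<Rightarrow> int" where
  "l_bg D = (\<Sum>c\<in>Xs D. if is_gray (overlab D c) \<and> is_black (elab D (in_under D c))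
                         then csign D c else 0)"

definition omega_c :: "diagram \<Rightarrow> int" where
  "omega_c D = (\<Sum>c\<in>Xs D. if is_Q8loop (overlab D c) \<and> is_Q8loop (elab D (in_under D c))
                            then csign D c else 0)"

definition Qb_oriented :: "diagram \<Rightarrow> int" where
  "Qb_oriented D = ((\<Sum>L\<in>{L\<in>components D. black_comp D L}. Qprime D L)
                    - omega_b D - 4 * l_bg D) mod 6"

definition Qb :: "diagram \<Rightarrow> int" where
  "Qb D = Qb_oriented (orient_bg D)"

definition rho :: "diagram \<Rightarrow> diagram" where
  "rho D = D\<lparr>elab := (\<lambda>e. if elab D e \<in> Q8 then elab D e else qneg (elab D e))\<rparr>"

definition Qg :: "diagram \<Rightarrow> int" where
  "Qg D = Qb (rho D)"

definition Qc :: "diagram \<Rightarrow> int" where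
  "Qc D = ((\<Sum>L\<in>{L\<in>components D. Q8_comp D L}. Qprime D L) - omega_c D) mod 4"

section \<open>Topologically allowed reconnections (oriented band moves)\<close>

definition fresh :: "diagram \<Rightarrow> nat" where
  "fresh D = Suc (Max (insert 0 (Es D \<union> Fs D)))"

definition add_free_loop :: "quat \<Rightarrow> diagram \<Rightarrow> diagram" where
  "add_free_loop x D = D\<lparr>Fs := insert (fresh D) (Fs D), elab := (elab D)(fresh D := x)\<rparr>"

text \<open>The band attaches to a segment of e1 and a segment of e2 (edges or free loops).
  The segments are cut and reconnected compatibly with the orientations: the part
  arriving along e1 continues along e2 and vice versa.  (Region data of the result are
  not recomputed; the invariants do not depend on them.)\<close>
definition band_move :: "diagram \<Rightarrow> nat \<Rightarrow> nat \<Rightarrow> diagram" where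
  "band_move D e1 e2 =
    (if e1 = e2 then add_free_loop (elab D e1) D
     else if e1 \<in> Es D \<and> e2 \<in> Es D then
       D\<lparr>ehead := (ehead D)(e1 := ehead D e2, e2 := ehead D e1)\<rparr>
     else if e1 \<in> Fs D then D\<lparr>Fs := Fs D - {e1}\<rparr>
     else D\<lparr>Fs := Fs D - {e2}\<rparr>)"

text \<open>allowed: the two segments lie on the boundary of the same complementary region,
  on the same side (left or right) of their strands -- i.e. they run in opposite
  directions across the region -- and carry the same label\<close>
definition allowed_reconnection :: "diagram \<Rightarrow> nat \<Rightarrow> nat \<Rightarrow> bool \<Rightarrow> bool" where
  "allowed_reconnection D e1 e2 s \<longleftrightarrow> e1 \<in> Es D \<union> Fs D \<and> e2 \<in> Es D \<union> Fs D
     \<and> ereg D (e1, s) = ereg D (e2, s) \<and> elab D e1 = elab D e2"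

end

theory Submission
  imports Defs
begin


lemma quat_eq_iff: "p = q \<longleftrightarrow> qre p = qre q \<and> qi p = qi q \<and> qj p = qj q \<and> qk p = qk q"
  by (cases p; cases q) auto

instantiation quat :: "{ring_1, inverse}"
begin
definition "0 = Quat 0 0 0 0"
definition "1 = qone"
definition "p + q = Quat (qre p + qre q) (qi p + qi q) (qj p + qj q) (qk p + qk q)"
definition "p - q = Quat (qre p - qre q) (qi p - qi q) (qj p - qj q) (qk p - qk q)"
definition "- q = qneg q"
definition "p * q = qmul p q"
definition "inverse q = qinv q"
definition "p div q = qmul p (qinv q)"
instance
  by standard (simp_all add: quat_eq_iff zero_quat_def one_quat_def plus_quat_def minus_quat_def
     uminus_quat_def times_quat_def qone_def qneg_def qmul_def algebra_simps)
end

lemma qnorm_pos: "q \<noteq> 0 \<Longrightarrow> (qre q)\<^sup>2 + (qi q)\<^sup>2 + (qj q)\<^sup>2 + (qk q)\<^sup>2 \<noteq> 0"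
  by (auto simp: quat_eq_iff zero_quat_def add_nonneg_eq_0_iff)

instance quat :: division_ring
proof
  fix a :: quat assume a: "a \<noteq> 0"
  define n where "n = (qre a)\<^sup>2 + (qi a)\<^sup>2 + (qj a)\<^sup>2 + (qk a)\<^sup>2"
  have n: "n \<noteq> 0" using qnorm_pos[OF a] by (simp add: n_def)
  have inv: "inverse a = Quat (qre a / n) (- qi a / n) (- qj a / n) (- qk a / n)"
    by (simp add: inverse_quat_def qinv_def n_def Let_def)
  show "inverse a * a = 1" "a * inverse a = 1"
    using n by (simp_all add: inv quat_eq_iff times_quat_def one_quat_def qmul_def qone_def
        divide_simps, (simp add: n_def power2_eq_square algebra_simps)?)+
next
  show "inverse (0::quat) = 0" by (simp add: inverse_quat_def qinv_def zero_quat_def)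
next
  fix a b :: quat show "a div b = a * inverse b"
    by (simp add: divide_quat_def times_quat_def inverse_quat_def)
qed


type_synonym i4 = "int \<times> int \<times> int \<times> int"

definition toQ :: "i4 \<Rightarrow> quat" where
  "toQ x = (case x of (a,b,c,d) \<Rightarrow> Quat (of_int a/2) (of_int b/2) (of_int c/2) (of_int d/2))"

definition L24 :: "i4 list" where
 "L24 = [(2,0,0,0), (-2,0,0,0), (0,2,0,0), (0,-2,0,0), (0,0,2,0), (0,0,-2,0), (0,0,0,2), (0,0,0,-2),
   (1,1,1,1),(1,1,1,-1),(1,1,-1,1),(1,1,-1,-1),(1,-1,1,1),(1,-1,1,-1),(1,-1,-1,1),(1,-1,-1,-1),
   (-1,1,1,1),(-1,1,1,-1),(-1,1,-1,1),(-1,1,-1,-1),(-1,-1,1,1),(-1,-1,1,-1),(-1,-1,-1,1),(-1,-1,-1,-1)]"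

lemma T1: "Tstar = {Quat 1 0 0 0, Quat (-1) 0 0 0, Quat 0 1 0 0, Quat 0 (-1) 0 0,
          Quat 0 0 1 0, Quat 0 0 (-1) 0, Quat 0 0 0 1, Quat 0 0 0 (-1)} \<union>
     {Quat a b c d | a b c d. a \<in> {1/2, -1/2} \<and> b \<in> {1/2, -1/2} \<and> c \<in> {1/2, -1/2} \<and> d \<in> {1/2, -1/2}}"
    unfolding Tstar_def Q8_def by blast

lemma T2: "x \<in> Tstar \<Longrightarrow> \<exists>v\<in>set L24. x = toQ v"
  unfolding T1 by (elim UnE insertE CollectE exE conjE; simp only: L24_def; simp add: toQ_def)

lemma T3h: "a \<in> {1/2, -1/2} \<Longrightarrow> b \<in> {1/2, -1/2} \<Longrightarrow> c \<in> {1/2, -1/2} \<Longrightarrow> d \<in> {1/2, -1/2}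
   \<Longrightarrow> Quat a b c d \<in> Tstar"
  unfolding T1
  apply (rule UnI2, rule CollectI)
  apply (rule exI[where x=a], rule exI[where x=b], rule exI[where x=c], rule exI[where x=d])
  apply (intro conjI refl; assumption)
  done

lemma T3q: "s \<in> {1,-1} \<Longrightarrow> Quat s 0 0 0 \<in> Tstar \<and> Quat 0 s 0 0 \<in> Tstar \<and> Quat 0 0 s 0 \<in> Tstar \<and> Quat 0 0 0 s \<in> Tstar"
  unfolding Tstar_def Q8_def by (intro conjI; rule UnI1; blast)

lemma T3: "v \<in> set L24 \<Longrightarrow> toQ v \<in> Tstar"
  unfolding L24_def
  apply (simp only: set_simps insert_iff)
  apply (elim disjE)
  apply (simp_all add: toQ_def)
  apply (simp_all add: T3q T3h)
  done


fun rawmul :: "i4 \<Rightarrow> i4 \<Rightarrow> i4" where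
 "rawmul (a,b,c,d) (e,f,g,h) = ((a*e - b*f - c*g - d*h) div 2, (a*f + b*e + c*h - d*g) div 2,
     (a*g - b*h + c*e + d*f) div 2, (a*h + b*g - c*f + d*e) div 2)"

fun rawmul2 :: "i4 \<Rightarrow> i4 \<Rightarrow> i4" where
 "rawmul2 (a,b,c,d) (e,f,g,h) = ((a*e - b*f - c*g - d*h), (a*f + b*e + c*h - d*g),
     (a*g - b*h + c*e + d*f), (a*h + b*g - c*f + d*e))"

fun dbl :: "i4 \<Rightarrow> i4" where "dbl (a,b,c,d) = (2*a,2*b,2*c,2*d)"
fun qcnj :: "i4 \<Rightarrow> i4" where "qcnj (a,b,c,d) = (a,-b,-c,-d)"
fun nrm :: "i4 \<Rightarrow> int" where "nrm (a,b,c,d) = a*a+b*b+c*c+d*d"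
fun pw :: "i4 \<Rightarrow> nat \<Rightarrow> i4" where
  "pw x 0 = (2,0,0,0)" | "pw x (Suc n) = rawmul x (pw x n)"
fun goodB :: "i4 \<Rightarrow> bool" where "goodB (a,b,c,d) = (b*c*d < 0)"
fun goodG :: "i4 \<Rightarrow> bool" where "goodG (a,b,c,d) = (b*c*d > 0)"

lemma closure_int: "list_all (\<lambda>x. list_all (\<lambda>y. rawmul2 x y = dbl (rawmul x y) \<and> rawmul x y \<in> set L24) L24) L24"
  by code_simp

lemma cnj_int: "list_all (\<lambda>x. qcnj x \<in> set L24 \<and> nrm x = 4) L24"
  by code_simp

fun neg4 :: "i4 \<Rightarrow> i4" where "neg4 (a,b,c,d) = (-a,-b,-c,-d)"

lemma centr_int: "list_all (\<lambda>x. fst x \<in> {0,1} \<longrightarrow> list_all (\<lambda>y. rawmul x y = rawmul y x \<longrightarrow>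
     y \<in> {(2,0,0,0), (-2,0,0,0), x, neg4 x, qcnj x, neg4 (qcnj x)}) L24) L24"
  by code_simp

lemma order_int: "list_all (\<lambda>x. (fst x = 1 \<longrightarrow> pw x 3 = (-2,0,0,0) \<and> x \<notin> {(2,0,0,0),(-2,0,0,0)} \<and> pw x 2 \<notin> {(2,0,0,0),(-2,0,0,0)})
                          \<and> (fst x = 0 \<longrightarrow> pw x 2 = (-2,0,0,0) \<and> x \<notin> {(2,0,0,0),(-2,0,0,0)})) L24"
  by code_simp

lemma conj_int: "list_all (\<lambda>g. list_all (\<lambda>x. fst (rawmul (rawmul g x) (qcnj g)) = fst x \<and>
     (fst x = 1 \<longrightarrow> (goodB (rawmul (rawmul g x) (qcnj g)) \<longleftrightarrow> goodB x)) \<and>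
     (fst x = -1 \<longrightarrow> (goodG (rawmul (rawmul g x) (qcnj g)) \<longleftrightarrow> goodG x))) L24) L24"
  by code_simp


lemma toQ_inj: "toQ x = toQ y \<Longrightarrow> x = y"
  by (cases x; cases y) (simp add: toQ_def)

lemma toQ_mul_raw: "rawmul2 v w = dbl z \<Longrightarrow> toQ v * toQ w = toQ z"
proof (cases v; cases w; cases z)
  fix a b c d e f g h z1 z2 z3 z4
  assume v: "v = (a,b,c,d)" and w: "w = (e,f,g,h)" and z: "z = (z1,z2,z3,z4)" and eq: "rawmul2 v w = dbl z"
  from eq have e1: "real_of_int (a*e - b*f - c*g - d*h) = real_of_int (2*z1)"
    and e2: "real_of_int (a*f + b*e + c*h - d*g) = real_of_int (2*z2)"
    and e3: "real_of_int (a*g - b*h + c*e + d*f) = real_of_int (2*z3)"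
    and e4: "real_of_int (a*h + b*g - c*f + d*e) = real_of_int (2*z4)"
    using eq by (simp_all add: v w z)
  show "toQ v * toQ w = toQ z"
    using e1 e2 e3 e4 by (simp add: v w z toQ_def times_quat_def qmul_def)
qed

lemma toQ_mul: "v \<in> set L24 \<Longrightarrow> w \<in> set L24 \<Longrightarrow> toQ v * toQ w = toQ (rawmul v w) \<and> rawmul v w \<in> set L24"
  using closure_int toQ_mul_raw by (simp add: list_all_iff)

lemma toQ_one: "toQ (2,0,0,0) = 1" by (simp add: toQ_def one_quat_def qone_def)
lemma toQ_neg: "toQ (neg4 v) = - toQ v"
  by (cases v) (simp add: toQ_def uminus_quat_def qneg_def)
lemma toQ_cnj: "v \<in> set L24 \<Longrightarrow> inverse (toQ v) = toQ (qcnj v) \<and> qcnj v \<in> set L24"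
proof -
  assume v: "v \<in> set L24"
  then have n: "nrm v = 4" and c: "qcnj v \<in> set L24" using cnj_int by (auto simp: list_all_iff)
  obtain a b c d where vv: "v = (a,b,c,d)" by (cases v)
  have n': "(real_of_int a/2)\<^sup>2 + (real_of_int b/2)\<^sup>2 + (real_of_int c/2)\<^sup>2 + (real_of_int d/2)\<^sup>2 = 1"
  proof -
    have "real_of_int (a*a+b*b+c*c+d*d) = 4" using n by (simp add: vv)
    then show ?thesis by (simp add: power2_eq_square field_simps)
  qed
  show ?thesis using c n' by (simp add: vv toQ_def inverse_quat_def qinv_def Let_def)
qed

lemma toQ_pw: "v \<in> set L24 \<Longrightarrow> toQ (pw v n) = toQ v ^ n \<and> pw v n \<in> set L24"
proof (induction n)
  case 0 then show ?case by (simp add: toQ_one L24_def)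
next
  case (Suc n) then show ?case using toQ_mul[of v "pw v n"] by simp
qed

lemma Tstar_cases: "q \<in> Tstar \<Longrightarrow> \<exists>v\<in>set L24. q = toQ v" using T2 by blast

lemma Tstar_mult: "a \<in> Tstar \<Longrightarrow> b \<in> Tstar \<Longrightarrow> a * b \<in> Tstar"
  by (metis Tstar_cases toQ_mul T3)

lemma Tstar_inverse: "a \<in> Tstar \<Longrightarrow> inverse a \<in> Tstar"
  by (metis Tstar_cases toQ_cnj T3)

lemma Tstar_one: "1 \<in> Tstar"
  using T3[of "(2,0,0,0)"] by (simp add: toQ_one L24_def)

lemma Tstar_neg: "a \<in> Tstar \<Longrightarrow> - a \<in> Tstar"
proof -
  assume "a \<in> Tstar"
  then obtain v where v: "v \<in> set L24" "a = toQ v" using Tstar_cases by blast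
  have "neg4 v \<in> set L24" using v(1) unfolding L24_def by auto
  then show ?thesis using T3 v by (simp add: toQ_neg[symmetric])
qed

lemma Tstar_nz: "a \<in> Tstar \<Longrightarrow> a \<noteq> 0"
proof
  assume "a \<in> Tstar" "a = 0"
  then obtain v where v: "v \<in> set L24" "0 = toQ v" using Tstar_cases by blast
  have "toQ v = toQ (0,0,0,0)" using v by (simp add: toQ_def zero_quat_def)
  then have "v = (0,0,0,0)" by (rule toQ_inj)
  with v show False unfolding L24_def by simp
qed

lemma Tstar_pow: "a \<in> Tstar \<Longrightarrow> a ^ n \<in> Tstar"
  by (induction n) (auto simp: Tstar_one Tstar_mult)

lemma qre_toQ: "qre (toQ v) = real_of_int (fst v) / 2"
  by (cases v) (simp add: toQ_def)

lemma Tstar_re: "v \<in> set L24 \<Longrightarrow> (qre (toQ v) = 1/2 \<longleftrightarrow> fst v = 1) \<and> (qre (toQ v) = 0 \<longleftrightarrow> fst v = 0)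
   \<and> (qre (toQ v) = -1/2 \<longleftrightarrow> fst v = -1)"
  by (simp add: qre_toQ) linarith

lemma centralizer:
  assumes x: "x \<in> Tstar" "qre x = 1/2 \<or> qre x = 0" and q: "q \<in> Tstar" and c: "q * x = x * q"
  shows "q \<in> {1, -1, x, -x, inverse x, - inverse x}"
proof -
  obtain v where v: "v \<in> set L24" "x = toQ v" using x Tstar_cases by blast
  obtain w where w: "w \<in> set L24" "q = toQ w" using q Tstar_cases by blast
  have f: "fst v \<in> {0,1}" using x(2) v Tstar_re by auto
  have "toQ (rawmul v w) = toQ (rawmul w v)" using c v w toQ_mul by metis
  then have "rawmul v w = rawmul w v" by (rule toQ_inj)
  then have "w \<in> {(2,0,0,0), (-2,0,0,0), v, neg4 v, qcnj v, neg4 (qcnj v)}"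
  proof -
    have "\<forall>y\<in>set L24. rawmul v y = rawmul y v \<longrightarrow> y \<in> {(2,0,0,0), (-2,0,0,0), v, neg4 v, qcnj v, neg4 (qcnj v)}"
      using centr_int v(1) f unfolding list_all_iff by blast
    then show ?thesis using w(1) \<open>rawmul v w = rawmul w v\<close> by blast
  qed
  then have "toQ w \<in> toQ ` {(2,0,0,0), (-2,0,0,0), v, neg4 v, qcnj v, neg4 (qcnj v)}" by blast
  moreover have "toQ (-2,0,0,0) = -1" by (simp add: toQ_def uminus_quat_def qneg_def one_quat_def qone_def)
  moreover have "toQ (neg4 (2,0,0,0)) = toQ (-2,0,0,0)" by simp
  ultimately show ?thesis
    using w v toQ_cnj[OF v(1)] by (simp add: toQ_one toQ_neg)
qed

lemma orders:
  assumes x: "x \<in> Tstar"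
  shows "qre x = 1/2 \<Longrightarrow> x ^ 3 = -1 \<and> x \<noteq> 1 \<and> x \<noteq> -1 \<and> x^2 \<noteq> 1 \<and> x^2 \<noteq> -1"
    and "qre x = 0 \<Longrightarrow> x ^ 2 = -1 \<and> x \<noteq> 1 \<and> x \<noteq> -1"
proof -
  obtain v where v: "v \<in> set L24" "x = toQ v" using x Tstar_cases by blast
  have m1: "toQ (-2,0,0,0) = -1" by (simp add: toQ_def uminus_quat_def qneg_def one_quat_def qone_def)
  have ne: "\<And>w. toQ w = 1 \<longleftrightarrow> w = (2,0,0,0)" "\<And>w. toQ w = -1 \<longleftrightarrow> w = (-2,0,0,0)"
    using toQ_inj toQ_one m1 by metis+
  have p: "\<And>n. x ^ n = toQ (pw v n)" using toQ_pw v by metis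
  show "qre x = 1/2 \<Longrightarrow> x ^ 3 = -1 \<and> x \<noteq> 1 \<and> x \<noteq> -1 \<and> x^2 \<noteq> 1 \<and> x^2 \<noteq> -1"
  proof -
    assume "qre x = 1/2"
    then have "fst v = 1" using Tstar_re v by auto
    then show ?thesis using order_int v(1) unfolding list_all_iff p
      by (simp add: ne) (metis ne v(2))
  qed
  show "qre x = 0 \<Longrightarrow> x ^ 2 = -1 \<and> x \<noteq> 1 \<and> x \<noteq> -1"
  proof -
    assume "qre x = 0"
    then have "fst v = 0" using Tstar_re v by auto
    then show ?thesis using order_int v(1) unfolding list_all_iff p
      by (simp add: ne) (metis ne v(2))
  qed
qed


definition classP :: "(quat \<Rightarrow> bool) \<Rightarrow> int \<Rightarrow> bool" where
  "classP P N \<longleftrightarrow> N > 0 \<and> (\<forall>x. P x \<longrightarrow> x \<in> Tstar \<and> (\<forall>k m. x powi k = x powi m \<longleftrightarrow> k mod N = m mod N))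
     \<and> (\<forall>x g. P x \<longrightarrow> g \<in> Tstar \<longrightarrow> P (g * x * inverse g))
     \<and> (\<forall>x q. P x \<longrightarrow> q \<in> Tstar \<longrightarrow> q * x = x * q \<longrightarrow> (\<exists>k::nat. q = x ^ k))"

lemma powi_mod:
  fixes x :: "'a::division_ring"
  assumes "x \<noteq> 0" "x ^ N = 1" "N > 0"
  shows "x powi k = x ^ nat (k mod int N)"
proof -
  have "k = int N * (k div int N) + k mod int N" by simp
  moreover have "x powi (int N * (k div int N) + k mod int N) = x powi (int N * (k div int N)) * x powi (k mod int N)"
    by (rule power_int_add) (simp add: assms(1))
  ultimately have "x powi k = x powi (int N * (k div int N)) * x powi (k mod int N)"
    by simp
  also have "x powi (int N * (k div int N)) = 1"
    by (simp add: power_int_mult assms)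
  also have "x powi (k mod int N) = x ^ nat (k mod int N)"
    using assms(3) by (simp add: power_int_nonneg_exp)
  finally show ?thesis by simp
qed

lemma pow_inj_lt:
  fixes x :: "'a::division_ring"
  assumes "x \<noteq> 0" "\<forall>k. 0 < k \<and> k < N \<longrightarrow> x ^ k \<noteq> 1" "a < N" "b < N" "x ^ a = x ^ b"
  shows "a = b"
proof (rule ccontr)
  assume ne: "a \<noteq> b"
  have *: "x ^ c \<noteq> x ^ d" if "c < d" "d < N" for c d
  proof
    assume e: "x ^ c = x ^ d"
    have "x ^ d = x ^ c * x ^ (d - c)" using that by (simp flip: power_add)
    then have "x ^ c * x ^ (d - c) = x ^ c * 1" using e by simp
    moreover have "x ^ c \<noteq> 0" using assms(1) by simp
    ultimately have "x ^ (d - c) = 1" using mult_left_cancel by blast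
    with assms(2) that show False by auto
  qed
  show False
  proof (cases "a < b")
    case True with * assms show False by blast
  next
    case False with ne have "b < a" by simp
    with *[of b a] assms show False by simp
  qed
qed

lemma powi_eq_iff:
  fixes x :: "'a::division_ring"
  assumes "x \<noteq> 0" "x ^ N = 1" "N > 0" "\<forall>k. 0 < k \<and> k < N \<longrightarrow> x ^ k \<noteq> 1"
  shows "x powi k = x powi m \<longleftrightarrow> k mod int N = m mod int N"
proof -
  have a: "nat (k mod int N) < N" "nat (m mod int N) < N" using assms(3) by (simp_all add: nat_less_iff)
  have "x powi k = x powi m \<longleftrightarrow> x ^ nat (k mod int N) = x ^ nat (m mod int N)"
    by (simp only: powi_mod[OF assms(1-3)])
  also have "\<dots> \<longleftrightarrow> nat (k mod int N) = nat (m mod int N)"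
    using pow_inj_lt[OF assms(1,4) a] by auto
  also have "\<dots> \<longleftrightarrow> k mod int N = m mod int N" using assms(3) by (simp add: eq_nat_nat_iff)
  finally show ?thesis .
qed

lemma qre_comm: "qre (a * b) = qre (b * a)"
  by (simp add: times_quat_def qmul_def algebra_simps)

lemma qre_conj: assumes "g \<noteq> 0" shows "qre (g * x * inverse g) = qre x"
proof -
  have "qre (g * x * inverse g) = qre (g * (x * inverse g))" by (simp add: mult.assoc)
  also have "\<dots> = qre ((x * inverse g) * g)" by (rule qre_comm)
  also have "\<dots> = qre x" using assms by (simp add: mult.assoc)
  finally show ?thesis .
qed

lemma m1_ne_1: "(-1::quat) \<noteq> 1"
  by (simp add: quat_eq_iff uminus_quat_def qneg_def one_quat_def qone_def)

lemma inv_pow: fixes x :: "'a::division_ring" assumes "x ^ Suc n = 1" shows "inverse x = x ^ n"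
proof -
  have "x * x ^ n = 1" using assms by simp
  then show ?thesis by (rule inverse_unique)
qed

lemma black_facts:
  assumes "x \<in> Tstar" "qre x = 1/2"
  shows "x ^ 6 = 1" "\<forall>k. 0 < k \<and> k < 6 \<longrightarrow> x ^ k \<noteq> 1"
    "\<And>q. q \<in> Tstar \<Longrightarrow> q * x = x * q \<Longrightarrow> \<exists>k::nat. q = x ^ k"
proof -
  note o = orders(1)[OF assms]
  have x6: "x ^ 6 = x^3 * x^3" using power_add[of x 3 3] by simp
  show 6: "x ^ 6 = 1" using o x6 by simp
  have x4: "x ^ 4 = - x" using o power_add[of x 3 1] by simp
  have x5: "x ^ 5 = - (x^2)"
  proof -
    have "x ^ 5 = x^3 * x^2" using power_add[of x 3 2] by simp
    then show ?thesis using o by simp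
  qed
  show "\<forall>k. 0 < k \<and> k < 6 \<longrightarrow> x ^ k \<noteq> 1"
  proof (intro allI impI)
    fix k :: nat assume k: "0 < k \<and> k < 6"
    then have "k = 1 \<or> k = 2 \<or> k = 3 \<or> k = 4 \<or> k = 5" by auto
    then show "x ^ k \<noteq> 1"
    proof (elim disjE)
      assume "k = 4" then show ?thesis using x4 o by (auto simp: minus_equation_iff)
    next
      assume "k = 5" then show ?thesis using x5 o by (auto simp: minus_equation_iff)
    qed (use o m1_ne_1 in auto)
  qed
  have i: "inverse x = x ^ 5" using inv_pow[of x 5] 6 by simp
  fix q assume q: "q \<in> Tstar" "q * x = x * q"
  then have "q \<in> {1, -1, x, -x, inverse x, - inverse x}" using centralizer assms by blast
  moreover have "- inverse x = x ^ 2" using i x5 by simp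
  ultimately show "\<exists>k::nat. q = x ^ k"
  proof (elim insertE emptyE)
    assume "q = 1" then show ?thesis by (intro exI[of _ 0]) simp
  next
    assume "q = -1" then show ?thesis using o by (intro exI[of _ 3]) simp
  next
    assume "q = x" then show ?thesis by (intro exI[of _ 1]) simp
  next
    assume "q = -x" then show ?thesis using x4 by (intro exI[of _ 4]) simp
  next
    assume "q = inverse x" then show ?thesis using i by (intro exI[of _ 5]) simp
  next
    assume "q = - inverse x" then show ?thesis using i x5 by (intro exI[of _ 2]) simp
  qed
qed

lemma q8_facts:
  assumes "x \<in> Tstar" "qre x = 0"
  shows "x ^ 4 = 1" "\<forall>k. 0 < k \<and> k < 4 \<longrightarrow> x ^ k \<noteq> 1"
    "\<And>q. q \<in> Tstar \<Longrightarrow> q * x = x * q \<Longrightarrow> \<exists>k::nat. q = x ^ k"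
proof -
  note o = orders(2)[OF assms]
  have x4: "x ^ 4 = x^2 * x^2" using power_add[of x 2 2] by simp
  show 4: "x ^ 4 = 1" using o x4 by simp
  have x3: "x ^ 3 = - x"
  proof -
    have "x ^ 3 = x^2 * x" using power_add[of x 2 1] by simp
    then show ?thesis using o by simp
  qed
  show "\<forall>k. 0 < k \<and> k < 4 \<longrightarrow> x ^ k \<noteq> 1"
  proof (intro allI impI)
    fix k :: nat assume k: "0 < k \<and> k < 4"
    then have "k = 1 \<or> k = 2 \<or> k = 3" by auto
    then show "x ^ k \<noteq> 1"
    proof (elim disjE)
      assume "k = 3" then show ?thesis using x3 o by (auto simp: minus_equation_iff)
    qed (use o m1_ne_1 in auto)
  qed
  have i: "inverse x = x ^ 3" using inv_pow[of x 3] 4 by simp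
  fix q assume q: "q \<in> Tstar" "q * x = x * q"
  then have "q \<in> {1, -1, x, -x, inverse x, - inverse x}" using centralizer assms by blast
  moreover have "- inverse x = x ^ 1" using i x3 by simp
  ultimately show "\<exists>k::nat. q = x ^ k"
  proof (elim insertE emptyE)
    assume "q = 1" then show ?thesis by (intro exI[of _ 0]) simp
  next
    assume "q = -1" then show ?thesis using o by (intro exI[of _ 2]) simp
  next
    assume "q = x" then show ?thesis by (intro exI[of _ 1]) simp
  next
    assume "q = -x" then show ?thesis using x3 by (intro exI[of _ 3]) simp
  next
    assume "q = inverse x" then show ?thesis using i by (intro exI[of _ 3]) simp
  next
    assume "q = - inverse x" then show ?thesis using i x3 by (intro exI[of _ 1]) simp
  qed
qed

lemma classP_black: "classP is_black 6"
  unfolding classP_def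
proof (intro conjI allI impI)
  fix x assume x: "is_black x"
  then have xt: "x \<in> Tstar" "qre x = 1/2" by (auto simp: is_black_def)
  show "x \<in> Tstar" by (fact xt(1))
  fix k m show "x powi k = x powi m \<longleftrightarrow> k mod 6 = m mod 6"
    using powi_eq_iff[of x 6 k m] black_facts[OF xt] Tstar_nz[OF xt(1)] by simp
next
  fix x g assume "is_black x" "g \<in> Tstar"
  then show "is_black (g * x * inverse g)"
    by (simp add: is_black_def qre_conj Tstar_nz Tstar_mult Tstar_inverse)
next
  fix x q assume "is_black x" "q \<in> Tstar" "q * x = x * q"
  then show "\<exists>k::nat. q = x ^ k" using black_facts(3) by (auto simp: is_black_def)
qed simp

lemma classP_Q8: "classP is_Q8loop 4"
  unfolding classP_def
proof (intro conjI allI impI)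
  fix x assume x: "is_Q8loop x"
  then have xt: "x \<in> Tstar" "qre x = 0" by (auto simp: is_Q8loop_def)
  show "x \<in> Tstar" by (fact xt(1))
  fix k m show "x powi k = x powi m \<longleftrightarrow> k mod 4 = m mod 4"
    using powi_eq_iff[of x 4 k m] q8_facts[OF xt] Tstar_nz[OF xt(1)] by simp
next
  fix x g assume "is_Q8loop x" "g \<in> Tstar"
  then show "is_Q8loop (g * x * inverse g)"
    by (simp add: is_Q8loop_def qre_conj Tstar_nz Tstar_mult Tstar_inverse)
next
  fix x q assume "is_Q8loop x" "q \<in> Tstar" "q * x = x * q"
  then show "\<exists>k::nat. q = x ^ k" using q8_facts(3) by (auto simp: is_Q8loop_def)
qed simp


definition aorb :: "('a \<Rightarrow> 'a) \<Rightarrow> 'a \<Rightarrow> 'a set" where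
  "aorb p a = {(p^^n) a | n. True}"
definition aper :: "('a \<Rightarrow> 'a) \<Rightarrow> 'a \<Rightarrow> nat" where
  "aper p a = (LEAST n. 0 < n \<and> (p^^n) a = a)"
primrec aqp :: "('a \<Rightarrow> 'a) \<Rightarrow> ('a \<Rightarrow> quat) \<Rightarrow> 'a \<Rightarrow> nat \<Rightarrow> quat" where
  "aqp p u a 0 = 1"
| "aqp p u a (Suc t) = u ((p^^t) a) * aqp p u a t"
definition aQp :: "('a \<Rightarrow> 'a) \<Rightarrow> ('a \<Rightarrow> quat) \<Rightarrow> ('a \<Rightarrow> quat) \<Rightarrow> 'a set \<Rightarrow> int" where
  "aQp p u \<chi> L = (SOME k. \<forall>b\<in>L. aqp p u b (aper p b) = \<chi> b powi k)"
definition aSum :: "(quat \<Rightarrow> bool) \<Rightarrow> int \<Rightarrow> 'a set \<Rightarrow> ('a \<Rightarrow> 'a) \<Rightarrow> ('a \<Rightarrow> quat) \<Rightarrow> ('a \<Rightarrow> quat) \<Rightarrow> int" where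
  "aSum P N A p u \<chi> = (\<Sum>L\<in>{L \<in> aorb p ` A. \<forall>e\<in>L. P (\<chi> e)}. aQp p u \<chi> L) mod N"

definition permH :: "'a set \<Rightarrow> ('a \<Rightarrow> 'a) \<Rightarrow> bool" where
  "permH A p \<longleftrightarrow> finite A \<and> inj_on p A \<and> p ` A \<subseteq> A"
definition sysH :: "'a set \<Rightarrow> ('a \<Rightarrow> 'a) \<Rightarrow> ('a \<Rightarrow> quat) \<Rightarrow> ('a \<Rightarrow> quat) \<Rightarrow> bool" where
  "sysH A p u \<chi> \<longleftrightarrow> permH A p \<and> (\<forall>a\<in>A. u a \<in> Tstar \<and> \<chi> a \<in> Tstar \<and> \<chi> (p a) = u a * \<chi> a * inverse (u a))"

lemma funpow_in: "p ` A \<subseteq> A \<Longrightarrow> a \<in> A \<Longrightarrow> (p^^n) a \<in> A"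
  by (induction n) auto

lemma inj_funpow: "inj_on p A \<Longrightarrow> p ` A \<subseteq> A \<Longrightarrow> inj_on (p^^n) A"
proof (induction n)
  case 0 then show ?case by simp
next
  case (Suc n)
  have "(p^^n) ` A \<subseteq> A" using funpow_in[OF Suc.prems(2)] by blast
  then have "inj_on p ((p^^n) ` A)" using inj_on_subset Suc.prems(1) by blast
  then have "inj_on (p \<circ> (p^^n)) A" using comp_inj_on Suc.IH Suc.prems by blast
  then show ?case by (simp add: o_def)
qed

lemma exists_ret: assumes "permH A p" "a \<in> A" shows "\<exists>n>0. (p^^n) a = a"
proof -
  have fin: "finite A" and inj: "inj_on p A" and sub: "p ` A \<subseteq> A" using assms(1) by (auto simp: permH_def)
  have "\<not> inj_on (\<lambda>n. (p^^n) a) {0..card A}"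
  proof
    assume "inj_on (\<lambda>n. (p^^n) a) {0..card A}"
    moreover have "(\<lambda>n. (p^^n) a) ` {0..card A} \<subseteq> A" using funpow_in[OF sub assms(2)] by auto
    ultimately have "card {0..card A} \<le> card A" using card_inj_on_le fin by blast
    then show False by simp
  qed
  then obtain i j where ij: "i \<le> card A" "j \<le> card A" "i \<noteq> j" "(p^^i) a = (p^^j) a"
    unfolding inj_on_def by auto
  have main: "\<exists>n>0. (p^^n) a = a" if "i < j" "(p^^i) a = (p^^j) a" for i j
  proof -
    have "j = i + (j - i)" using that by simp
    then have "(p^^j) a = (p^^(i + (j-i))) a" by simp
    then have "(p^^j) a = (p^^i) ((p^^(j-i)) a)" by (simp only: funpow_add o_apply)
    with that have "(p^^i) ((p^^(j-i)) a) = (p^^i) a" by simp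
    then have "(p^^(j-i)) a = a"
      using inj_funpow[OF inj sub] funpow_in[OF sub assms(2)] assms(2) unfolding inj_on_def by blast
    then show ?thesis using that by (intro exI[of _ "j-i"]) auto
  qed
  show ?thesis
  proof (cases "i < j")
    case True then show ?thesis using main ij by blast
  next
    case False then have "j < i" using ij by simp
    then show ?thesis using main[of j i] ij by auto
  qed
qed

lemma per_props: assumes "permH A p" "a \<in> A"
  shows "0 < aper p a" "(p^^aper p a) a = a" "\<And>t. 0 < t \<Longrightarrow> t < aper p a \<Longrightarrow> (p^^t) a \<noteq> a"
proof -
  obtain n where "0 < n \<and> (p^^n) a = a" using exists_ret[OF assms] by blast
  then have "0 < aper p a \<and> (p^^aper p a) a = a" unfolding aper_def by (rule LeastI)
  then show "0 < aper p a" "(p^^aper p a) a = a" by auto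
  fix t assume "0 < t" "t < aper p a"
  then show "(p^^t) a \<noteq> a" unfolding aper_def using not_less_Least by blast
qed

lemma funpow_mult_ret: "(p^^m) a = a \<Longrightarrow> (p^^(m*q)) a = a"
proof (induction q)
  case 0 then show ?case by simp
next
  case (Suc q)
  have "(p^^(m * Suc q)) a = (p^^m) ((p^^(m*q)) a)" by (simp add: funpow_add)
  then show ?case using Suc by simp
qed

lemma funpow_mod: assumes "(p^^m) a = a" shows "(p^^n) a = (p^^(n mod m)) a"
proof -
  have "(p^^n) a = (p^^(n mod m + m * (n div m))) a" by simp
  also have "\<dots> = (p^^(n mod m)) ((p^^(m * (n div m))) a)" by (simp only: funpow_add o_apply)
  finally have "(p^^n) a = (p^^(n mod m)) ((p^^(m * (n div m))) a)" .
  then show ?thesis using funpow_mult_ret[OF assms] by simp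
qed

lemma orb_fin: assumes "(p^^m) a = a" "0 < m" shows "aorb p a = {(p^^t) a | t. t < m}"
proof
  show "aorb p a \<subseteq> {(p^^t) a | t. t < m}"
  proof
    fix x assume "x \<in> aorb p a"
    then obtain n where "x = (p^^n) a" unfolding aorb_def by blast
    then have "x = (p^^(n mod m)) a" using funpow_mod[OF assms(1), of n] by simp
    moreover have "n mod m < m" using assms(2) by simp
    ultimately show "x \<in> {(p^^t) a | t. t < m}" by blast
  qed
qed (auto simp: aorb_def)

lemma orb_self: "a \<in> aorb p a"
  unfolding aorb_def by (auto intro: exI[of _ 0])

lemma orb_sub: "p ` A \<subseteq> A \<Longrightarrow> a \<in> A \<Longrightarrow> aorb p a \<subseteq> A"
proof
  fix x assume "p ` A \<subseteq> A" "a \<in> A" "x \<in> aorb p a"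
  then show "x \<in> A" unfolding aorb_def using funpow_in[of p A a] by blast
qed

lemma orb_step: "(p^^j) a \<in> aorb p a"
  unfolding aorb_def by blast

lemma orb_sym: assumes "permH A p" "a \<in> A" "b \<in> aorb p a" shows "aorb p b = aorb p a"
proof -
  obtain j where b: "b = (p^^j) a" using assms(3) unfolding aorb_def by blast
  define m where "m = aper p a"
  have m: "(p^^m) a = a" "0 < m" using per_props[OF assms(1,2)] by (auto simp: m_def)
  show ?thesis
  proof
    show "aorb p b \<subseteq> aorb p a"
    proof
      fix x assume "x \<in> aorb p b"
      then obtain n where "x = (p^^n) b" unfolding aorb_def by blast
      then have "x = (p^^(n+j)) a" by (simp add: funpow_add b)
      then show "x \<in> aorb p a" by (simp add: orb_step)
    qed
  next
    show "aorb p a \<subseteq> aorb p b"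
    proof
      fix x assume "x \<in> aorb p a"
      then obtain n where x: "x = (p^^n) a" unfolding aorb_def by blast
      have "(p^^(m*j)) a = a" using funpow_mult_ret[OF m(1)] .
      then have "x = (p^^n) ((p^^(m*j)) a)" using x by simp
      also have "\<dots> = (p^^(n + m*j)) a" by (simp add: funpow_add)
      also have "n + m*j = (n + m*j - j) + j"
      proof -
        have "j \<le> m*j" using m(2) by simp
        then show ?thesis by arith
      qed
      also have "(p^^((n + m*j - j) + j)) a = (p^^(n + m*j - j)) b" by (simp only: funpow_add o_apply b)
      finally have "x = (p^^(n + m*j - j)) b" .
      then show "x \<in> aorb p b" by (rule ssubst) (rule orb_step)
    qed
  qed
qed

lemma orb_mem_sym: assumes "permH A p" "a \<in> A" "b \<in> aorb p a" shows "a \<in> aorb p b"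
  using orb_sym[OF assms] orb_self[of a p] by simp

lemma orb_eq_iff: assumes "permH A p" "a \<in> A" shows "(aorb p a = aorb p b \<longleftrightarrow> b \<in> aorb p a)"
  using orb_sym[OF assms] orb_self[of b p] by auto

lemma per_orb: assumes "permH A p" "a \<in> A" "b \<in> aorb p a" shows "aper p b = aper p a"
proof -
  obtain j where b: "b = (p^^j) a" using assms(3) unfolding aorb_def by blast
  have "a \<in> aorb p b" using orb_mem_sym[OF assms] .
  then obtain k where a: "a = (p^^k) b" unfolding aorb_def by blast
  have comm: "(p^^n) ((p^^m) x) = (p^^m) ((p^^n) x)" for n m x
  proof -
    have "(p^^n) ((p^^m) x) = (p^^(n+m)) x" by (simp add: funpow_add)
    also have "\<dots> = (p^^(m+n)) x" by (simp add: add.commute)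
    also have "\<dots> = (p^^m) ((p^^n) x)" by (simp add: funpow_add)
    finally show ?thesis .
  qed
  have "\<And>n. (p^^n) b = b \<longleftrightarrow> (p^^n) a = a"
  proof
    fix n assume "(p^^n) b = b"
    then show "(p^^n) a = a" using a comm[of n k b] by simp
  next
    fix n assume "(p^^n) a = a"
    then show "(p^^n) b = b" using b comm[of n j a] by simp
  qed
  then show ?thesis unfolding aper_def by simp
qed


lemma sysH_permH: "sysH A p u \<chi> \<Longrightarrow> permH A p" by (simp add: sysH_def)
lemma sysH_sub: "sysH A p u \<chi> \<Longrightarrow> p ` A \<subseteq> A" by (simp add: sysH_def permH_def)

lemma aqp_add: "aqp p u a (s + t) = aqp p u ((p^^s) a) t * aqp p u a s"
proof (induction t)
  case 0 then show ?case by simp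
next
  case (Suc t)
  have "(p^^(s + t)) a = (p^^(t + s)) a" by (simp add: add.commute)
  then have "(p^^(s + t)) a = (p^^t) ((p^^s) a)" by (simp only: funpow_add o_apply)
  then show ?case using Suc by (simp add: mult.assoc)
qed

lemma aqp_T: assumes "sysH A p u \<chi>" "a \<in> A" shows "aqp p u a t \<in> Tstar"
proof (induction t)
  case 0 then show ?case by (simp add: Tstar_one)
next
  case (Suc t)
  have "(p^^t) a \<in> A" using funpow_in[OF sysH_sub[OF assms(1)] assms(2)] .
  then have "u ((p^^t) a) \<in> Tstar" using assms(1) by (simp add: sysH_def)
  then show ?case using Suc by (simp add: Tstar_mult)
qed

lemma conj_inv: fixes a b x :: quat assumes "a \<noteq> 0" "b \<noteq> 0"
  shows "a * (b * x * inverse b) * inverse a = (a * b) * x * inverse (a * b)"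
  using assms by (simp add: nonzero_inverse_mult_distrib mult.assoc)

lemma aqp_conj: assumes "sysH A p u \<chi>" "a \<in> A"
  shows "\<chi> ((p^^t) a) = aqp p u a t * \<chi> a * inverse (aqp p u a t)"
proof (induction t)
  case 0 then show ?case by simp
next
  case (Suc t)
  have in_A: "(p^^t) a \<in> A" using funpow_in[OF sysH_sub[OF assms(1)] assms(2)] .
  then have uT: "u ((p^^t) a) \<in> Tstar" and ch: "\<chi> (p ((p^^t) a)) = u ((p^^t) a) * \<chi> ((p^^t) a) * inverse (u ((p^^t) a))"
    using assms(1) by (auto simp: sysH_def)
  have qT: "aqp p u a t \<in> Tstar" using aqp_T[OF assms] .
  show ?case using ch Suc conj_inv[OF Tstar_nz[OF uT] Tstar_nz[OF qT]] by simp
qed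

lemma conj_pow: fixes h x :: quat assumes "h \<noteq> 0" shows "(h * x * inverse h) ^ n = h * x ^ n * inverse h"
proof (induction n)
  case 0 then show ?case using assms by simp
next
  case (Suc n)
  have "(h * x * inverse h) ^ Suc n = (h * x * inverse h) * (h * x ^ n * inverse h)" using Suc by simp
  also have "\<dots> = h * x * (inverse h * h) * x ^ n * inverse h" by (simp add: mult.assoc)
  also have "\<dots> = h * x ^ Suc n * inverse h" using assms by (simp add: mult.assoc)
  finally show ?case .
qed

lemma aqp_exists: assumes "sysH A p u \<chi>" "classP P N" "a \<in> A" "P (\<chi> a)"
  shows "\<exists>k::nat. aqp p u a (aper p a) = \<chi> a ^ k"
proof -
  define q where "q = aqp p u a (aper p a)"
  have qT: "q \<in> Tstar" unfolding q_def using aqp_T[OF assms(1,3)] .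
  have eq: "\<chi> a = q * \<chi> a * inverse q"
    using aqp_conj[OF assms(1,3), of "aper p a"] per_props(2)[OF sysH_permH[OF assms(1)] assms(3)]
    by (simp add: q_def)
  have "\<chi> a * q = q * \<chi> a * inverse q * q" using arg_cong[OF eq, of "\<lambda>z. z * q"] .
  also have "\<dots> = q * \<chi> a" using Tstar_nz[OF qT] by (simp add: mult.assoc)
  finally have "q * \<chi> a = \<chi> a * q" by simp
  moreover have "\<forall>x q. P x \<longrightarrow> q \<in> Tstar \<longrightarrow> q * x = x * q \<longrightarrow> (\<exists>k::nat. q = x ^ k)"
    using assms(2) unfolding classP_def by blast
  ultimately show ?thesis using assms(4) qT unfolding q_def by blast
qed

lemma aqp_all: assumes "sysH A p u \<chi>" "a \<in> A" "aqp p u a (aper p a) = \<chi> a ^ k" "b \<in> aorb p a"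
  shows "aqp p u b (aper p b) = \<chi> b ^ k"
proof -
  have pH: "permH A p" using sysH_permH[OF assms(1)] .
  obtain j where b: "b = (p^^j) a" using assms(4) unfolding aorb_def by blast
  define n where "n = aper p a"
  have pb: "aper p b = n" using per_orb[OF pH assms(2,4)] by (simp add: n_def)
  have ret: "(p^^n) a = a" using per_props(2)[OF pH assms(2)] by (simp add: n_def)
  define h where "h = aqp p u a j"
  have hnz: "h \<noteq> 0" using aqp_T[OF assms(1,2)] Tstar_nz by (simp add: h_def)
  have e1: "aqp p u a (j + n) = aqp p u b n * h" using aqp_add[of p u a j n] by (simp add: b h_def)
  have e2: "aqp p u a (n + j) = h * \<chi> a ^ k" using aqp_add[of p u a n j] ret assms(3) by (simp add: h_def n_def)
  have "aqp p u b n * h = h * \<chi> a ^ k" using e1 e2 by (simp add: add.commute)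
  moreover have "aqp p u b n = aqp p u b n * h * inverse h" using hnz by (simp add: mult.assoc)
  ultimately have "aqp p u b n = h * \<chi> a ^ k * inverse h" by simp
  also have "\<dots> = (h * \<chi> a * inverse h) ^ k" using conj_pow[OF hnz] by simp
  also have "h * \<chi> a * inverse h = \<chi> b" using aqp_conj[OF assms(1,2), of j] by (simp add: b h_def)
  finally show ?thesis using pb by simp
qed

lemma class_orb: assumes "sysH A p u \<chi>" "classP P N" "a \<in> A" "b \<in> aorb p a"
  shows "P (\<chi> b) \<longleftrightarrow> P (\<chi> a)"
proof -
  have pH: "permH A p" using sysH_permH[OF assms(1)] .
  have fw: "P (\<chi> y)" if xA: "x \<in> A" and yo: "y \<in> aorb p x" and px: "P (\<chi> x)" for x y
  proof -
    obtain j where y: "y = (p^^j) x" using yo unfolding aorb_def by blast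
    have "\<forall>x g. P x \<longrightarrow> g \<in> Tstar \<longrightarrow> P (g * x * inverse g)" using assms(2) unfolding classP_def by blast
    then have "P (aqp p u x j * \<chi> x * inverse (aqp p u x j))" using aqp_T[OF assms(1) xA, of j] px by blast
    then show ?thesis using aqp_conj[OF assms(1) xA, of j] y by simp
  qed
  have bA: "b \<in> A" using orb_sub[OF sysH_sub[OF assms(1)] assms(3)] assms(4) by blast
  show ?thesis using fw[OF assms(3,4)] fw[OF bA orb_mem_sym[OF pH assms(3,4)]] by blast
qed

lemma aQp_val: assumes "sysH A p u \<chi>" "classP P N" "a \<in> A" "P (\<chi> a)"
   "aqp p u a (aper p a) = \<chi> a powi k"
  shows "aQp p u \<chi> (aorb p a) mod N = k mod N"
proof -
  obtain k0 :: nat where k0: "aqp p u a (aper p a) = \<chi> a ^ k0" using aqp_exists[OF assms(1-4)] by blast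
  have "\<forall>b\<in>aorb p a. aqp p u b (aper p b) = \<chi> b powi (int k0)"
    using aqp_all[OF assms(1,3) k0] by simp
  then have "\<exists>k. \<forall>b\<in>aorb p a. aqp p u b (aper p b) = \<chi> b powi k" by blast
  then have "\<forall>b\<in>aorb p a. aqp p u b (aper p b) = \<chi> b powi (aQp p u \<chi> (aorb p a))"
    unfolding aQp_def by (rule someI_ex)
  then have "aqp p u a (aper p a) = \<chi> a powi (aQp p u \<chi> (aorb p a))" using orb_self[of a p] by blast
  then have "\<chi> a powi (aQp p u \<chi> (aorb p a)) = \<chi> a powi k" using assms(5) by simp
  moreover have "\<forall>x. P x \<longrightarrow> (\<forall>k m. x powi k = x powi m \<longleftrightarrow> k mod N = m mod N)" using assms(2) unfolding classP_def by blast
  ultimately show ?thesis using assms(4) by blast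
qed


lemma orb_in_same: assumes "permH A p" "x \<in> A" "e \<in> A" "y \<in> aorb p x" "y \<in> aorb p e"
  shows "x \<in> aorb p e"
proof -
  have "aorb p y = aorb p x" using orb_sym[OF assms(1,2,4)] .
  moreover have "aorb p y = aorb p e" using orb_sym[OF assms(1,3,5)] .
  ultimately show ?thesis using orb_self[of x p] by simp
qed

lemma agree_outside:
  assumes pH: "permH A p" and x: "x \<in> A" and ag: "\<forall>y\<in>aorb p x. p' y = p y \<and> u' y = u y"
  shows "aorb p' x = aorb p x" "aper p' x = aper p x" "\<And>t. aqp p' u' x t = aqp p u x t"
proof -
  have it: "(p'^^t) x = (p^^t) x" for t
  proof (induction t)
    case (Suc t)
    have "(p^^t) x \<in> aorb p x" by (rule orb_step)
    then show ?case using Suc ag by simp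
  qed simp
  show "aorb p' x = aorb p x" unfolding aorb_def using it by simp
  show "aper p' x = aper p x" unfolding aper_def using it by simp
  fix t show "aqp p' u' x t = aqp p u x t"
  proof (induction t)
    case (Suc t)
    have "(p^^t) x \<in> aorb p x" by (rule orb_step)
    then show ?case using Suc ag it by simp
  qed simp
qed

lemma mod_combine:
  fixes a b c k1 k2 S N :: int
  assumes "a mod N = (k1 + k2) mod N" "b mod N = k1 mod N" "c mod N = k2 mod N"
  shows "(a + S) mod N = (b + (c + S)) mod N"
proof -
  have "N dvd a - (k1 + k2)" "N dvd b - k1" "N dvd c - k2" using assms by (simp_all add: mod_eq_dvd_iff)
  then have "N dvd (a - (k1 + k2)) - (b - k1)" by (blast intro: dvd_diff)
  then have "N dvd (a - (k1 + k2)) - (b - k1) - (c - k2)" using \<open>N dvd c - k2\<close> by (rule dvd_diff)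
  moreover have "(a - (k1 + k2)) - (b - k1) - (c - k2) = (a + S) - (b + (c + S))" by simp
  ultimately show ?thesis by (simp add: mod_eq_dvd_iff)
qed

lemma merge:
  assumes H: "sysH A p u \<chi>" and H': "sysH A p' u' \<chi>" and cP: "classP P N"
  and e1: "e1 \<in> A" and e2: "e2 \<in> A" and ne: "e2 \<notin> aorb p e1" and lab: "\<chi> e1 = \<chi> e2"
  and out: "\<forall>x\<in>A. x \<notin> aorb p e1 \<union> aorb p e2 \<longrightarrow> p' x = p x \<and> u' x = u x"
  and orb: "aorb p' e1 = aorb p e1 \<union> aorb p e2"
  and q: "aqp p' u' e1 (aper p' e1) = aqp p u e1 (aper p e1) * aqp p u e2 (aper p e2)
        \<or> aqp p' u' e1 (aper p' e1) = aqp p u e2 (aper p e2) * aqp p u e1 (aper p e1)"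
  shows "aSum P N A p' u' \<chi> = aSum P N A p u \<chi>"
proof -
  define O1 where "O1 = aorb p e1"
  define O2 where "O2 = aorb p e2"
  define M where "M = O1 \<union> O2"
  have pH: "permH A p" using sysH_permH[OF H] .
  have pH': "permH A p'" using sysH_permH[OF H'] .
  have fin: "finite A" using pH by (simp add: permH_def)
  have subA: "\<And>x. x \<in> A \<Longrightarrow> aorb p x \<subseteq> A" using orb_sub[OF sysH_sub[OF H]] by blast
  have O12: "O1 \<noteq> O2" using ne orb_self[of e2 p] by (auto simp: O1_def O2_def)
  have outM: "y \<notin> M" if "x \<in> A" "x \<notin> M" "y \<in> aorb p x" for x y
  proof
    assume "y \<in> M"
    then have "x \<in> O1 \<or> x \<in> O2" using orb_in_same[OF pH that(1) e1 that(3)] orb_in_same[OF pH that(1) e2 that(3)]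
      by (auto simp: M_def O1_def O2_def)
    with that(2) show False by (auto simp: M_def)
  qed
  have ag: "\<forall>y\<in>aorb p x. p' y = p y \<and> u' y = u y" if "x \<in> A" "x \<notin> M" for x
    using out outM[OF that] subA[OF that(1)] by (auto simp: M_def O1_def O2_def)
  have Qeq: "aQp p' u' \<chi> (aorb p x) = aQp p u \<chi> (aorb p x)" if "x \<in> A" "x \<notin> M" for x
  proof -
    have "\<forall>b\<in>aorb p x. aqp p' u' b (aper p' b) = aqp p u b (aper p b)"
    proof
      fix b assume b: "b \<in> aorb p x"
      have bA: "b \<in> A" using subA[OF that(1)] b by blast
      have bM: "b \<notin> M" using outM[OF that b] .
      show "aqp p' u' b (aper p' b) = aqp p u b (aper p b)"
        using agree_outside[OF pH bA ag[OF bA bM]] by simp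
    qed
    then show ?thesis unfolding aQp_def by simp
  qed
  have orb_out: "aorb p' x = aorb p x" if "x \<in> A" "x \<notin> M" for x
    using agree_outside(1)[OF pH that(1) ag[OF that]] .
  have Mo: "aorb p' e1 = M" using orb by (simp add: M_def O1_def O2_def)
  have toO: "aorb p y = O1 \<or> aorb p y = O2" if "y \<in> M" for y
  proof -
    have "y \<in> aorb p e1 \<or> y \<in> aorb p e2" using that by (simp add: M_def O1_def O2_def)
    then show ?thesis
    proof
      assume "y \<in> aorb p e1" then have "aorb p y = aorb p e1" by (rule orb_sym[OF pH e1])
      then show ?thesis by (simp add: O1_def)
    next
      assume "y \<in> aorb p e2" then have "aorb p y = aorb p e2" by (rule orb_sym[OF pH e2])
      then show ?thesis by (simp add: O2_def)
    qed
  qed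
  have S': "aorb p' ` A = insert M (aorb p ` A - {O1, O2})"
  proof
    show "aorb p' ` A \<subseteq> insert M (aorb p ` A - {O1, O2})"
    proof
      fix L assume "L \<in> aorb p' ` A"
      then obtain y where y: "y \<in> A" "L = aorb p' y" by blast
      show "L \<in> insert M (aorb p ` A - {O1, O2})"
      proof (cases "y \<in> M")
        case True
        then have "y \<in> aorb p' e1" using Mo by simp
        then have "aorb p' y = aorb p' e1" by (rule orb_sym[OF pH' e1])
        then have "aorb p' y = M" using Mo by simp
        then show ?thesis using y by simp
      next
        case False
        have "aorb p y \<noteq> O1" "aorb p y \<noteq> O2" using False orb_self[of y p] by (auto simp: M_def)
        then show ?thesis using y orb_out[OF y(1) False] by auto
      qed
    qed
  next
    show "insert M (aorb p ` A - {O1, O2}) \<subseteq> aorb p' ` A"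
    proof
      fix L assume L: "L \<in> insert M (aorb p ` A - {O1, O2})"
      show "L \<in> aorb p' ` A"
      proof (cases "L = M")
        case True then show ?thesis using Mo e1 by blast
      next
        case False
        then obtain y where y: "y \<in> A" "L = aorb p y" "L \<noteq> O1" "L \<noteq> O2" using L by blast
        have "y \<notin> M"
        proof
          assume "y \<in> M"
          then have "aorb p y = O1 \<or> aorb p y = O2" by (rule toO)
          then show False using y by simp
        qed
        then show ?thesis using y orb_out by blast
      qed
    qed
  qed
  have MnR: "M \<notin> aorb p ` A - {O1, O2}"
  proof
    assume "M \<in> aorb p ` A - {O1, O2}"
    then obtain y where y: "y \<in> A" "M = aorb p y" "M \<noteq> O1" "M \<noteq> O2" by blast
    then have "y \<in> M" using orb_self[of y p] by simp
    then have "aorb p y = O1 \<or> aorb p y = O2" by (rule toO)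
    then show False using y by simp
  qed
  have O1S: "O1 \<in> aorb p ` A" "O2 \<in> aorb p ` A" using e1 e2 by (auto simp: O1_def O2_def)
  define R where "R = {L \<in> aorb p ` A - {O1, O2}. \<forall>e\<in>L. P (\<chi> e)}"
  have finR: "finite R" using fin by (simp add: R_def)
  have sumR: "(\<Sum>L\<in>R. aQp p' u' \<chi> L) = (\<Sum>L\<in>R. aQp p u \<chi> L)"
  proof (rule sum.cong)
    fix L assume "L \<in> R"
    then obtain y where y: "y \<in> A" "L = aorb p y" "L \<noteq> O1" "L \<noteq> O2" by (auto simp: R_def)
    have "y \<notin> M"
    proof
      assume "y \<in> M"
      then have "aorb p y = O1 \<or> aorb p y = O2" by (rule toO)
      then show False using y by simp
    qed
    then show "aQp p' u' \<chi> L = aQp p u \<chi> L" using Qeq y by simp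
  qed simp
  have allP_orb: "(\<forall>e\<in>aorb p x. P (\<chi> e)) \<longleftrightarrow> P (\<chi> x)" if "x \<in> A" for x
    using class_orb[OF H cP that] orb_self[of x p] by blast
  have allP_M: "(\<forall>e\<in>M. P (\<chi> e)) \<longleftrightarrow> P (\<chi> e1)"
    using class_orb[OF H' cP e1] orb_self[of e1 p'] Mo by blast
  show ?thesis
  proof (cases "P (\<chi> e1)")
    case True
    have P2: "P (\<chi> e2)" using True lab by simp
    have F: "{L \<in> aorb p ` A. \<forall>e\<in>L. P (\<chi> e)} = insert O1 (insert O2 R)"
      using allP_orb[OF e1] allP_orb[OF e2] True P2 O1S by (auto simp: R_def O1_def O2_def)
    have F': "{L \<in> aorb p' ` A. \<forall>e\<in>L. P (\<chi> e)} = insert M R"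
      unfolding S' using allP_M True by (auto simp: R_def)
    have nO1: "O1 \<notin> insert O2 R" using O12 by (simp add: R_def)
    have nO2: "O2 \<notin> R" by (simp add: R_def)
    have nM: "M \<notin> R" using MnR unfolding R_def by blast
    obtain k1 :: nat where k1: "aqp p u e1 (aper p e1) = \<chi> e1 ^ k1" using aqp_exists[OF H cP e1 True] by blast
    obtain k2 :: nat where k2: "aqp p u e2 (aper p e2) = \<chi> e1 ^ k2" using aqp_exists[OF H cP e2 P2] lab by auto
    have pa: "\<chi> e1 ^ k1 * \<chi> e1 ^ k2 = \<chi> e1 ^ (k1 + k2)" by (simp only: power_add)
    have pb: "\<chi> e1 ^ k2 * \<chi> e1 ^ k1 = \<chi> e1 ^ (k1 + k2)" by (simp only: power_add[symmetric] add.commute)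
    have "aqp p' u' e1 (aper p' e1) = \<chi> e1 ^ (k1 + k2)"
      using q unfolding k1 k2 pa pb by blast
    then have "aqp p' u' e1 (aper p' e1) = \<chi> e1 powi int (k1 + k2)" by (simp only: power_int_of_nat)
    from aQp_val[OF H' cP e1 True this]
    have vM: "aQp p' u' \<chi> M mod N = (int k1 + int k2) mod N" using Mo by simp
    have v1: "aQp p u \<chi> O1 mod N = int k1 mod N" using aQp_val[OF H cP e1 True, of "int k1"] k1 by (simp add: O1_def)
    have v2: "aQp p u \<chi> O2 mod N = int k2 mod N" using aQp_val[OF H cP e2 P2, of "int k2"] k2 lab by (simp add: O2_def)
    show ?thesis unfolding aSum_def F F'
      using fin finR nO1 nO2 nM sumR mod_combine[OF vM v1 v2] by simp
  next
    case False
    have nP2: "\<not> P (\<chi> e2)" using False lab by simp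
    have F: "{L \<in> aorb p ` A. \<forall>e\<in>L. P (\<chi> e)} = R"
      using allP_orb[OF e1] allP_orb[OF e2] False nP2 by (auto simp: R_def O1_def O2_def)
    have nM: "\<not> (\<forall>e\<in>M. P (\<chi> e))" using allP_M False by simp
    have F': "{L \<in> aorb p' ` A. \<forall>e\<in>L. P (\<chi> e)} = R"
      unfolding S' R_def using nM by blast
    show ?thesis unfolding aSum_def F F' using sumR by simp
  qed
qed


definition sw :: "'a \<Rightarrow> 'a \<Rightarrow> 'a \<Rightarrow> 'a" where
  "sw e1 e2 x = (if x = e1 then e2 else if x = e2 then e1 else x)"

lemma sw_sw[simp]: "sw e1 e2 (sw e1 e2 x) = x" by (simp add: sw_def)
lemma sw_comm: "sw e1 e2 = sw e2 e1" by (auto simp: sw_def fun_eq_iff)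
lemma sw_1[simp]: "sw e1 e2 e1 = e2" by (simp add: sw_def)
lemma sw_2[simp]: "sw e1 e2 e2 = e1" by (simp add: sw_def)
lemma sw_other[simp]: "x \<noteq> e1 \<Longrightarrow> x \<noteq> e2 \<Longrightarrow> sw e1 e2 x = x" by (simp add: sw_def)
lemma sw_in: "e1 \<in> A \<Longrightarrow> e2 \<in> A \<Longrightarrow> x \<in> A \<Longrightarrow> sw e1 e2 x \<in> A" by (simp add: sw_def)
lemma sw_inj: "inj (sw e1 e2)"
proof (rule injI)
  fix x y assume "sw e1 e2 x = sw e1 e2 y"
  then have "sw e1 e2 (sw e1 e2 x) = sw e1 e2 (sw e1 e2 y)" by simp
  then show "x = y" by simp
qed
lemma sw_same: "sw e e = id" by (auto simp: sw_def fun_eq_iff)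

lemma sysH_HS: assumes H: "sysH A p u \<chi>" and "e1 \<in> A" "e2 \<in> A" "\<chi> e1 = \<chi> e2"
  shows "sysH A (p \<circ> sw e1 e2) (u \<circ> sw e1 e2) \<chi>"
proof -
  have sA: "\<And>x. x \<in> A \<Longrightarrow> sw e1 e2 x \<in> A" using assms(2,3) by (simp add: sw_def)
  have chi: "\<And>x. \<chi> (sw e1 e2 x) = \<chi> x" using assms(4) by (simp add: sw_def)
  have fin: "finite A" and inj: "inj_on p A" and pA: "p ` A \<subseteq> A"
    and loc: "\<forall>a\<in>A. u a \<in> Tstar \<and> \<chi> a \<in> Tstar \<and> \<chi> (p a) = u a * \<chi> a * inverse (u a)"
    using H unfolding sysH_def permH_def by auto
  have swA: "sw e1 e2 ` A \<subseteq> A" using sA by blast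
  have i1: "inj_on (p \<circ> sw e1 e2) A"
  proof (rule comp_inj_on)
    show "inj_on (sw e1 e2) A" by (rule inj_on_subset[OF sw_inj]) simp
    show "inj_on p (sw e1 e2 ` A)" using inj swA by (rule inj_on_subset)
  qed
  have i2: "(p \<circ> sw e1 e2) ` A \<subseteq> A" using swA pA by auto
  have i3: "\<forall>a\<in>A. (u \<circ> sw e1 e2) a \<in> Tstar \<and> \<chi> a \<in> Tstar \<and>
      \<chi> ((p \<circ> sw e1 e2) a) = (u \<circ> sw e1 e2) a * \<chi> a * inverse ((u \<circ> sw e1 e2) a)"
  proof
    fix a assume a: "a \<in> A"
    then have sa: "sw e1 e2 a \<in> A" by (rule sA)
    have "u (sw e1 e2 a) \<in> Tstar" "\<chi> a \<in> Tstar"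
      "\<chi> (p (sw e1 e2 a)) = u (sw e1 e2 a) * \<chi> (sw e1 e2 a) * inverse (u (sw e1 e2 a))"
      using loc sa a by auto
    then show "(u \<circ> sw e1 e2) a \<in> Tstar \<and> \<chi> a \<in> Tstar \<and>
      \<chi> ((p \<circ> sw e1 e2) a) = (u \<circ> sw e1 e2) a * \<chi> a * inverse ((u \<circ> sw e1 e2) a)"
      by (simp add: chi)
  qed
  show ?thesis unfolding sysH_def permH_def using fin i1 i2 i3 by blast
qed

lemma sysH_TS: assumes H: "sysH A p u \<chi>" and "e1 \<in> A" "e2 \<in> A" "\<chi> e1 = \<chi> e2"
  shows "sysH A (sw e1 e2 \<circ> p) u \<chi>"
proof -
  have sA: "\<And>x. x \<in> A \<Longrightarrow> sw e1 e2 x \<in> A" using assms(2,3) by (simp add: sw_def)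
  have chi: "\<And>x. \<chi> (sw e1 e2 x) = \<chi> x" using assms(4) by (simp add: sw_def)
  have fin: "finite A" and inj: "inj_on p A" and pA: "p ` A \<subseteq> A"
    and loc: "\<forall>a\<in>A. u a \<in> Tstar \<and> \<chi> a \<in> Tstar \<and> \<chi> (p a) = u a * \<chi> a * inverse (u a)"
    using H unfolding sysH_def permH_def by auto
  have i1: "inj_on (sw e1 e2 \<circ> p) A"
  proof (rule comp_inj_on)
    show "inj_on p A" by (fact inj)
    show "inj_on (sw e1 e2) (p ` A)" by (rule inj_on_subset[OF sw_inj]) simp
  qed
  have i2: "(sw e1 e2 \<circ> p) ` A \<subseteq> A" using sA pA by auto
  have i3: "\<forall>a\<in>A. u a \<in> Tstar \<and> \<chi> a \<in> Tstar \<and>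
      \<chi> ((sw e1 e2 \<circ> p) a) = u a * \<chi> a * inverse (u a)"
    using loc by (simp add: chi)
  show ?thesis unfolding sysH_def permH_def using fin i1 i2 i3 by blast
qed

lemma permH_sw: "sysH A p u \<chi> \<Longrightarrow> permH A p" by (simp add: sysH_def)

lemma path_head:
  assumes nb: "\<forall>t. 0 < t \<longrightarrow> t < m \<longrightarrow> (p^^t) eb \<noteq> ea \<and> (p^^t) eb \<noteq> eb"
    and pp: "\<And>x. p' x = p (sw ea eb x)"
  shows "\<forall>t. 0 < t \<longrightarrow> t \<le> m \<longrightarrow> (p'^^t) ea = (p^^t) eb"
proof (intro allI impI)
  fix t assume "0 < t" "t \<le> m"
  then show "(p'^^t) ea = (p^^t) eb"
  proof (induction t)
    case 0 then show ?case by simp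
  next
    case (Suc t)
    show ?case
    proof (cases "t = 0")
      case True
      have "(p'^^Suc 0) ea = p' ea" by simp
      also have "\<dots> = p (sw ea eb ea)" by (rule pp)
      finally show ?thesis using True by simp
    next
      case False
      then have ih: "(p'^^t) ea = (p^^t) eb" using Suc by simp
      have ne: "(p^^t) eb \<noteq> ea" "(p^^t) eb \<noteq> eb" using nb False Suc.prems by auto
      have "(p'^^Suc t) ea = p' ((p'^^t) ea)" by simp
      also have "\<dots> = p' ((p^^t) eb)" using ih by simp
      also have "\<dots> = p (sw ea eb ((p^^t) eb))" by (rule pp)
      also have "\<dots> = (p^^Suc t) eb" using ne by simp
      finally show ?thesis .
    qed
  qed
qed

lemma path_head_q:
  assumes nb: "\<forall>t. 0 < t \<longrightarrow> t < m \<longrightarrow> (p^^t) eb \<noteq> ea \<and> (p^^t) eb \<noteq> eb"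
    and pp: "\<And>x. p' x = p (sw ea eb x)" and uu: "\<And>x. u' x = u (sw ea eb x)"
  shows "t \<le> m \<Longrightarrow> aqp p' u' ea t = aqp p u eb t"
proof (induction t)
  case 0 then show ?case by simp
next
  case (Suc t)
  have "u' ((p'^^t) ea) = u ((p^^t) eb)"
  proof (cases "t = 0")
    case True
    have "u' ea = u (sw ea eb ea)" by (rule uu)
    then show ?thesis using True by simp
  next
    case False
    then have ih: "(p'^^t) ea = (p^^t) eb" using path_head[where p=p and p'=p' and ea=ea and eb=eb and m=m, OF nb pp] Suc.prems by simp
    have ne: "(p^^t) eb \<noteq> ea" "(p^^t) eb \<noteq> eb" using nb False Suc.prems by auto
    have "u' ((p'^^t) ea) = u (sw ea eb ((p'^^t) ea))" by (rule uu)
    then show ?thesis using ih ne by simp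
  qed
  then show ?case using Suc by simp
qed

lemma HS_diff:
  assumes H: "sysH A p u \<chi>" and e1: "e1 \<in> A" and e2: "e2 \<in> A" and ne: "e1 \<noteq> e2"
    and d: "e2 \<notin> aorb p e1"
    and pp: "\<And>x. p' x = p (sw e1 e2 x)" and uu: "\<And>x. u' x = u (sw e1 e2 x)"
  shows "\<forall>x\<in>A. x \<notin> aorb p e1 \<union> aorb p e2 \<longrightarrow> p' x = p x \<and> u' x = u x"
    and "aorb p' e1 = aorb p e1 \<union> aorb p e2"
    and "aqp p' u' e1 (aper p' e1) = aqp p u e1 (aper p e1) * aqp p u e2 (aper p e2)"
proof -
  have pH: "permH A p" using H by (simp add: sysH_def)
  define n1 where "n1 = aper p e1"
  define n2 where "n2 = aper p e2"
  have n1: "0 < n1" "(p^^n1) e1 = e1" "\<And>t. 0 < t \<Longrightarrow> t < n1 \<Longrightarrow> (p^^t) e1 \<noteq> e1"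
    using per_props[OF pH e1] by (auto simp: n1_def)
  have n2: "0 < n2" "(p^^n2) e2 = e2" "\<And>t. 0 < t \<Longrightarrow> t < n2 \<Longrightarrow> (p^^t) e2 \<noteq> e2"
    using per_props[OF pH e2] by (auto simp: n2_def)
  have d': "e1 \<notin> aorb p e2" using d orb_mem_sym[OF pH e2] by blast
  have nb2: "\<forall>t. 0 < t \<longrightarrow> t < n2 \<longrightarrow> (p^^t) e2 \<noteq> e1 \<and> (p^^t) e2 \<noteq> e2"
  proof (intro allI impI conjI)
    fix t assume "0 < t" "t < n2"
    show "(p^^t) e2 \<noteq> e1" using orb_step[where p=p and j=t and a=e2] d' by auto
    show "(p^^t) e2 \<noteq> e2" using n2(3) \<open>0 < t\<close> \<open>t < n2\<close> by blast
  qed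
  have nb1: "\<forall>t. 0 < t \<longrightarrow> t < n1 \<longrightarrow> (p^^t) e1 \<noteq> e2 \<and> (p^^t) e1 \<noteq> e1"
  proof (intro allI impI conjI)
    fix t assume "0 < t" "t < n1"
    show "(p^^t) e1 \<noteq> e2" using orb_step[where p=p and j=t and a=e1] d by auto
    show "(p^^t) e1 \<noteq> e1" using n1(3) \<open>0 < t\<close> \<open>t < n1\<close> by blast
  qed
  have sc: "sw e1 e2 = sw e2 e1" by (rule sw_comm)
  have pp2: "\<And>x. p' x = p (sw e2 e1 x)" and uu2: "\<And>x. u' x = u (sw e2 e1 x)" using pp uu sc by simp_all
  have P1: "\<And>t. 0 < t \<Longrightarrow> t \<le> n2 \<Longrightarrow> (p'^^t) e1 = (p^^t) e2"
    using path_head[where p=p and p'=p' and ea=e1 and eb=e2 and m=n2, OF nb2 pp] by simp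
  have P2: "\<And>t. 0 < t \<Longrightarrow> t \<le> n1 \<Longrightarrow> (p'^^t) e2 = (p^^t) e1"
    using path_head[where p=p and p'=p' and ea=e2 and eb=e1 and m=n1, OF nb1 pp2] by simp
  have Q1: "aqp p' u' e1 n2 = aqp p u e2 n2"
    using path_head_q[where p=p and p'=p' and u=u and u'=u' and ea=e1 and eb=e2 and m=n2, OF nb2 pp uu] by simp
  have Q2: "aqp p' u' e2 n1 = aqp p u e1 n1"
    using path_head_q[where p=p and p'=p' and u=u and u'=u' and ea=e2 and eb=e1 and m=n1, OF nb1 pp2 uu2] by simp
  have r1: "(p'^^n2) e1 = e2" using P1[OF n2(1)] n2(2) by simp
  have r2: "(p'^^n1) e2 = e1" using P2[OF n1(1)] n1(2) by simp
  have shift: "(p'^^(n2 + s)) e1 = (p'^^s) e2" for s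
  proof -
    have "(p'^^(n2 + s)) e1 = (p'^^(s + n2)) e1" by (simp add: add.commute)
    also have "\<dots> = (p'^^s) ((p'^^n2) e1)" by (simp only: funpow_add o_apply)
    finally show ?thesis using r1 by simp
  qed
  have ret: "(p'^^(n2 + n1)) e1 = e1" using shift r2 by simp
  have per': "aper p' e1 = n2 + n1"
    unfolding aper_def
  proof (rule Least_equality)
    show "0 < n2 + n1 \<and> (p'^^(n2 + n1)) e1 = e1" using ret n1 by simp
  next
    fix m assume m: "0 < m \<and> (p'^^m) e1 = e1"
    show "n2 + n1 \<le> m"
    proof (rule ccontr)
      assume "\<not> n2 + n1 \<le> m"
      then have lt: "m < n2 + n1" by simp
      show False
      proof (cases "m \<le> n2")
        case True
        then have "(p'^^m) e1 = (p^^m) e2" using P1[of m] m by blast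
        then have "e1 \<in> aorb p e2" using m orb_step[where p=p and j=m and a=e2] by simp
        then show False using d' by simp
      next
        case False
        define s where "s = m - n2"
        have s: "m = n2 + s" "0 < s" "s < n1" using lt False by (auto simp: s_def)
        then have "(p'^^m) e1 = (p^^s) e1" using shift P2 by simp
        then show False using n1(3)[OF s(2,3)] m by simp
      qed
    qed
  qed
  show "\<forall>x\<in>A. x \<notin> aorb p e1 \<union> aorb p e2 \<longrightarrow> p' x = p x \<and> u' x = u x"
  proof (intro ballI impI)
    fix x assume "x \<in> A" "x \<notin> aorb p e1 \<union> aorb p e2"
    then have "x \<noteq> e1" "x \<noteq> e2" using orb_self[of e1 p] orb_self[of e2 p] by auto
    then show "p' x = p x \<and> u' x = u x" using pp[of x] uu[of x] by simp
  qed
  have orb': "aorb p' e1 = {(p'^^t) e1 | t. t < n2 + n1}" using orb_fin[OF ret] n1 by simp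
  have o1: "aorb p e1 = {(p^^t) e1 | t. t < n1}" using orb_fin[OF n1(2,1)] .
  have o2: "aorb p e2 = {(p^^t) e2 | t. t < n2}" using orb_fin[OF n2(2,1)] .
  show "aorb p' e1 = aorb p e1 \<union> aorb p e2"
  proof
    show "aorb p' e1 \<subseteq> aorb p e1 \<union> aorb p e2"
    proof
      fix y assume "y \<in> aorb p' e1"
      then obtain t where t: "t < n2 + n1" "y = (p'^^t) e1" using orb' by blast
      show "y \<in> aorb p e1 \<union> aorb p e2"
      proof (cases "t = 0")
        case True then show ?thesis using t orb_self[of e1 p] by simp
      next
        case False
        show ?thesis
        proof (cases "t \<le> n2")
          case True then show ?thesis using t False P1 orb_step[where p=p and j=t and a=e2] by simp
        next
          case nle: False
          define s where "s = t - n2"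
          have "t = n2 + s" "s \<le> n1" "0 < s" using t nle by (auto simp: s_def)
          then show ?thesis using shift P2 orb_step[where p=p and j=s and a=e1] t by simp
        qed
      qed
    qed
  next
    show "aorb p e1 \<union> aorb p e2 \<subseteq> aorb p' e1"
    proof
      fix y assume "y \<in> aorb p e1 \<union> aorb p e2"
      then show "y \<in> aorb p' e1"
      proof
        assume "y \<in> aorb p e1"
        then obtain t where t: "t < n1" "y = (p^^t) e1" using o1 by blast
        show ?thesis
        proof (cases "t = 0")
          case True then show ?thesis using t orb_self[of e1 p'] by simp
        next
          case False
          then have "y = (p'^^(n2 + t)) e1" using t shift P2 by simp
          then show ?thesis using orb_step[where p=p' and j="n2 + t" and a=e1] by simp
        qed
      next
        assume "y \<in> aorb p e2"
        then obtain t where t: "t < n2" "y = (p^^t) e2" using o2 by blast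
        show ?thesis
        proof (cases "t = 0")
          case True then have "y = (p'^^n2) e1" using t r1 by simp
          then show ?thesis using orb_step[where p=p' and j=n2 and a=e1] by simp
        next
          case False
          then have "y = (p'^^t) e1" using t P1 by simp
          then show ?thesis using orb_step[where p=p' and j=t and a=e1] by simp
        qed
      qed
    qed
  qed
  have "aqp p' u' e1 (n2 + n1) = aqp p' u' ((p'^^n2) e1) n1 * aqp p' u' e1 n2" by (rule aqp_add)
  then show "aqp p' u' e1 (aper p' e1) = aqp p u e1 (aper p e1) * aqp p u e2 (aper p e2)"
    using per' r1 Q1 Q2 by (simp add: n1_def n2_def)
qed


lemma least_hit:
  assumes pH: "permH A p" and e1: "e1 \<in> A" and ne: "e1 \<noteq> e2" and inn: "e2 \<in> aorb p e1"
  obtains j where "0 < j" "j < aper p e1" "(p^^j) e1 = e2" "\<And>t. t < j \<Longrightarrow> (p^^t) e1 \<noteq> e2"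
proof -
  have n1: "0 < aper p e1" "(p^^aper p e1) e1 = e1" using per_props[OF pH e1] by auto
  have "aorb p e1 = {(p^^t) e1 | t. t < aper p e1}" using orb_fin[OF n1(2,1)] .
  then have "e2 \<in> {(p^^t) e1 | t. t < aper p e1}" using inn by simp
  then obtain t0 where t0: "t0 < aper p e1" "(p^^t0) e1 = e2" by blast
  define j where "j = (LEAST j. (p^^j) e1 = e2)"
  have hj: "(p^^j) e1 = e2" unfolding j_def using t0(2) by (rule LeastI)
  have jle: "j \<le> t0" unfolding j_def using t0(2) by (rule Least_le)
  have lt: "\<And>t. t < j \<Longrightarrow> (p^^t) e1 \<noteq> e2" unfolding j_def by (rule not_less_Least)
  have "j \<noteq> 0" using hj ne by (cases j) auto
  show ?thesis
  proof (rule that)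
    show "0 < j" using \<open>j \<noteq> 0\<close> by simp
    show "j < aper p e1" using jle t0(1) by simp
    show "(p^^j) e1 = e2" by (fact hj)
    show "\<And>t. t < j \<Longrightarrow> (p^^t) e1 \<noteq> e2" by (fact lt)
  qed
qed

lemma HS_split:
  assumes pH: "permH A p" and pH': "permH A p'" and e1: "e1 \<in> A" and e2: "e2 \<in> A" and ne: "e1 \<noteq> e2"
    and inn: "e2 \<in> aorb p e1" and pp: "\<And>x. p' x = p (sw e1 e2 x)"
  shows "e2 \<notin> aorb p' e1"
proof
  obtain j where j: "0 < j" "j < aper p e1" "(p^^j) e1 = e2" "\<And>t. t < j \<Longrightarrow> (p^^t) e1 \<noteq> e2"
    using least_hit[OF pH e1 ne inn] by blast
  have nb: "\<forall>t. 0 < t \<longrightarrow> t < j \<longrightarrow> (p^^t) e1 \<noteq> e2 \<and> (p^^t) e1 \<noteq> e1"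
  proof (intro allI impI conjI)
    fix t assume t: "0 < t" "t < j"
    show "(p^^t) e1 \<noteq> e2" using j(4) t(2) by blast
    have "t < aper p e1" using t j(2) by simp
    then show "(p^^t) e1 \<noteq> e1" using per_props(3)[OF pH e1] t(1) by blast
  qed
  have sc: "sw e1 e2 = sw e2 e1" by (rule sw_comm)
  have pp2: "\<And>x. p' x = p (sw e2 e1 x)" by (simp only: pp sc)
  have P: "\<forall>t. 0 < t \<longrightarrow> t \<le> j \<longrightarrow> (p'^^t) e2 = (p^^t) e1"
    using path_head[where p=p and p'=p' and ea=e2 and eb=e1 and m=j, OF nb pp2] .
  have "(p'^^j) e2 = (p^^j) e1" using P j(1) by blast
  then have r: "(p'^^j) e2 = e2" using j(3) by simp
  have o: "aorb p' e2 = {(p'^^t) e2 | t. t < j}" using orb_fin[OF r j(1)] .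
  have "e1 \<notin> aorb p' e2"
  proof
    assume "e1 \<in> aorb p' e2"
    then obtain t where t: "t < j" "e1 = (p'^^t) e2" using o by blast
    show False
    proof (cases "t = 0")
      case True then show False using t ne by simp
    next
      case False
      then have "(p'^^t) e2 = (p^^t) e1" using P t(1) by auto
      moreover have "(p^^t) e1 \<noteq> e1" using nb t(1) False by blast
      ultimately show False using t(2) by simp
    qed
  qed
  moreover assume "e2 \<in> aorb p' e1"
  ultimately show False using orb_mem_sym[OF pH' e1] by blast
qed

lemma path_tail:
  assumes nb: "\<forall>t. 0 < t \<longrightarrow> t < m \<longrightarrow> (p^^t) ea \<noteq> ea \<and> (p^^t) ea \<noteq> eb"
    and pp: "\<And>x. p' x = sw ea eb (p x)"
  shows "t < m \<Longrightarrow> (p'^^t) ea = (p^^t) ea"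
proof (induction t)
  case 0 then show ?case by simp
next
  case (Suc t)
  then have ih: "(p'^^t) ea = (p^^t) ea" by simp
  have ne: "(p^^Suc t) ea \<noteq> ea" "(p^^Suc t) ea \<noteq> eb" using nb Suc.prems by auto
  have "(p'^^Suc t) ea = p' ((p'^^t) ea)" by simp
  also have "\<dots> = sw ea eb (p ((p^^t) ea))" using ih pp by simp
  also have "\<dots> = (p^^Suc t) ea" using ne by simp
  finally show ?case .
qed

lemma path_tail_end:
  assumes nb: "\<forall>t. 0 < t \<longrightarrow> t < m \<longrightarrow> (p^^t) ea \<noteq> ea \<and> (p^^t) ea \<noteq> eb"
    and pp: "\<And>x. p' x = sw ea eb (p x)" and m: "0 < m"
  shows "(p'^^m) ea = sw ea eb ((p^^m) ea)"
proof -
  obtain k where k: "m = Suc k" using m by (cases m) auto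
  have "(p'^^k) ea = (p^^k) ea" using path_tail[OF nb pp] k by simp
  then show ?thesis using k pp by simp
qed

lemma path_tail_q:
  assumes nb: "\<forall>t. 0 < t \<longrightarrow> t < m \<longrightarrow> (p^^t) ea \<noteq> ea \<and> (p^^t) ea \<noteq> eb"
    and pp: "\<And>x. p' x = sw ea eb (p x)"
  shows "t \<le> m \<Longrightarrow> aqp p' u ea t = aqp p u ea t"
proof (induction t)
  case 0 then show ?case by simp
next
  case (Suc t)
  then have "(p'^^t) ea = (p^^t) ea" using path_tail[OF nb pp] by simp
  then show ?case using Suc by simp
qed

lemma TS_diff:
  assumes H: "sysH A p u \<chi>" and e1: "e1 \<in> A" and e2: "e2 \<in> A" and ne: "e1 \<noteq> e2"
    and d: "e2 \<notin> aorb p e1"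
    and pp: "\<And>x. p' x = sw e1 e2 (p x)"
  shows "\<forall>x\<in>A. x \<notin> aorb p e1 \<union> aorb p e2 \<longrightarrow> p' x = p x \<and> u x = u x"
    and "aorb p' e1 = aorb p e1 \<union> aorb p e2"
    and "aqp p' u e1 (aper p' e1) = aqp p u e2 (aper p e2) * aqp p u e1 (aper p e1)"
proof -
  have pH: "permH A p" using H by (simp add: sysH_def)
  define n1 where "n1 = aper p e1"
  define n2 where "n2 = aper p e2"
  have n1: "0 < n1" "(p^^n1) e1 = e1" "\<And>t. 0 < t \<Longrightarrow> t < n1 \<Longrightarrow> (p^^t) e1 \<noteq> e1"
    using per_props[OF pH e1] by (auto simp: n1_def)
  have n2: "0 < n2" "(p^^n2) e2 = e2" "\<And>t. 0 < t \<Longrightarrow> t < n2 \<Longrightarrow> (p^^t) e2 \<noteq> e2"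
    using per_props[OF pH e2] by (auto simp: n2_def)
  have d': "e1 \<notin> aorb p e2" using d orb_mem_sym[OF pH e2] by blast
  have nb1: "\<forall>t. 0 < t \<longrightarrow> t < n1 \<longrightarrow> (p^^t) e1 \<noteq> e1 \<and> (p^^t) e1 \<noteq> e2"
  proof (intro allI impI conjI)
    fix t assume "0 < t" "t < n1"
    show "(p^^t) e1 \<noteq> e2" using orb_step[where p=p and j=t and a=e1] d by auto
    show "(p^^t) e1 \<noteq> e1" using n1(3) \<open>0 < t\<close> \<open>t < n1\<close> by blast
  qed
  have nb2: "\<forall>t. 0 < t \<longrightarrow> t < n2 \<longrightarrow> (p^^t) e2 \<noteq> e2 \<and> (p^^t) e2 \<noteq> e1"
  proof (intro allI impI conjI)
    fix t assume "0 < t" "t < n2"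
    show "(p^^t) e2 \<noteq> e1" using orb_step[where p=p and j=t and a=e2] d' by auto
    show "(p^^t) e2 \<noteq> e2" using n2(3) \<open>0 < t\<close> \<open>t < n2\<close> by blast
  qed
  have sc: "sw e1 e2 = sw e2 e1" by (rule sw_comm)
  have pp2: "\<And>x. p' x = sw e2 e1 (p x)" by (simp only: pp sc)
  have A1: "\<And>t. t < n1 \<Longrightarrow> (p'^^t) e1 = (p^^t) e1"
    using path_tail[where p=p and p'=p' and ea=e1 and eb=e2 and m=n1, OF nb1 pp] .
  have A2: "\<And>t. t < n2 \<Longrightarrow> (p'^^t) e2 = (p^^t) e2"
    using path_tail[where p=p and p'=p' and ea=e2 and eb=e1 and m=n2, OF nb2 pp2] .
  have r1: "(p'^^n1) e1 = e2"
    using path_tail_end[where p=p and p'=p' and ea=e1 and eb=e2 and m=n1, OF nb1 pp n1(1)] n1(2) by simp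
  have r2: "(p'^^n2) e2 = e1"
    using path_tail_end[where p=p and p'=p' and ea=e2 and eb=e1 and m=n2, OF nb2 pp2 n2(1)] n2(2) by simp
  have Q1: "aqp p' u e1 n1 = aqp p u e1 n1"
    using path_tail_q[where p=p and p'=p' and ea=e1 and eb=e2 and m=n1, OF nb1 pp] by simp
  have Q2: "aqp p' u e2 n2 = aqp p u e2 n2"
    using path_tail_q[where p=p and p'=p' and ea=e2 and eb=e1 and m=n2, OF nb2 pp2] by simp
  have shift: "(p'^^(n1 + s)) e1 = (p'^^s) e2" for s
  proof -
    have "(p'^^(n1 + s)) e1 = (p'^^(s + n1)) e1" by (simp add: add.commute)
    also have "\<dots> = (p'^^s) ((p'^^n1) e1)" by (simp only: funpow_add o_apply)
    finally show ?thesis using r1 by simp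
  qed
  have ret: "(p'^^(n1 + n2)) e1 = e1" using shift r2 by simp
  have per': "aper p' e1 = n1 + n2"
    unfolding aper_def
  proof (rule Least_equality)
    show "0 < n1 + n2 \<and> (p'^^(n1 + n2)) e1 = e1" using ret n1 by simp
  next
    fix m assume m: "0 < m \<and> (p'^^m) e1 = e1"
    show "n1 + n2 \<le> m"
    proof (rule ccontr)
      assume "\<not> n1 + n2 \<le> m"
      then have lt: "m < n1 + n2" by simp
      show False
      proof (cases "m < n1")
        case True
        then have "(p^^m) e1 = e1" using A1[of m] m by simp
        then show False using n1(3)[OF _ True] m by simp
      next
        case False
        define s where "s = m - n1"
        have s: "m = n1 + s" "s < n2" using lt False by (auto simp: s_def)
        then have "(p'^^m) e1 = (p^^s) e2" using shift A2 by simp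
        then have "e1 \<in> aorb p e2" using m orb_step[where p=p and j=s and a=e2] by simp
        then show False using d' by simp
      qed
    qed
  qed
  show "\<forall>x\<in>A. x \<notin> aorb p e1 \<union> aorb p e2 \<longrightarrow> p' x = p x \<and> u x = u x"
  proof (intro ballI impI)
    fix x assume x: "x \<in> A" "x \<notin> aorb p e1 \<union> aorb p e2"
    have px: "p x \<in> aorb p x" using orb_step[where p=p and j=1 and a=x] by simp
    have "p x \<noteq> e1"
    proof
      assume "p x = e1"
      then have "x \<in> aorb p e1" using orb_in_same[OF pH x(1) e1, of "p x"] px orb_self[of e1 p] by simp
      then show False using x by simp
    qed
    moreover have "p x \<noteq> e2"
    proof
      assume "p x = e2"
      then have "x \<in> aorb p e2" using orb_in_same[OF pH x(1) e2, of "p x"] px orb_self[of e2 p] by simp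
      then show False using x by simp
    qed
    ultimately show "p' x = p x \<and> u x = u x" using pp[of x] by simp
  qed
  have orb': "aorb p' e1 = {(p'^^t) e1 | t. t < n1 + n2}" using orb_fin[OF ret] n1 by simp
  have o1: "aorb p e1 = {(p^^t) e1 | t. t < n1}" using orb_fin[OF n1(2,1)] .
  have o2: "aorb p e2 = {(p^^t) e2 | t. t < n2}" using orb_fin[OF n2(2,1)] .
  show "aorb p' e1 = aorb p e1 \<union> aorb p e2"
  proof
    show "aorb p' e1 \<subseteq> aorb p e1 \<union> aorb p e2"
    proof
      fix y assume "y \<in> aorb p' e1"
      then obtain t where t: "t < n1 + n2" "y = (p'^^t) e1" using orb' by blast
      show "y \<in> aorb p e1 \<union> aorb p e2"
      proof (cases "t < n1")
        case True then show ?thesis using t A1 orb_step[where p=p and j=t and a=e1] by simp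
      next
        case False
        define s where "s = t - n1"
        have s: "t = n1 + s" "s < n2" using t False by (auto simp: s_def)
        then show ?thesis using t shift A2 orb_step[where p=p and j=s and a=e2] by simp
      qed
    qed
  next
    show "aorb p e1 \<union> aorb p e2 \<subseteq> aorb p' e1"
    proof
      fix y assume "y \<in> aorb p e1 \<union> aorb p e2"
      then show "y \<in> aorb p' e1"
      proof
        assume "y \<in> aorb p e1"
        then obtain t where t: "t < n1" "y = (p^^t) e1" using o1 by blast
        then have "y = (p'^^t) e1" using A1 by simp
        then show ?thesis using orb_step[where p=p' and j=t and a=e1] by simp
      next
        assume "y \<in> aorb p e2"
        then obtain t where t: "t < n2" "y = (p^^t) e2" using o2 by blast
        then have "y = (p'^^(n1 + t)) e1" using A2 shift by simp
        then show ?thesis using orb_step[where p=p' and j="n1 + t" and a=e1] by simp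
      qed
    qed
  qed
  have "aqp p' u e1 (n1 + n2) = aqp p' u ((p'^^n1) e1) n2 * aqp p' u e1 n1" by (rule aqp_add)
  then show "aqp p' u e1 (aper p' e1) = aqp p u e2 (aper p e2) * aqp p u e1 (aper p e1)"
    using per' r1 Q1 Q2 by (simp add: n1_def n2_def)
qed

lemma TS_split:
  assumes pH: "permH A p" and e1: "e1 \<in> A" and ne: "e1 \<noteq> e2"
    and inn: "e2 \<in> aorb p e1" and pp: "\<And>x. p' x = sw e1 e2 (p x)"
  shows "e2 \<notin> aorb p' e1"
proof
  obtain j where j: "0 < j" "j < aper p e1" "(p^^j) e1 = e2" "\<And>t. t < j \<Longrightarrow> (p^^t) e1 \<noteq> e2"
    using least_hit[OF pH e1 ne inn] by blast
  have nb: "\<forall>t. 0 < t \<longrightarrow> t < j \<longrightarrow> (p^^t) e1 \<noteq> e1 \<and> (p^^t) e1 \<noteq> e2"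
  proof (intro allI impI conjI)
    fix t assume t: "0 < t" "t < j"
    show "(p^^t) e1 \<noteq> e2" using j(4) t(2) by blast
    have "t < aper p e1" using t j(2) by simp
    then show "(p^^t) e1 \<noteq> e1" using per_props(3)[OF pH e1] t(1) by blast
  qed
  have A: "\<And>t. t < j \<Longrightarrow> (p'^^t) e1 = (p^^t) e1"
    using path_tail[where p=p and p'=p' and ea=e1 and eb=e2 and m=j, OF nb pp] .
  have r: "(p'^^j) e1 = e1"
    using path_tail_end[where p=p and p'=p' and ea=e1 and eb=e2 and m=j, OF nb pp j(1)] j(3) by simp
  have o: "aorb p' e1 = {(p'^^t) e1 | t. t < j}" using orb_fin[OF r j(1)] .
  assume "e2 \<in> aorb p' e1"
  then obtain t where t: "t < j" "e2 = (p'^^t) e1" using o by blast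
  then show False using A[OF t(1)] j(4)[OF t(1)] by simp
qed

theorem HS:
  assumes H: "sysH A p u \<chi>" and cP: "classP P N" and e1: "e1 \<in> A" and e2: "e2 \<in> A"
    and lab: "\<chi> e1 = \<chi> e2"
    and pp: "\<And>x. p' x = p (sw e1 e2 x)" and uu: "\<And>x. u' x = u (sw e1 e2 x)"
  shows "aSum P N A p' u' \<chi> = aSum P N A p u \<chi>"
proof (cases "e1 = e2")
  case True
  then have "p' = p" "u' = u" using pp uu by (auto simp: fun_eq_iff sw_def)
  then show ?thesis by simp
next
  case ne: False
  have pe: "p' = p \<circ> sw e1 e2" "u' = u \<circ> sw e1 e2" using pp uu by (auto simp: fun_eq_iff)
  have H': "sysH A p' u' \<chi>" unfolding pe using sysH_HS[OF H e1 e2 lab] .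
  have pH: "permH A p" using H by (simp add: sysH_def)
  have pH': "permH A p'" using H' by (simp add: sysH_def)
  show ?thesis
  proof (cases "e2 \<in> aorb p e1")
    case False
    note D = HS_diff[OF H e1 e2 ne False pp uu]
    show ?thesis using merge[OF H H' cP e1 e2 False lab D(1) D(2)] D(3) by blast
  next
    case True
    have nd: "e2 \<notin> aorb p' e1" using HS_split[OF pH pH' e1 e2 ne True pp] .
    have bp: "\<And>x. p x = p' (sw e1 e2 x)" using pp by simp
    have bu: "\<And>x. u x = u' (sw e1 e2 x)" using uu by simp
    note D = HS_diff[OF H' e1 e2 ne nd bp bu]
    show ?thesis using merge[OF H' H cP e1 e2 nd lab D(1) D(2)] D(3) by simp
  qed
qed

theorem TS:
  assumes H: "sysH A p u \<chi>" and cP: "classP P N" and e1: "e1 \<in> A" and e2: "e2 \<in> A"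
    and lab: "\<chi> e1 = \<chi> e2"
    and pp: "\<And>x. p' x = sw e1 e2 (p x)"
  shows "aSum P N A p' u \<chi> = aSum P N A p u \<chi>"
proof (cases "e1 = e2")
  case True
  then have "p' = p" using pp by (auto simp: fun_eq_iff sw_def)
  then show ?thesis by simp
next
  case ne: False
  have pe: "p' = sw e1 e2 \<circ> p" using pp by (auto simp: fun_eq_iff)
  have H': "sysH A p' u \<chi>" unfolding pe using sysH_TS[OF H e1 e2 lab] .
  have pH: "permH A p" using H by (simp add: sysH_def)
  show ?thesis
  proof (cases "e2 \<in> aorb p e1")
    case False
    note D = TS_diff[OF H e1 e2 ne False pp]
    show ?thesis using merge[OF H H' cP e1 e2 False lab D(1) D(2)] D(3) by blast
  next
    case True
    have nd: "e2 \<notin> aorb p' e1" using TS_split[OF pH e1 ne True pp] .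
    have bp: "\<And>x. p x = sw e1 e2 (p' x)" using pp by simp
    note D = TS_diff[OF H' e1 e2 ne nd bp]
    show ?thesis using merge[OF H' H cP e1 e2 nd lab D(1) D(2)] D(3) by simp
  qed
qed


lemma qmul_times: "qmul p q = p * q" by (simp add: times_quat_def)
lemma qone_one: "qone = 1" by (simp add: one_quat_def)
lemma qinv_inverse: "qinv q = inverse q" by (simp add: inverse_quat_def)
lemma qneg_uminus: "qneg q = - q" by (simp add: uminus_quat_def)
lemma qpow_power: "qpow q n = q ^ n" by (induction n) (simp_all add: qone_one qmul_times)
lemma qzpow_powi: "qzpow q k = q powi k"
  by (simp add: qzpow_def power_int_def qpow_power qinv_inverse)

lemma components_aorb: "components D = aorb (esucc D) ` (Es D \<union> Fs D)"
  unfolding components_def aorb_def by blast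

lemma qprod_aqp: "qprod D b t = aqp (esucc D) (ufactor D) b t"
  by (induction t) (simp_all add: qone_one qmul_times)

lemma period_aper: "period D = aper (esucc D)"
  by (simp add: fun_eq_iff period_def aper_def)

lemma Qprime_aQp: "Qprime D L = aQp (esucc D) (ufactor D) (elab D) L"
  unfolding Qprime_def aQp_def qLb_def qprod_aqp period_aper qzpow_powi ..

lemma Qb_oriented_aSum: "Qb_oriented D = (aSum is_black 6 (Es D \<union> Fs D) (esucc D) (ufactor D) (elab D) - omega_b D - 4 * l_bg D) mod 6"
  unfolding Qb_oriented_def aSum_def black_comp_def components_aorb Qprime_aQp
  by (simp add: mod_diff_left_eq diff_diff_eq)

lemma Qc_aSum: "Qc D = (aSum is_Q8loop 4 (Es D \<union> Fs D) (esucc D) (ufactor D) (elab D) - omega_c D) mod 4"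
  unfolding Qc_def aSum_def Q8_comp_def components_aorb Qprime_aQp
  by (simp add: mod_diff_left_eq diff_diff_eq)


definition hdd :: "diagram \<Rightarrow> nat \<times> nat \<Rightarrow> bool" where
  "hdd D s \<longleftrightarrow> s \<in> ehead D ` Es D"

lemma wf_bij: "wf_pd D \<Longrightarrow> bij_betw (edge_end D) (Es D \<times> UNIV) (slots D)"
  by (simp add: wf_pd_def)

lemma head_slot: "wf_pd D \<Longrightarrow> e \<in> Es D \<Longrightarrow> ehead D e \<in> slots D"
  using bij_betw_apply[OF wf_bij, of D "(e, True)"] by (simp add: edge_end_def)
lemma tail_slot: "wf_pd D \<Longrightarrow> e \<in> Es D \<Longrightarrow> etail D e \<in> slots D"
  using bij_betw_apply[OF wf_bij, of D "(e, False)"] by (simp add: edge_end_def)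

lemma ee_inj: "wf_pd D \<Longrightarrow> x \<in> Es D \<times> UNIV \<Longrightarrow> y \<in> Es D \<times> UNIV \<Longrightarrow> edge_end D x = edge_end D y \<Longrightarrow> x = y"
  using wf_bij[of D] unfolding bij_betw_def inj_on_def by blast

lemma head_inj: "wf_pd D \<Longrightarrow> e \<in> Es D \<Longrightarrow> e' \<in> Es D \<Longrightarrow> ehead D e = ehead D e' \<Longrightarrow> e = e'"
  using ee_inj[of D "(e,True)" "(e',True)"] by (simp add: edge_end_def)
lemma tail_inj: "wf_pd D \<Longrightarrow> e \<in> Es D \<Longrightarrow> e' \<in> Es D \<Longrightarrow> etail D e = etail D e' \<Longrightarrow> e = e'"
  using ee_inj[of D "(e,False)" "(e',False)"] by (simp add: edge_end_def)
lemma head_ne_tail: "wf_pd D \<Longrightarrow> e \<in> Es D \<Longrightarrow> e' \<in> Es D \<Longrightarrow> ehead D e \<noteq> etail D e'"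
  using ee_inj[of D "(e,True)" "(e',False)"] by (auto simp: edge_end_def)

lemma slot_cover: assumes "wf_pd D" "s \<in> slots D" shows "\<exists>e\<in>Es D. ehead D e = s \<or> etail D e = s"
proof -
  have "s \<in> edge_end D ` (Es D \<times> UNIV)" using wf_bij[OF assms(1)] assms(2) unfolding bij_betw_def by simp
  then obtain e b where "e \<in> Es D" "edge_end D (e,b) = s" by auto
  then show ?thesis by (cases b) (auto simp: edge_end_def)
qed

lemma edge_at_eq: assumes "wf_pd D" "e \<in> Es D" "ehead D e = s \<or> etail D e = s" shows "edge_at D s = e"
  unfolding edge_at_def
proof (rule the_equality)
  show "e \<in> Es D \<and> (ehead D e = s \<or> etail D e = s)" using assms by simp
next
  fix e' assume e': "e' \<in> Es D \<and> (ehead D e' = s \<or> etail D e' = s)"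
  show "e' = e"
  proof (cases "ehead D e = s")
    case True
    then show ?thesis using e' head_inj[OF assms(1)] head_ne_tail[OF assms(1)] assms(2) by metis
  next
    case False
    then have "etail D e = s" using assms(3) by simp
    then show ?thesis using e' tail_inj[OF assms(1)] head_ne_tail[OF assms(1)] assms(2) by metis
  qed
qed

lemma edge_at_head: "wf_pd D \<Longrightarrow> e \<in> Es D \<Longrightarrow> edge_at D (ehead D e) = e"
  by (rule edge_at_eq) auto
lemma edge_at_tail: "wf_pd D \<Longrightarrow> e \<in> Es D \<Longrightarrow> edge_at D (etail D e) = e"
  by (rule edge_at_eq) auto

lemma edge_at_in: assumes "wf_pd D" "s \<in> slots D"
  shows "edge_at D s \<in> Es D" "ehead D (edge_at D s) = s \<or> etail D (edge_at D s) = s"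
proof -
  obtain e where e: "e \<in> Es D" "ehead D e = s \<or> etail D e = s" using slot_cover[OF assms] by blast
  then have "edge_at D s = e" by (rule edge_at_eq[OF assms(1)])
  then show "edge_at D s \<in> Es D" "ehead D (edge_at D s) = s \<or> etail D (edge_at D s) = s" using e by auto
qed

lemma not_hd_tail: assumes "wf_pd D" "s \<in> slots D" shows "\<not> hdd D s \<longleftrightarrow> s \<in> etail D ` Es D"
proof
  assume "\<not> hdd D s"
  then show "s \<in> etail D ` Es D" using slot_cover[OF assms] unfolding hdd_def by blast
next
  assume "s \<in> etail D ` Es D"
  then show "\<not> hdd D s" using head_ne_tail[OF assms(1)] unfolding hdd_def by blast
qed

lemma hdd_edge: assumes "wf_pd D" "s \<in> slots D"
  shows "hdd D s \<longleftrightarrow> ehead D (edge_at D s) = s"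
proof
  assume "hdd D s"
  then obtain e where e: "e \<in> Es D" "ehead D e = s" unfolding hdd_def by blast
  then have "edge_at D s = e" using edge_at_eq[OF assms(1)] by blast
  then show "ehead D (edge_at D s) = s" using e by simp
next
  assume "ehead D (edge_at D s) = s"
  then show "hdd D s" using edge_at_in[OF assms] unfolding hdd_def by force
qed

lemma tl_edge: assumes "wf_pd D" "s \<in> slots D"
  shows "\<not> hdd D s \<longleftrightarrow> etail D (edge_at D s) = s"
  using hdd_edge[OF assms] edge_at_in[OF assms] head_ne_tail[OF assms(1)] by metis

lemma wf_slots: assumes "wf_pd D" "c \<in> Xs D"
  shows "hdd D (c,0) \<longleftrightarrow> \<not> hdd D (c,2)" "hdd D (c,1) \<longleftrightarrow> \<not> hdd D (c,3)"
proof -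
  have s: "(c,k) \<in> slots D" if "k < 4" for k using assms(2) that by (simp add: slots_def)
  have w: "(c,0) \<in> ehead D ` Es D \<longleftrightarrow> (c,2) \<in> etail D ` Es D"
          "(c,1) \<in> ehead D ` Es D \<longleftrightarrow> (c,3) \<in> etail D ` Es D"
    using assms unfolding wf_pd_def by auto
  show "hdd D (c,0) \<longleftrightarrow> \<not> hdd D (c,2)" using w(1) not_hd_tail[OF assms(1) s[of 2]] unfolding hdd_def by simp
  show "hdd D (c,1) \<longleftrightarrow> \<not> hdd D (c,3)" using w(2) not_hd_tail[OF assms(1) s[of 3]] unfolding hdd_def by simp
qed

definition opp :: "nat \<times> nat \<Rightarrow> nat \<times> nat" where "opp s = (fst s, (snd s + 2) mod 4)"

lemma opp_slot: "s \<in> slots D \<Longrightarrow> opp s \<in> slots D" by (auto simp: opp_def slots_def)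
lemma opp_opp: assumes "s \<in> slots D" shows "opp (opp s) = s"
proof -
  obtain c k where s: "s = (c,k)" "k < 4" using assms by (auto simp: slots_def)
  then have "k = 0 \<or> k = 1 \<or> k = 2 \<or> k = 3" by auto
  then show ?thesis using s by (auto simp: opp_def)
qed

lemma hd_opp: assumes "wf_pd D" "s \<in> slots D" shows "hdd D (opp s) \<longleftrightarrow> \<not> hdd D s"
proof -
  obtain c k where s: "s = (c,k)" "c \<in> Xs D" "k < 4" using assms(2) by (auto simp: slots_def)
  have o: "opp (c,0) = (c,2)" "opp (c,1) = (c,3)" "opp (c,2) = (c,0)" "opp (c,3) = (c,1)" by (simp_all add: opp_def)
  have "k = 0 \<or> k = 1 \<or> k = 2 \<or> k = 3" using s by auto
  then show ?thesis using wf_slots[OF assms(1) s(2)] o s(1) by auto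
qed

lemma esucc_props: assumes "wf_pd D" "e \<in> Es D"
  shows "esucc D e \<in> Es D" "etail D (esucc D e) = opp (ehead D e)"
proof -
  have hs: "ehead D e \<in> slots D" by (rule head_slot[OF assms])
  have os: "opp (ehead D e) \<in> slots D" using opp_slot[OF hs] .
  have nh: "\<not> hdd D (opp (ehead D e))" using hd_opp[OF assms(1) hs] assms(2) unfolding hdd_def by blast
  have eq: "esucc D e = edge_at D (opp (ehead D e))" using assms(2) by (simp add: esucc_def opp_def)
  show "esucc D e \<in> Es D" using edge_at_in(1)[OF assms(1) os] eq by simp
  show "etail D (esucc D e) = opp (ehead D e)" using tl_edge[OF assms(1) os] nh eq by simp
qed

lemma esucc_inj: assumes "wf_pd D" shows "inj_on (esucc D) (Es D \<union> Fs D)"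
proof (rule inj_onI)
  fix x y assume x: "x \<in> Es D \<union> Fs D" and y: "y \<in> Es D \<union> Fs D" and eq: "esucc D x = esucc D y"
  have dj: "Es D \<inter> Fs D = {}" using assms by (simp add: wf_pd_def)
  show "x = y"
  proof (cases "x \<in> Es D")
    case True note xE = True
    show ?thesis
    proof (cases "y \<in> Es D")
      case True
      have "opp (ehead D x) = opp (ehead D y)" using esucc_props(2)[OF assms xE] esucc_props(2)[OF assms True] eq by simp
      then have "ehead D x = ehead D y" using opp_opp head_slot[OF assms xE] head_slot[OF assms True] by metis
      then show ?thesis using head_inj[OF assms xE True] by simp
    next
      case False
      then have "esucc D y = y" "y \<in> Fs D" using y by (auto simp: esucc_def)
      then show ?thesis using esucc_props(1)[OF assms xE] eq dj by auto
    qed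
  next
    case False
    then have xs: "esucc D x = x" "x \<in> Fs D" using x by (auto simp: esucc_def)
    show ?thesis
    proof (cases "y \<in> Es D")
      case True
      then show ?thesis using esucc_props(1)[OF assms True] eq dj xs by auto
    next
      case False
      then show ?thesis using xs eq by (simp add: esucc_def)
    qed
  qed
qed

lemma permH_esucc: assumes "wf_pd D" shows "permH (Es D \<union> Fs D) (esucc D)"
proof -
  have "esucc D ` (Es D \<union> Fs D) \<subseteq> Es D \<union> Fs D"
  proof
    fix y assume "y \<in> esucc D ` (Es D \<union> Fs D)"
    then obtain x where x: "x \<in> Es D \<union> Fs D" "y = esucc D x" by blast
    show "y \<in> Es D \<union> Fs D"
    proof (cases "x \<in> Es D")
      case True then show ?thesis using esucc_props(1)[OF assms True] x by simp
    next
      case False then show ?thesis using x by (simp add: esucc_def)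
    qed
  qed
  then show ?thesis using esucc_inj[OF assms] assms unfolding permH_def wf_pd_def by simp
qed


lemma csign_pm: "csign D c = 1 \<or> csign D c = -1" by (simp add: csign_def)

lemma powi_pm1_T: "g \<in> Tstar \<Longrightarrow> (k::int) = 1 \<or> k = -1 \<Longrightarrow> g powi k \<in> Tstar"
  using Tstar_inverse by auto

lemma colored_T: "colored D \<Longrightarrow> e \<in> Es D \<union> Fs D \<Longrightarrow> elab D e \<in> Tstar"
  by (simp add: colored_def)

lemma slot_in: "wf_pd D \<Longrightarrow> e \<in> Es D \<Longrightarrow> fst (ehead D e) \<in> Xs D \<and> snd (ehead D e) < 4"
  using head_slot[of D e] by (auto simp: slots_def)

lemma overlab_T: assumes "wf_pd D" "colored D" "c \<in> Xs D" shows "overlab D c \<in> Tstar"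
proof -
  have "(c,1) \<in> slots D" using assms(3) by (simp add: slots_def)
  then have "edge_at D (c,1) \<in> Es D" using edge_at_in(1)[OF assms(1)] by blast
  then show ?thesis using colored_T[OF assms(2)] by (simp add: overlab_def)
qed

lemma ufactor_T: assumes "wf_pd D" "colored D" shows "ufactor D e \<in> Tstar"
proof (cases "e \<in> Es D")
  case True
  have "overlab D (fst (ehead D e)) \<in> Tstar" using overlab_T[OF assms] slot_in[OF assms(1) True] by blast
  then show ?thesis using powi_pm1_T[OF _ csign_pm] Tstar_one
    by (simp add: ufactor_def Let_def qzpow_powi qone_one)
next
  case False then show ?thesis using Tstar_one by (simp add: ufactor_def qone_one)
qed

lemma m1_powi: "(k::int) = 1 \<or> k = -1 \<Longrightarrow> (-1::quat) powi k = -1"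
  by auto

lemma local_col: assumes wf: "wf_pd D" and col: "colored D" and e: "e \<in> Es D"
  shows "elab D (esucc D e) = ufactor D e * elab D e * inverse (ufactor D e)"
proof -
  obtain c k where hk: "ehead D e = (c,k)" by (cases "ehead D e")
  have c: "c \<in> Xs D" and k: "k < 4" using slot_in[OF wf e] hk by auto
  have es: "esucc D e = edge_at D (c, (k+2) mod 4)" using e hk by (simp add: esucc_def)
  have ee: "edge_at D (c,k) = e" using edge_at_head[OF wf e] hk by simp
  have hdk: "hdd D (c,k)" using e hk unfolding hdd_def by force
  show ?thesis
  proof (cases "k = 0 \<or> k = 2")
    case True
    have uin: "uin D c = k"
    proof (cases "k = 0")
      case True then show ?thesis using hdk by (simp add: uin_def hdd_def[symmetric])
    next
      case False
      then have "k = 2" using \<open>k = 0 \<or> k = 2\<close> by simp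
      then have "\<not> hdd D (c,0)" using hdk wf_slots(1)[OF wf c] by simp
      then show ?thesis using \<open>k = 2\<close> by (simp add: uin_def hdd_def[symmetric])
    qed
    have inu: "in_under D c = e" using uin ee by (simp add: in_under_def)
    have outu: "out_under D c = esucc D e" using uin es by (simp add: out_under_def)
    define g where "g = overlab D c"
    define s where "s = csign D c"
    have "elab D (out_under D c) = qmul (qmul (qzpow (overlab D c) (csign D c)) (elab D (in_under D c)))
                  (qzpow (overlab D c) (- csign D c))"
      using col c unfolding colored_def by blast
    then have rel: "elab D (esucc D e) = g powi s * elab D e * g powi (- s)"
      using inu outu by (simp add: qmul_times qzpow_powi g_def s_def)
    have uf: "ufactor D e = (if g \<noteq> -1 then g powi s else 1)"
      using e hk True by (simp add: ufactor_def Let_def g_def s_def qzpow_powi qone_one qneg_uminus)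
    show ?thesis
    proof (cases "g = -1")
      case True
      have "g powi s = -1" "g powi (-s) = -1" using True m1_powi csign_pm[of D c] by (auto simp: s_def)
      then show ?thesis using rel uf True by simp
    next
      case False
      then show ?thesis using rel uf by (simp add: power_int_minus)
    qed
  next
    case False
    then have k13: "k = 1 \<or> k = 3" using k by auto
    have uf: "ufactor D e = 1" using hk False by (simp add: ufactor_def Let_def qone_one)
    have eq13: "elab D (edge_at D (c,1)) = elab D (edge_at D (c,3))" using col c unfolding colored_def by blast
    have "elab D (esucc D e) = elab D e"
    proof (cases "k = 1")
      case True then show ?thesis using es ee eq13 by simp
    next
      case False then have "k = 3" using k13 by simp
      then show ?thesis using es ee eq13 by simp
    qed
    then show ?thesis using uf by simp
  qed
qed

lemma sysH_diag: assumes wf: "wf_pd D" and col: "colored D"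
  shows "sysH (Es D \<union> Fs D) (esucc D) (ufactor D) (elab D)"
  unfolding sysH_def
proof (intro conjI ballI)
  show "permH (Es D \<union> Fs D) (esucc D)" by (rule permH_esucc[OF wf])
  fix a assume a: "a \<in> Es D \<union> Fs D"
  show "ufactor D a \<in> Tstar" by (rule ufactor_T[OF wf col])
  show "elab D a \<in> Tstar" using colored_T[OF col a] .
  show "elab D (esucc D a) = ufactor D a * elab D a * inverse (ufactor D a)"
  proof (cases "a \<in> Es D")
    case True then show ?thesis by (rule local_col[OF wf col])
  next
    case False then show ?thesis by (simp add: esucc_def ufactor_def qone_one)
  qed
qed


lemma fix_orb: assumes "p f = f" shows "aorb p f = {f}" "aper p f = 1"
proof -
  have it: "(p^^n) f = f" for n by (induction n) (simp_all add: assms)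
  show "aorb p f = {f}" unfolding aorb_def using it by auto
  show "aper p f = 1" unfolding aper_def using it assms by (intro Least_equality) auto
qed

lemma FL_remove:
  assumes H: "sysH A p u \<chi>" and cP: "classP P N" and f: "f \<in> A" and pf: "p f = f" and uf: "u f = 1"
  shows "aSum P N (A - {f}) p u \<chi> = aSum P N A p u \<chi>"
proof -
  have pH: "permH A p" using H by (simp add: sysH_def)
  have of: "aorb p f = {f}" "aper p f = 1" using fix_orb[where p=p and f=f, OF pf] by auto
  have nf: "f \<notin> aorb p x" if "x \<in> A - {f}" for x
  proof
    assume "f \<in> aorb p x"
    then have "x \<in> aorb p f" using orb_mem_sym[OF pH] that by blast
    then show False using of that by simp
  qed
  have S: "aorb p ` A = insert {f} (aorb p ` (A - {f}))" using f of by blast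
  have nS: "{f} \<notin> aorb p ` (A - {f})" using nf by blast
  have fin: "finite (aorb p ` (A - {f}))" using pH by (simp add: permH_def)
  show ?thesis
  proof (cases "P (\<chi> f)")
    case True
    have q: "aqp p u f (aper p f) = \<chi> f powi 0" using of uf by simp
    have v: "aQp p u \<chi> {f} mod N = 0" using aQp_val[OF H cP f True q] of by simp
    have F: "{L \<in> aorb p ` A. \<forall>e\<in>L. P (\<chi> e)} = insert {f} {L \<in> aorb p ` (A - {f}). \<forall>e\<in>L. P (\<chi> e)}"
      unfolding S using True by blast
    have nS': "{f} \<notin> {L \<in> aorb p ` (A - {f}). \<forall>e\<in>L. P (\<chi> e)}" using nS by blast
    have "(\<Sum>L\<in>insert {f} {L \<in> aorb p ` (A - {f}). \<forall>e\<in>L. P (\<chi> e)}. aQp p u \<chi> L)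
       = aQp p u \<chi> {f} + (\<Sum>L\<in>{L \<in> aorb p ` (A - {f}). \<forall>e\<in>L. P (\<chi> e)}. aQp p u \<chi> L)"
      using fin nS' by (simp add: sum.insert)
    then show ?thesis unfolding aSum_def F using v by (simp add: mod_add_left_eq[symmetric])
  next
    case False
    have F: "{L \<in> aorb p ` A. \<forall>e\<in>L. P (\<chi> e)} = {L \<in> aorb p ` (A - {f}). \<forall>e\<in>L. P (\<chi> e)}"
      unfolding S using False by blast
    show ?thesis unfolding aSum_def F ..
  qed
qed

lemma aSum_cong_chi:
  assumes sub: "p ` A \<subseteq> A" and eq: "\<forall>a\<in>A. \<chi> a = \<chi>' a"
  shows "aSum P N A p u \<chi> = aSum P N A p u \<chi>'"
proof -
  have LA: "\<forall>b\<in>L. \<chi> b = \<chi>' b" if L: "L \<in> aorb p ` A" for L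
  proof -
    obtain x where x: "x \<in> A" "L = aorb p x" using L by blast
    have "L \<subseteq> A" using orb_sub[OF sub x(1)] x(2) by simp
    then show ?thesis using eq by blast
  qed
  have F: "{L \<in> aorb p ` A. \<forall>e\<in>L. P (\<chi> e)} = {L \<in> aorb p ` A. \<forall>e\<in>L. P (\<chi>' e)}"
  proof (rule Collect_cong)
    fix L show "(L \<in> aorb p ` A \<and> (\<forall>e\<in>L. P (\<chi> e))) = (L \<in> aorb p ` A \<and> (\<forall>e\<in>L. P (\<chi>' e)))"
    proof (cases "L \<in> aorb p ` A")
      case True then show ?thesis using LA[OF True] by simp
    qed simp
  qed
  have Q: "aQp p u \<chi> L = aQp p u \<chi>' L" if "L \<in> aorb p ` A" for L
    using LA[OF that] unfolding aQp_def by simp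
  have "(\<Sum>L\<in>{L \<in> aorb p ` A. \<forall>e\<in>L. P (\<chi>' e)}. aQp p u \<chi> L) = (\<Sum>L\<in>{L \<in> aorb p ` A. \<forall>e\<in>L. P (\<chi>' e)}. aQp p u \<chi>' L)"
    by (rule sum.cong) (auto intro: Q)
  then show ?thesis unfolding aSum_def F by simp
qed

lemma sysH_add:
  assumes H: "sysH A p u \<chi>" and fr: "fr \<notin> A" and pf: "p fr = fr" and uf: "u fr = 1" and x: "x \<in> Tstar"
    and chi: "\<forall>a\<in>A. \<chi>' a = \<chi> a" and chif: "\<chi>' fr = x"
  shows "sysH (insert fr A) p u \<chi>'"
proof -
  have fin: "finite A" and inj: "inj_on p A" and sub: "p ` A \<subseteq> A"
    and loc: "\<forall>a\<in>A. u a \<in> Tstar \<and> \<chi> a \<in> Tstar \<and> \<chi> (p a) = u a * \<chi> a * inverse (u a)"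
    using H unfolding sysH_def permH_def by auto
  have i: "inj_on p (insert fr A)"
    using inj sub fr pf by (auto simp: inj_on_def)
  have s: "p ` insert fr A \<subseteq> insert fr A" using sub pf by auto
  have l: "\<forall>a\<in>insert fr A. u a \<in> Tstar \<and> \<chi>' a \<in> Tstar \<and> \<chi>' (p a) = u a * \<chi>' a * inverse (u a)"
  proof
    fix a assume a: "a \<in> insert fr A"
    show "u a \<in> Tstar \<and> \<chi>' a \<in> Tstar \<and> \<chi>' (p a) = u a * \<chi>' a * inverse (u a)"
    proof (cases "a = fr")
      case True then show ?thesis using uf x chif pf Tstar_one by simp
    next
      case False
      then have aA: "a \<in> A" using a by simp
      then have "p a \<in> A" using sub by blast
      then show ?thesis using loc aA chi by simp
    qed
  qed
  show ?thesis unfolding sysH_def permH_def using fin i s l by simp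
qed


lemma uin_oin_cong: assumes "ehead D' ` Es D' = ehead D ` Es D"
  shows "uin D' = uin D" "oin D' = oin D" "csign D' = csign D"
  using assms by (simp_all add: fun_eq_iff uin_def oin_def csign_def)

lemma uin_lt: "uin D c < 4" by (simp add: uin_def)

lemma omega_eq:
  assumes X: "Xs D' = Xs D" and H: "ehead D' ` Es D' = ehead D ` Es D"
    and L: "\<forall>c\<in>Xs D. \<forall>k<4. elab D' (edge_at D' (c,k)) = elab D (edge_at D (c,k))"
  shows "omega_b D' = omega_b D" "l_bg D' = l_bg D" "omega_c D' = omega_c D"
proof -
  note u = uin_oin_cong[OF H]
  have ov: "overlab D' c = overlab D c" if "c \<in> Xs D" for c
    using L that by (simp add: overlab_def)
  have iu: "elab D' (in_under D' c) = elab D (in_under D c)" if "c \<in> Xs D" for c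
    using L that uin_lt[of D c] by (simp add: in_under_def u)
  show "omega_b D' = omega_b D" unfolding omega_b_def X using ov iu u by (intro sum.cong) auto
  show "l_bg D' = l_bg D" unfolding l_bg_def X using ov iu u by (intro sum.cong) auto
  show "omega_c D' = omega_c D" unfolding omega_c_def X using ov iu u by (intro sum.cong) auto
qed

lemma edge_at_is: assumes "t \<in> Es D'" "ehead D' t = s \<or> etail D' t = s"
  and "\<And>e'. e' \<in> Es D' \<Longrightarrow> ehead D' e' = s \<or> etail D' e' = s \<Longrightarrow> e' = t"
  shows "edge_at D' s = t"
  unfolding edge_at_def
proof (rule the_equality)
  show "t \<in> Es D' \<and> (ehead D' t = s \<or> etail D' t = s)" using assms(1,2) by simp
  fix e' assume "e' \<in> Es D' \<and> (ehead D' e' = s \<or> etail D' e' = s)"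
  then show "e' = t" using assms(3) by blast
qed

lemma esucc_opp: assumes "e \<in> Es D" shows "esucc D e = edge_at D (opp (ehead D e))"
proof -
  have "esucc D e = edge_at D (fst (ehead D e), (snd (ehead D e) + 2) mod 4)" using assms by (simp add: esucc_def)
  then show ?thesis by (simp add: opp_def)
qed

lemma ufactor_Es: "e \<in> Es D \<Longrightarrow> ufactor D e = (if snd (ehead D e) \<in> {0,2} \<and> overlab D (fst (ehead D e)) \<noteq> -1
     then overlab D (fst (ehead D e)) powi csign D (fst (ehead D e)) else 1)"
  by (simp add: ufactor_def Let_def qzpow_powi qone_one qneg_uminus)

lemma ufactor_nEs: "e \<notin> Es D \<Longrightarrow> ufactor D e = 1"
  by (simp add: ufactor_def qone_one)

lemma agree_transfer:
  assumes wf: "wf_pd D" and X: "Xs D' = Xs D" and E: "Es D' = Es D"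
    and ag: "\<forall>e\<in>Es D. ehead D' e = ehead D e \<and> etail D' e = etail D e \<and> elab D' e = elab D e"
  shows "esucc D' = esucc D" "ufactor D' = ufactor D"
    "omega_b D' = omega_b D" "l_bg D' = l_bg D" "omega_c D' = omega_c D"
proof -
  have P: "(e \<in> Es D' \<and> (ehead D' e = s \<or> etail D' e = s)) = (e \<in> Es D \<and> (ehead D e = s \<or> etail D e = s))" for e s
    using ag E by auto
  have ea: "edge_at D' = edge_at D" unfolding edge_at_def fun_eq_iff P by simp
  have H: "ehead D' ` Es D' = ehead D ` Es D" using ag E by (auto simp: image_def)
  note u = uin_oin_cong[OF H]
  have lab: "elab D' (edge_at D' s) = elab D (edge_at D s)" if "s \<in> slots D" for s
    using edge_at_in(1)[OF wf that] ag ea by simp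
  have L: "\<forall>c\<in>Xs D. \<forall>k<4. elab D' (edge_at D' (c,k)) = elab D (edge_at D (c,k))"
    using lab by (simp add: slots_def)
  show "esucc D' = esucc D"
  proof
    fix e show "esucc D' e = esucc D e"
      using ag E ea by (cases "e \<in> Es D") (simp_all add: esucc_def)
  qed
  show "ufactor D' = ufactor D"
  proof
    fix e show "ufactor D' e = ufactor D e"
    proof (cases "e \<in> Es D")
      case True
      have c: "fst (ehead D e) \<in> Xs D" using slot_in[OF wf True] by simp
      have "overlab D' (fst (ehead D e)) = overlab D (fst (ehead D e))" using L c by (simp add: overlab_def)
      then show ?thesis using True E ag u by (simp add: ufactor_Es)
    next
      case False then show ?thesis using E by (simp add: ufactor_nEs)
    qed
  qed
  show "omega_b D' = omega_b D" "l_bg D' = l_bg D" "omega_c D' = omega_c D"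
    using omega_eq[OF X H L] by auto
qed

lemma sw_Es: "e1 \<in> S \<Longrightarrow> e2 \<in> S \<Longrightarrow> sw e1 e2 ` S = S"
proof
  assume a: "e1 \<in> S" "e2 \<in> S"
  show "sw e1 e2 ` S \<subseteq> S" using a by (auto simp: sw_def)
  show "S \<subseteq> sw e1 e2 ` S"
  proof
    fix x assume "x \<in> S"
    then have "sw e1 e2 (sw e1 e2 x) = x" "sw e1 e2 x \<in> S" using a by (auto simp: sw_def)
    then show "x \<in> sw e1 e2 ` S" using image_eqI[of x "sw e1 e2" "sw e1 e2 x" S] by simp
  qed
qed

lemma headswap:
  assumes wf: "wf_pd D" and e1: "e1 \<in> Es D" and e2: "e2 \<in> Es D" and lab: "elab D e1 = elab D e2"
    and X: "Xs D' = Xs D" and E: "Es D' = Es D"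
    and ag: "\<forall>e\<in>Es D. ehead D' e = ehead D (sw e1 e2 e) \<and> etail D' e = etail D e \<and> elab D' e = elab D e"
  shows "\<And>x. esucc D' x = esucc D (sw e1 e2 x)" "\<And>x. ufactor D' x = ufactor D (sw e1 e2 x)"
    "omega_b D' = omega_b D" "l_bg D' = l_bg D" "omega_c D' = omega_c D"
proof -
  have swE: "\<And>x. x \<in> Es D \<Longrightarrow> sw e1 e2 x \<in> Es D" using e1 e2 by (simp add: sw_def)
  have swl: "\<And>x. elab D (sw e1 e2 x) = elab D x" using lab by (simp add: sw_def)
  have H: "ehead D' ` Es D' = ehead D ` Es D"
  proof -
    have "ehead D' ` Es D' = ehead D ` (sw e1 e2 ` Es D)" using ag E by (auto simp: image_def)
    then show ?thesis using sw_Es[OF e1 e2] by simp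
  qed
  note u = uin_oin_cong[OF H]
  have ea_t: "edge_at D' s = edge_at D s" if s: "s \<in> slots D" "\<not> hdd D s" for s
  proof -
    have t: "edge_at D s \<in> Es D" "etail D (edge_at D s) = s" using edge_at_in(1)[OF wf s(1)] tl_edge[OF wf s(1)] s(2) by auto
    show ?thesis
    proof (rule edge_at_is)
      show "edge_at D s \<in> Es D'" using t E by simp
      show "ehead D' (edge_at D s) = s \<or> etail D' (edge_at D s) = s" using t ag by simp
      fix e' assume e': "e' \<in> Es D'" "ehead D' e' = s \<or> etail D' e' = s"
      show "e' = edge_at D s"
      proof (cases "ehead D' e' = s")
        case True
        then have "ehead D (sw e1 e2 e') = s" using ag e' E by simp
        then have "hdd D s" using swE e' E unfolding hdd_def by force
        then show ?thesis using s by simp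
      next
        case False
        then have "etail D e' = s" using e' ag E by simp
        moreover have "e' \<in> Es D" using e' E by simp
        ultimately show ?thesis using tail_inj[OF wf _ t(1)] t(2) by simp
      qed
    qed
  qed
  have ea_h: "edge_at D' s = sw e1 e2 (edge_at D s)" if s: "s \<in> slots D" "hdd D s" for s
  proof -
    have t: "edge_at D s \<in> Es D" "ehead D (edge_at D s) = s" using edge_at_in(1)[OF wf s(1)] hdd_edge[OF wf s(1)] s(2) by auto
    show ?thesis
    proof (rule edge_at_is)
      show "sw e1 e2 (edge_at D s) \<in> Es D'" using t E swE by simp
      show "ehead D' (sw e1 e2 (edge_at D s)) = s \<or> etail D' (sw e1 e2 (edge_at D s)) = s"
        using t ag swE by simp
      fix e' assume e': "e' \<in> Es D'" "ehead D' e' = s \<or> etail D' e' = s"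
      show "e' = sw e1 e2 (edge_at D s)"
      proof (cases "ehead D' e' = s")
        case True
        then have "ehead D (sw e1 e2 e') = s" using ag e' E by simp
        moreover have "sw e1 e2 e' \<in> Es D" using e' E swE by simp
        ultimately have "sw e1 e2 e' = edge_at D s" using head_inj[OF wf _ t(1)] t(2) by simp
        then have "sw e1 e2 (sw e1 e2 e') = sw e1 e2 (edge_at D s)" by simp
        then show ?thesis by simp
      next
        case False
        then have et: "etail D e' = s" using e' ag E by simp
        have eE: "e' \<in> Es D" using e' E by simp
        have "ehead D (edge_at D s) \<noteq> etail D e'" using head_ne_tail[OF wf t(1) eE] .
        then show ?thesis using t(2) et by simp
      qed
    qed
  qed
  have lab': "elab D' (edge_at D' s) = elab D (edge_at D s)" if s: "s \<in> slots D" for s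
  proof (cases "hdd D s")
    case True
    then show ?thesis using ea_h[OF s True] edge_at_in(1)[OF wf s] swE ag swl by simp
  next
    case False
    then show ?thesis using ea_t[OF s False] edge_at_in(1)[OF wf s] ag by simp
  qed
  have L: "\<forall>c\<in>Xs D. \<forall>k<4. elab D' (edge_at D' (c,k)) = elab D (edge_at D (c,k))"
    using lab' by (simp add: slots_def)
  have ov: "overlab D' c = overlab D c" if "c \<in> Xs D" for c using L that by (simp add: overlab_def)
  show "omega_b D' = omega_b D" "l_bg D' = l_bg D" "omega_c D' = omega_c D"
    using omega_eq[OF X H L] by auto
  fix x
  show "esucc D' x = esucc D (sw e1 e2 x)"
  proof (cases "x \<in> Es D")
    case True
    have sx: "sw e1 e2 x \<in> Es D" using swE True .
    have hs: "ehead D (sw e1 e2 x) \<in> slots D" using head_slot[OF wf sx] .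
    have os: "opp (ehead D (sw e1 e2 x)) \<in> slots D" using opp_slot[OF hs] .
    have nh: "\<not> hdd D (opp (ehead D (sw e1 e2 x)))" using hd_opp[OF wf hs] sx unfolding hdd_def by blast
    have "esucc D' x = edge_at D' (opp (ehead D' x))" using esucc_opp[of x D'] True E by simp
    also have "\<dots> = edge_at D' (opp (ehead D (sw e1 e2 x)))" using ag True by simp
    also have "\<dots> = edge_at D (opp (ehead D (sw e1 e2 x)))" using ea_t[OF os nh] .
    also have "\<dots> = esucc D (sw e1 e2 x)" using esucc_opp[OF sx] by simp
    finally show ?thesis .
  next
    case False
    then have "x \<noteq> e1" "x \<noteq> e2" using e1 e2 by auto
    then show ?thesis using False E by (simp add: esucc_def)
  qed
  show "ufactor D' x = ufactor D (sw e1 e2 x)"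
  proof (cases "x \<in> Es D")
    case True
    have sx: "sw e1 e2 x \<in> Es D" using swE True .
    have c: "fst (ehead D (sw e1 e2 x)) \<in> Xs D" using slot_in[OF wf sx] by simp
    have "ufactor D' x = ufactor D' x" ..
    then show ?thesis using True sx E ag ov[OF c] u by (simp add: ufactor_Es)
  next
    case False
    then have "x \<noteq> e1" "x \<noteq> e2" using e1 e2 by auto
    then show ?thesis using False E by (simp add: ufactor_nEs)
  qed
qed

lemma tailswap:
  assumes wf: "wf_pd D" and e1: "e1 \<in> Es D" and e2: "e2 \<in> Es D" and lab: "elab D e1 = elab D e2"
    and X: "Xs D' = Xs D" and E: "Es D' = Es D"
    and ag: "\<forall>e\<in>Es D. ehead D' e = ehead D e \<and> etail D' e = etail D (sw e1 e2 e) \<and> elab D' e = elab D e"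
  shows "\<And>x. esucc D' x = sw e1 e2 (esucc D x)" "ufactor D' = ufactor D"
    "omega_b D' = omega_b D" "l_bg D' = l_bg D" "omega_c D' = omega_c D"
proof -
  have swE: "\<And>x. x \<in> Es D \<Longrightarrow> sw e1 e2 x \<in> Es D" using e1 e2 by (simp add: sw_def)
  have swl: "\<And>x. elab D (sw e1 e2 x) = elab D x" using lab by (simp add: sw_def)
  have H: "ehead D' ` Es D' = ehead D ` Es D" using ag E by (auto simp: image_def)
  note u = uin_oin_cong[OF H]
  have ea_h: "edge_at D' s = edge_at D s" if s: "s \<in> slots D" "hdd D s" for s
  proof -
    have t: "edge_at D s \<in> Es D" "ehead D (edge_at D s) = s" using edge_at_in(1)[OF wf s(1)] hdd_edge[OF wf s(1)] s(2) by auto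
    show ?thesis
    proof (rule edge_at_is)
      show "edge_at D s \<in> Es D'" using t E by simp
      show "ehead D' (edge_at D s) = s \<or> etail D' (edge_at D s) = s" using t ag by simp
      fix e' assume e': "e' \<in> Es D'" "ehead D' e' = s \<or> etail D' e' = s"
      show "e' = edge_at D s"
      proof (cases "ehead D' e' = s")
        case True
        then have "ehead D e' = s" using ag e' E by simp
        moreover have "e' \<in> Es D" using e' E by simp
        ultimately show ?thesis using head_inj[OF wf _ t(1)] t(2) by simp
      next
        case False
        then have et: "etail D (sw e1 e2 e') = s" using e' ag E by simp
        have eE: "sw e1 e2 e' \<in> Es D" using e' E swE by simp
        have "ehead D (edge_at D s) \<noteq> etail D (sw e1 e2 e')" using head_ne_tail[OF wf t(1) eE] .
        then show ?thesis using t(2) et by simp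
      qed
    qed
  qed
  have ea_t: "edge_at D' s = sw e1 e2 (edge_at D s)" if s: "s \<in> slots D" "\<not> hdd D s" for s
  proof -
    have t: "edge_at D s \<in> Es D" "etail D (edge_at D s) = s" using edge_at_in(1)[OF wf s(1)] tl_edge[OF wf s(1)] s(2) by auto
    show ?thesis
    proof (rule edge_at_is)
      show "sw e1 e2 (edge_at D s) \<in> Es D'" using t E swE by simp
      show "ehead D' (sw e1 e2 (edge_at D s)) = s \<or> etail D' (sw e1 e2 (edge_at D s)) = s"
        using t ag swE by simp
      fix e' assume e': "e' \<in> Es D'" "ehead D' e' = s \<or> etail D' e' = s"
      show "e' = sw e1 e2 (edge_at D s)"
      proof (cases "ehead D' e' = s")
        case True
        then have "ehead D e' = s" using ag e' E by simp
        then have "hdd D s" using e' E unfolding hdd_def by force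
        then show ?thesis using s by simp
      next
        case False
        then have "etail D (sw e1 e2 e') = s" using e' ag E by simp
        moreover have "sw e1 e2 e' \<in> Es D" using e' E swE by simp
        ultimately have "sw e1 e2 e' = edge_at D s" using tail_inj[OF wf _ t(1)] t(2) by simp
        then have "sw e1 e2 (sw e1 e2 e') = sw e1 e2 (edge_at D s)" by simp
        then show ?thesis by simp
      qed
    qed
  qed
  have lab': "elab D' (edge_at D' s) = elab D (edge_at D s)" if s: "s \<in> slots D" for s
  proof (cases "hdd D s")
    case True
    then show ?thesis using ea_h[OF s True] edge_at_in(1)[OF wf s] ag by simp
  next
    case False
    then show ?thesis using ea_t[OF s False] edge_at_in(1)[OF wf s] swE ag swl by simp
  qed
  have L: "\<forall>c\<in>Xs D. \<forall>k<4. elab D' (edge_at D' (c,k)) = elab D (edge_at D (c,k))"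
    using lab' by (simp add: slots_def)
  have ov: "overlab D' c = overlab D c" if "c \<in> Xs D" for c using L that by (simp add: overlab_def)
  show "omega_b D' = omega_b D" "l_bg D' = l_bg D" "omega_c D' = omega_c D"
    using omega_eq[OF X H L] by auto
  show "ufactor D' = ufactor D"
  proof
    fix x show "ufactor D' x = ufactor D x"
    proof (cases "x \<in> Es D")
      case True
      have c: "fst (ehead D x) \<in> Xs D" using slot_in[OF wf True] by simp
      show ?thesis using True E ag ov[OF c] u by (simp add: ufactor_Es)
    next
      case False then show ?thesis using E by (simp add: ufactor_nEs)
    qed
  qed
  fix x
  show "esucc D' x = sw e1 e2 (esucc D x)"
  proof (cases "x \<in> Es D")
    case True
    have hs: "ehead D x \<in> slots D" using head_slot[OF wf True] .
    have os: "opp (ehead D x) \<in> slots D" using opp_slot[OF hs] .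
    have nh: "\<not> hdd D (opp (ehead D x))" using hd_opp[OF wf hs] True unfolding hdd_def by blast
    have "esucc D' x = edge_at D' (opp (ehead D' x))" using esucc_opp[of x D'] True E by simp
    also have "\<dots> = edge_at D' (opp (ehead D x))" using ag True by simp
    also have "\<dots> = sw e1 e2 (edge_at D (opp (ehead D x)))" using ea_t[OF os nh] .
    also have "\<dots> = sw e1 e2 (esucc D x)" using esucc_opp[OF True] by simp
    finally show ?thesis .
  next
    case False
    then have "x \<noteq> e1" "x \<noteq> e2" using e1 e2 by auto
    then show ?thesis using False E by (simp add: esucc_def)
  qed
qed


definition bad :: "quat \<Rightarrow> bool" where
  "bad x \<longleftrightarrow> (is_black x \<and> \<not> black_good x) \<or> (is_gray x \<and> \<not> gray_good x)"

lemma toQ_ijk: "qi (toQ v) * qj (toQ v) * qk (toQ v) < 0 \<longleftrightarrow> goodB v"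
  "qi (toQ v) * qj (toQ v) * qk (toQ v) > 0 \<longleftrightarrow> goodG v"
proof -
  obtain a b c d where v: "v = (a,b,c,d)" by (cases v)
  have e: "qi (toQ v) * qj (toQ v) * qk (toQ v) = real_of_int (b*c*d) / 8" by (simp add: v toQ_def)
  have n1: "real_of_int n / 8 < 0 \<longleftrightarrow> n < 0" for n :: int by simp
  have n2: "real_of_int n / 8 > 0 \<longleftrightarrow> n > 0" for n :: int by simp
  show "qi (toQ v) * qj (toQ v) * qk (toQ v) < 0 \<longleftrightarrow> goodB v" unfolding e n1 by (simp add: v)
  show "qi (toQ v) * qj (toQ v) * qk (toQ v) > 0 \<longleftrightarrow> goodG v" unfolding e n2 by (simp add: v)
qed

lemma good_conj:
  assumes g: "g \<in> Tstar" and x: "x \<in> Tstar"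
  shows "qre x = 1/2 \<Longrightarrow> black_good (g * x * inverse g) \<longleftrightarrow> black_good x"
    and "qre x = -1/2 \<Longrightarrow> gray_good (g * x * inverse g) \<longleftrightarrow> gray_good x"
proof -
  obtain v where v: "v \<in> set L24" "g = toQ v" using g Tstar_cases by blast
  obtain w where w: "w \<in> set L24" "x = toQ w" using x Tstar_cases by blast
  have m1: "g * x = toQ (rawmul v w)" "rawmul v w \<in> set L24" using toQ_mul[OF v(1) w(1)] v w by auto
  have ci: "inverse g = toQ (qcnj v)" "qcnj v \<in> set L24" using toQ_cnj[OF v(1)] v by auto
  have m2: "g * x * inverse g = toQ (rawmul (rawmul v w) (qcnj v))"
    using toQ_mul[OF m1(2) ci(2)] m1 ci by simp
  have T1: "g * x * inverse g \<in> Tstar" using g x by (simp add: Tstar_mult Tstar_inverse)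
  have ci_all: "fst (rawmul (rawmul v w) (qcnj v)) = fst w \<and>
     (fst w = 1 \<longrightarrow> (goodB (rawmul (rawmul v w) (qcnj v)) \<longleftrightarrow> goodB w)) \<and>
     (fst w = -1 \<longrightarrow> (goodG (rawmul (rawmul v w) (qcnj v)) \<longleftrightarrow> goodG w))"
    using conj_int v(1) w(1) unfolding list_all_iff by blast
  have re: "qre (g * x * inverse g) = qre x" using qre_conj Tstar_nz[OF g] by blast
  show "qre x = 1/2 \<Longrightarrow> black_good (g * x * inverse g) \<longleftrightarrow> black_good x"
  proof -
    assume r: "qre x = 1/2"
    then have "fst w = 1" using w qre_toQ[of w] by simp
    then show ?thesis using ci_all toQ_ijk(1) m2 w r re T1 x by (simp add: black_good_def is_black_def)
  qed
  show "qre x = -1/2 \<Longrightarrow> gray_good (g * x * inverse g) \<longleftrightarrow> gray_good x"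
  proof -
    assume r: "qre x = -1/2"
    then have "fst w = -1" using w qre_toQ[of w] by simp
    then show ?thesis using ci_all toQ_ijk(2) m2 w r re T1 x by (simp add: gray_good_def is_gray_def)
  qed
qed

lemma bad_conj: assumes g: "g \<in> Tstar" and x: "x \<in> Tstar" shows "bad (g * x * inverse g) \<longleftrightarrow> bad x"
proof -
  have re: "qre (g * x * inverse g) = qre x" using qre_conj Tstar_nz[OF g] by blast
  have T1: "g * x * inverse g \<in> Tstar" using g x by (simp add: Tstar_mult Tstar_inverse)
  show ?thesis
  proof (cases "qre x = 1/2")
    case True
    then show ?thesis using good_conj(1)[OF g x True] re T1 x
      by (auto simp: bad_def is_black_def is_gray_def)
  next
    case False
    show ?thesis
    proof (cases "qre x = -1/2")
      case True
      then show ?thesis using good_conj(2)[OF g x True] re T1 x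
        by (auto simp: bad_def is_black_def is_gray_def)
    next
      case False2: False
      then show ?thesis using False re by (auto simp: bad_def is_black_def is_gray_def)
    qed
  qed
qed

lemma Q8_re: "x \<in> Q8 \<Longrightarrow> qre x \<noteq> 1/2 \<and> qre x \<noteq> -1/2"
  unfolding Q8_def by auto

lemma nQ8_re: "x \<in> Tstar \<Longrightarrow> x \<notin> Q8 \<Longrightarrow> qre x = 1/2 \<or> qre x = -1/2"
  unfolding Tstar_def by auto

lemma Q8_conj: assumes g: "g \<in> Tstar" and x: "x \<in> Tstar" shows "g * x * inverse g \<in> Q8 \<longleftrightarrow> x \<in> Q8"
proof -
  have re: "qre (g * x * inverse g) = qre x" using qre_conj Tstar_nz[OF g] by blast
  have T1: "g * x * inverse g \<in> Tstar" using g x by (simp add: Tstar_mult Tstar_inverse)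
  show ?thesis using Q8_re nQ8_re[OF T1] nQ8_re[OF x] re by metis
qed


lemma rev_simps:
  "Xs (reverse_edges S D) = Xs D" "Es (reverse_edges S D) = Es D" "Fs (reverse_edges S D) = Fs D"
  "ehead (reverse_edges S D) e = (if e \<in> S then etail D e else ehead D e)"
  "etail (reverse_edges S D) e = (if e \<in> S then ehead D e else etail D e)"
  "elab (reverse_edges S D) e = (if e \<in> S then inverse (elab D e) else elab D e)"
  by (simp_all add: reverse_edges_def qinv_inverse)

lemma rev_edge_at: "edge_at (reverse_edges S D) = edge_at D"
proof -
  have "(e \<in> Es (reverse_edges S D) \<and> (ehead (reverse_edges S D) e = s \<or> etail (reverse_edges S D) e = s))
     = (e \<in> Es D \<and> (ehead D e = s \<or> etail D e = s))" for e s
    by (auto simp: rev_simps)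
  then show ?thesis unfolding edge_at_def fun_eq_iff by simp
qed

lemma rev_slots: "slots (reverse_edges S D) = slots D" by (simp add: slots_def rev_simps)

lemma rev_hd: assumes wf: "wf_pd D" and s: "s \<in> slots D"
  shows "hdd (reverse_edges S D) s \<longleftrightarrow> (hdd D s \<longleftrightarrow> edge_at D s \<notin> S)"
proof -
  define t where "t = edge_at D s"
  have t: "t \<in> Es D" "ehead D t = s \<or> etail D t = s" using edge_at_in[OF wf s] by (auto simp: t_def)
  have uniq: "e = t" if "e \<in> Es D" "ehead D e = s \<or> etail D e = s" for e
    using edge_at_eq[OF wf that] by (simp add: t_def)
  have "hdd (reverse_edges S D) s \<longleftrightarrow> (\<exists>e\<in>Es D. ehead (reverse_edges S D) e = s)"
    unfolding hdd_def rev_simps(2) by blast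
  also have "\<dots> \<longleftrightarrow> ehead (reverse_edges S D) t = s"
  proof
    assume "\<exists>e\<in>Es D. ehead (reverse_edges S D) e = s"
    then obtain e where e: "e \<in> Es D" "ehead (reverse_edges S D) e = s" by blast
    then have "ehead D e = s \<or> etail D e = s" by (auto simp: rev_simps split: if_splits)
    then have "e = t" using uniq e(1) by blast
    then show "ehead (reverse_edges S D) t = s" using e by simp
  next
    assume "ehead (reverse_edges S D) t = s"
    then show "\<exists>e\<in>Es D. ehead (reverse_edges S D) e = s" using t(1) by blast
  qed
  also have "\<dots> \<longleftrightarrow> (if t \<in> S then etail D t = s else ehead D t = s)" by (simp add: rev_simps)
  also have "\<dots> \<longleftrightarrow> (hdd D s \<longleftrightarrow> t \<notin> S)"
    using hdd_edge[OF wf s] tl_edge[OF wf s] by (auto simp: t_def)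
  finally show ?thesis by (simp add: t_def)
qed

definition closedS :: "nat set \<Rightarrow> diagram \<Rightarrow> bool" where
  "closedS S D \<longleftrightarrow> (\<forall>e\<in>Es D. esucc D e \<in> S \<longleftrightarrow> e \<in> S)"

lemma S_opp: assumes wf: "wf_pd D" and cl: "closedS S D" and s: "s \<in> slots D"
  shows "edge_at D (opp s) \<in> S \<longleftrightarrow> edge_at D s \<in> S"
proof (cases "hdd D s")
  case True
  define t where "t = edge_at D s"
  have t: "t \<in> Es D" "ehead D t = s" using edge_at_in(1)[OF wf s] hdd_edge[OF wf s] True by (auto simp: t_def)
  have "esucc D t = edge_at D (opp s)" using esucc_opp[OF t(1)] t(2) by simp
  then show ?thesis using cl t(1) unfolding closedS_def t_def by metis
next
  case False
  have os: "opp s \<in> slots D" using opp_slot[OF s] .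
  have ho: "hdd D (opp s)" using hd_opp[OF wf s] False by simp
  define t where "t = edge_at D (opp s)"
  have t: "t \<in> Es D" "ehead D t = opp s" using edge_at_in(1)[OF wf os] hdd_edge[OF wf os] ho by (auto simp: t_def)
  have "esucc D t = edge_at D s" using esucc_opp[OF t(1)] t(2) opp_opp[OF s] by simp
  then show ?thesis using cl t(1) unfolding closedS_def t_def by metis
qed

lemma rev_wf: assumes wf: "wf_pd D" and cl: "closedS S D"
  shows "wf_pd (reverse_edges S D)"
proof -
  let ?R = "reverse_edges S D"
  define \<phi> where "\<phi> = (\<lambda>(e::nat, b::bool). (e, if e \<in> S then \<not> b else b))"
  have phi_bij: "bij_betw \<phi> (Es D \<times> UNIV) (Es D \<times> UNIV)"
  proof (rule bij_betw_byWitness[where f' = \<phi>])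
    show "\<forall>a\<in>Es D \<times> UNIV. \<phi> (\<phi> a) = a" by (auto simp: \<phi>_def)
    show "\<forall>a\<in>Es D \<times> UNIV. \<phi> (\<phi> a) = a" by (auto simp: \<phi>_def)
    show "\<phi> ` (Es D \<times> UNIV) \<subseteq> Es D \<times> UNIV" by (auto simp: \<phi>_def)
    show "\<phi> ` (Es D \<times> UNIV) \<subseteq> Es D \<times> UNIV" by (auto simp: \<phi>_def)
  qed
  have ee: "edge_end ?R x = (edge_end D \<circ> \<phi>) x" for x
    by (cases x) (simp add: edge_end_def \<phi>_def rev_simps)
  have b: "bij_betw (edge_end ?R) (Es ?R \<times> UNIV) (slots ?R)"
  proof -
    have "bij_betw (edge_end D \<circ> \<phi>) (Es D \<times> UNIV) (slots D)"
      using bij_betw_trans[OF phi_bij wf_bij[OF wf]] .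
    moreover have "edge_end ?R = edge_end D \<circ> \<phi>" by (rule ext) (rule ee)
    ultimately show ?thesis by (simp only: rev_simps rev_slots)
  qed
  have hdR: "(c,k) \<in> ehead ?R ` Es ?R \<longleftrightarrow> hdd ?R (c,k)" for c k by (simp add: hdd_def)
  have cond: "\<forall>c\<in>Xs ?R. ((c,0) \<in> ehead ?R ` Es ?R \<longleftrightarrow> (c,2) \<in> etail ?R ` Es ?R)
                 \<and> ((c,1) \<in> ehead ?R ` Es ?R \<longleftrightarrow> (c,3) \<in> etail ?R ` Es ?R)"
  proof
    fix c assume "c \<in> Xs ?R"
    then have c: "c \<in> Xs D" by (simp add: rev_simps)
    have sl: "(c,k) \<in> slots D" if "k < 4" for k using c that by (simp add: slots_def)
    have tR: "(c,k) \<in> etail ?R ` Es ?R \<longleftrightarrow> \<not> hdd ?R (c,k)" if "k < 4" for k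
    proof -
      have wfR: "(c,k) \<in> slots ?R" using sl[OF that] by (simp add: rev_slots)
      have "(c,k) \<in> etail ?R ` Es ?R \<longleftrightarrow> (\<exists>e\<in>Es D. etail ?R e = (c,k))" unfolding rev_simps(2) image_iff by (metis)
      moreover have "hdd ?R (c,k) \<longleftrightarrow> (\<exists>e\<in>Es D. ehead ?R e = (c,k))" unfolding hdd_def rev_simps(2) image_iff by (metis)
      moreover have "(\<exists>e\<in>Es D. etail ?R e = (c,k)) \<longleftrightarrow> \<not> (\<exists>e\<in>Es D. ehead ?R e = (c,k))"
      proof -
        have "(c,k) \<in> edge_end ?R ` (Es D \<times> UNIV)"
          using b wfR unfolding bij_betw_def by (simp add: rev_simps)
        then have cov: "\<exists>x\<in>Es D \<times> UNIV. edge_end ?R x = (c,k)" by (metis imageE)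
        have inj: "inj_on (edge_end ?R) (Es D \<times> UNIV)" using b unfolding bij_betw_def by (simp add: rev_simps)
        show ?thesis
        proof
          assume "\<exists>e\<in>Es D. etail ?R e = (c,k)"
          then obtain e where e: "e \<in> Es D" "etail ?R e = (c,k)" by blast
          show "\<not> (\<exists>e\<in>Es D. ehead ?R e = (c,k))"
          proof
            assume "\<exists>e\<in>Es D. ehead ?R e = (c,k)"
            then obtain e' where e': "e' \<in> Es D" "ehead ?R e' = (c,k)" by blast
            have "edge_end ?R (e,False) = edge_end ?R (e',True)" using e e' by (simp add: edge_end_def)
            then have "(e,False) = (e',True)" using inj e(1) e'(1) unfolding inj_on_def by blast
            then show False by simp
          qed
        next
          assume "\<not> (\<exists>e\<in>Es D. ehead ?R e = (c,k))"
          then show "\<exists>e\<in>Es D. etail ?R e = (c,k)" using cov by (auto simp: edge_end_def split: if_splits)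
        qed
      qed
      ultimately show ?thesis by simp
    qed
    have h0: "hdd ?R (c,0) \<longleftrightarrow> (hdd D (c,0) \<longleftrightarrow> edge_at D (c,0) \<notin> S)" using rev_hd[OF wf sl[of 0]] by simp
    have h2: "hdd ?R (c,2) \<longleftrightarrow> (hdd D (c,2) \<longleftrightarrow> edge_at D (c,2) \<notin> S)" using rev_hd[OF wf sl[of 2]] by simp
    have h1: "hdd ?R (c,1) \<longleftrightarrow> (hdd D (c,1) \<longleftrightarrow> edge_at D (c,1) \<notin> S)" using rev_hd[OF wf sl[of 1]] by simp
    have h3: "hdd ?R (c,3) \<longleftrightarrow> (hdd D (c,3) \<longleftrightarrow> edge_at D (c,3) \<notin> S)" using rev_hd[OF wf sl[of 3]] by simp
    have o: "opp (c,0) = (c,2)" "opp (c,1) = (c,3)" by (simp_all add: opp_def)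
    have s02: "edge_at D (c,2) \<in> S \<longleftrightarrow> edge_at D (c,0) \<in> S" using S_opp[OF wf cl sl[of 0]] unfolding o by simp
    have s13: "edge_at D (c,3) \<in> S \<longleftrightarrow> edge_at D (c,1) \<in> S" using S_opp[OF wf cl sl[of 1]] unfolding o by simp
    note w = wf_slots[OF wf c]
    show "((c,0) \<in> ehead ?R ` Es ?R \<longleftrightarrow> (c,2) \<in> etail ?R ` Es ?R)
                 \<and> ((c,1) \<in> ehead ?R ` Es ?R \<longleftrightarrow> (c,3) \<in> etail ?R ` Es ?R)"
      unfolding hdR tR[of 2, simplified] tR[of 3, simplified] using h0 h1 h2 h3 s02 s13 w by blast
  qed
  show ?thesis using wf b cond unfolding wf_pd_def by (simp add: rev_simps)
qed


lemma wirt_alg: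
  fixes g x y :: quat
  assumes g: "g \<noteq> 0" and x: "x \<noteq> 0" and e: "\<epsilon> = 1 \<or> \<epsilon> = -1" and y: "y = g powi \<epsilon> * x * g powi (-\<epsilon>)"
  shows "y = (inverse g) powi (-\<epsilon>) * x * (inverse g) powi (- (-\<epsilon>))"
    and "inverse x = g powi (-\<epsilon>) * inverse y * g powi (- (-\<epsilon>))"
    and "inverse x = (inverse g) powi \<epsilon> * inverse y * (inverse g) powi (-\<epsilon>)"
proof -
  define G where "G = g powi \<epsilon>"
  have G0: "G \<noteq> 0" using g by (simp add: G_def)
  have m: "g powi (-\<epsilon>) = inverse G" by (simp add: G_def power_int_minus)
  have y': "y = G * x * inverse G" using y m by (simp add: G_def)
  have iy: "inverse y = G * inverse x * inverse G"
    using G0 x y' by (simp add: nonzero_inverse_mult_distrib mult.assoc)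
  show "y = (inverse g) powi (-\<epsilon>) * x * (inverse g) powi (- (-\<epsilon>))"
    using y' m by (simp add: power_int_inverse G_def)
  have "g powi (-\<epsilon>) * inverse y * g powi (- (-\<epsilon>)) = inverse G * (G * inverse x * inverse G) * G"
    using m iy by (simp add: G_def)
  also have "\<dots> = (inverse G * G) * inverse x * (inverse G * G)" by (simp only: mult.assoc)
  also have "\<dots> = inverse x" using G0 by simp
  finally show "inverse x = g powi (-\<epsilon>) * inverse y * g powi (- (-\<epsilon>))" by simp
  then show "inverse x = (inverse g) powi \<epsilon> * inverse y * (inverse g) powi (-\<epsilon>)"
    by (simp add: power_int_inverse power_int_minus)
qed

lemma uin_cases: "uin D c = 0 \<or> uin D c = 2" by (simp add: uin_def)
lemma oin_cases: "oin D c = 1 \<or> oin D c = 3" by (simp add: oin_def)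

lemma rev_colored: assumes wf: "wf_pd D" and col: "colored D" and cl: "closedS S D"
  shows "colored (reverse_edges S D)"
proof -
  let ?R = "reverse_edges S D"
  have ea: "edge_at ?R = edge_at D" by (rule rev_edge_at)
  have labT: "\<forall>e\<in>Es ?R \<union> Fs ?R. elab ?R e \<in> Tstar"
    using col by (auto simp: colored_def rev_simps Tstar_inverse)
  have cr: "elab ?R (edge_at ?R (c,1)) = elab ?R (edge_at ?R (c,3))
         \<and> elab ?R (out_under ?R c) =
             qmul (qmul (qzpow (overlab ?R c) (csign ?R c)) (elab ?R (in_under ?R c)))
                  (qzpow (overlab ?R c) (- csign ?R c))" if cR: "c \<in> Xs ?R" for c
  proof -
    have c: "c \<in> Xs D" using cR by (simp add: rev_simps)
    have sl: "(c,k) \<in> slots D" if "k < 4" for k using c that by (simp add: slots_def)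
    have o: "opp (c,0) = (c,2)" "opp (c,1) = (c,3)" by (simp_all add: opp_def)
    have s02: "edge_at D (c,2) \<in> S \<longleftrightarrow> edge_at D (c,0) \<in> S" using S_opp[OF wf cl sl[of 0]] unfolding o by simp
    have s13: "edge_at D (c,3) \<in> S \<longleftrightarrow> edge_at D (c,1) \<in> S" using S_opp[OF wf cl sl[of 1]] unfolding o by simp
    define a where "a = (edge_at D (c,0) \<in> S)"
    define b where "b = (edge_at D (c,1) \<in> S)"
    have colc: "elab D (edge_at D (c,1)) = elab D (edge_at D (c,3))"
        "elab D (out_under D c) = qmul (qmul (qzpow (overlab D c) (csign D c)) (elab D (in_under D c)))
                  (qzpow (overlab D c) (- csign D c))"
      using col c unfolding colored_def by blast+
    have h0: "hdd ?R (c,0) \<longleftrightarrow> (hdd D (c,0) \<longleftrightarrow> \<not> a)" using rev_hd[OF wf sl[of 0]] by (simp add: a_def)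
    have h1: "hdd ?R (c,1) \<longleftrightarrow> (hdd D (c,1) \<longleftrightarrow> \<not> b)" using rev_hd[OF wf sl[of 1]] by (simp add: b_def)
    have ur: "uin ?R c = (if a then (uin D c + 2) mod 4 else uin D c)"
      using h0 by (cases "hdd D (c,0)"; cases a) (simp_all add: uin_def hdd_def)
    have orr: "oin ?R c = (if b then (oin D c + 2) mod 4 else oin D c)"
      using h1 by (cases "hdd D (c,1)"; cases b) (simp_all add: oin_def hdd_def)
    have cs: "csign ?R c = (if a = b then csign D c else - csign D c)"
      using uin_cases[of D c] oin_cases[of D c] ur orr
      by (cases a; cases b) (auto simp: csign_def)
    have inR: "in_under ?R c = (if a then out_under D c else in_under D c)"
      using ur uin_cases[of D c] by (auto simp: in_under_def out_under_def ea numeral_2_eq_2)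
    have outR: "out_under ?R c = (if a then in_under D c else out_under D c)"
      using ur uin_cases[of D c] by (auto simp: in_under_def out_under_def ea numeral_2_eq_2)
    have inS: "in_under D c \<in> S \<longleftrightarrow> a"
      using uin_cases[of D c] s02 by (auto simp: in_under_def a_def numeral_2_eq_2)
    have outS: "out_under D c \<in> S \<longleftrightarrow> a"
      using uin_cases[of D c] s02 by (auto simp: out_under_def a_def numeral_2_eq_2)
    have ovR: "overlab ?R c = (if b then inverse (overlab D c) else overlab D c)"
      by (simp add: overlab_def ea rev_simps b_def)
    have inE: "in_under D c \<in> Es D" "out_under D c \<in> Es D" "edge_at D (c,1) \<in> Es D"
      using edge_at_in(1)[OF wf] sl uin_cases[of D c] by (auto simp: in_under_def out_under_def)
    define g where "g = overlab D c"
    define x where "x = elab D (in_under D c)"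
    define y where "y = elab D (out_under D c)"
    define \<epsilon> where "\<epsilon> = csign D c"
    have gT: "g \<in> Tstar" using overlab_T[OF wf col c] by (simp add: g_def)
    have xT: "x \<in> Tstar" using colored_T[OF col] inE by (simp add: x_def)
    have eps: "\<epsilon> = 1 \<or> \<epsilon> = -1" using csign_pm by (simp add: \<epsilon>_def)
    have rel: "y = g powi \<epsilon> * x * g powi (-\<epsilon>)"
      using colc(2) by (simp add: qmul_times qzpow_powi g_def x_def y_def \<epsilon>_def)
    note W = wirt_alg[OF Tstar_nz[OF gT] Tstar_nz[OF xT] eps rel]
    have part1: "elab ?R (edge_at ?R (c,1)) = elab ?R (edge_at ?R (c,3))"
      using colc(1) s13 by (simp add: ea rev_simps b_def)
    have part2: "elab ?R (out_under ?R c) =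
             (overlab ?R c) powi (csign ?R c) * (elab ?R (in_under ?R c)) * (overlab ?R c) powi (- csign ?R c)"
    proof (cases a; cases b)
      assume "a" "b"
      then show ?thesis using W(3) inR outR inS outS ovR cs
        by (simp add: rev_simps g_def x_def y_def \<epsilon>_def)
    next
      assume "a" "\<not> b"
      then show ?thesis using W(2) inR outR inS outS ovR cs
        by (simp add: rev_simps g_def x_def y_def \<epsilon>_def)
    next
      assume "\<not> a" "b"
      then show ?thesis using W(1) inR outR inS outS ovR cs
        by (simp add: rev_simps g_def x_def y_def \<epsilon>_def)
    next
      assume "\<not> a" "\<not> b"
      then show ?thesis using rel inR outR inS outS ovR cs
        by (simp add: rev_simps g_def x_def y_def \<epsilon>_def)
    qed
    show ?thesis using part1 part2 by (simp add: qmul_times qzpow_powi)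
  qed
  show ?thesis unfolding colored_def using labT cr by blast
qed


lemma rho_simps:
  "Xs (rho D) = Xs D" "Es (rho D) = Es D" "Fs (rho D) = Fs D"
  "ehead (rho D) = ehead D" "etail (rho D) = etail D" "ereg (rho D) = ereg D"
  "elab (rho D) e = (if elab D e \<in> Q8 then elab D e else - elab D e)"
  by (simp_all add: rho_def qneg_uminus)

lemma rho_same: "edge_at (rho D) = edge_at D" "uin (rho D) = uin D" "oin (rho D) = oin D"
  "csign (rho D) = csign D" "in_under (rho D) = in_under D" "out_under (rho D) = out_under D"
  "slots (rho D) = slots D" "edge_end (rho D) = edge_end D"
  by (simp_all add: fun_eq_iff edge_at_def rho_simps uin_def oin_def csign_def in_under_def out_under_def
      slots_def edge_end_def)

lemma rho_wf: "wf_pd (rho D) = wf_pd D"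
  unfolding wf_pd_def by (simp add: rho_simps rho_same)

lemma neg_powi: "(k::int) = 1 \<or> k = -1 \<Longrightarrow> (- g :: quat) powi k = - (g powi k)"
  by (auto simp: inverse_minus_eq)

lemma rho_colored: assumes wf: "wf_pd D" and col: "colored D" shows "colored (rho D)"
proof -
  define f where "f = (\<lambda>x::quat. if x \<in> Q8 then x else - x)"
  have el: "elab (rho D) e = f (elab D e)" for e by (simp add: rho_simps f_def)
  have fT: "x \<in> Tstar \<Longrightarrow> f x \<in> Tstar" for x by (simp add: f_def Tstar_neg)
  have labT: "\<forall>e\<in>Es (rho D) \<union> Fs (rho D). elab (rho D) e \<in> Tstar"
  proof
    fix e assume "e \<in> Es (rho D) \<union> Fs (rho D)"
    then have "elab D e \<in> Tstar" using colored_T[OF col] by (simp add: rho_simps(2,3))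
    then show "elab (rho D) e \<in> Tstar" unfolding el by (rule fT)
  qed
  have fp: "f g powi k * X * f g powi (-k) = g powi k * X * g powi (-k)" if "(k::int) = 1 \<or> k = -1" for g X k
  proof (cases "g \<in> Q8")
    case True then show ?thesis by (simp add: f_def)
  next
    case False
    have "(-k) = 1 \<or> -k = -1" using that by auto
    then show ?thesis using False neg_powi[OF that, of g] neg_powi[of "-k" g] by (simp add: f_def)
  qed
  have cr: "elab (rho D) (edge_at (rho D) (c,1)) = elab (rho D) (edge_at (rho D) (c,3))
         \<and> elab (rho D) (out_under (rho D) c) =
             qmul (qmul (qzpow (overlab (rho D) c) (csign (rho D) c)) (elab (rho D) (in_under (rho D) c)))
                  (qzpow (overlab (rho D) c) (- csign (rho D) c))" if cR: "c \<in> Xs (rho D)" for c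
  proof -
    have c: "c \<in> Xs D" using cR by (simp add: rho_simps)
    have colc: "elab D (edge_at D (c,1)) = elab D (edge_at D (c,3))"
        "elab D (out_under D c) = qmul (qmul (qzpow (overlab D c) (csign D c)) (elab D (in_under D c)))
                  (qzpow (overlab D c) (- csign D c))"
      using col c unfolding colored_def by blast+
    have sl: "(c,k) \<in> slots D" if "k < 4" for k using c that by (simp add: slots_def)
    have inE: "in_under D c \<in> Es D" using edge_at_in(1)[OF wf] sl uin_cases[of D c] by (auto simp: in_under_def)
    define g where "g = overlab D c"
    define x where "x = elab D (in_under D c)"
    define y where "y = elab D (out_under D c)"
    define \<epsilon> where "\<epsilon> = csign D c"
    define G where "G = g powi \<epsilon>"
    have gT: "g \<in> Tstar" using overlab_T[OF wf col c] by (simp add: g_def)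
    have xT: "x \<in> Tstar" using colored_T[OF col] inE by (simp add: x_def)
    have eps: "\<epsilon> = 1 \<or> \<epsilon> = -1" using csign_pm by (simp add: \<epsilon>_def)
    have GT: "G \<in> Tstar" using powi_pm1_T[OF gT eps] by (simp add: G_def)
    have mG: "g powi (-\<epsilon>) = inverse G" by (simp add: G_def power_int_minus)
    have rel: "y = G * x * inverse G"
      using colc(2) mG by (simp add: qmul_times qzpow_powi g_def x_def y_def \<epsilon>_def G_def)
    have q8: "y \<in> Q8 \<longleftrightarrow> x \<in> Q8" using Q8_conj[OF GT xT] rel by simp
    have fy: "f y = G * f x * inverse G"
      using q8 rel by (simp add: f_def)
    have ov: "overlab (rho D) c = f g" by (simp add: overlab_def rho_same el g_def)
    have part2: "f y = f g powi \<epsilon> * f x * f g powi (-\<epsilon>)"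
      using fy fp[OF eps, of g "f x"] mG by (simp add: G_def)
    show ?thesis using colc(1) part2 ov
      by (simp add: rho_same el qmul_times qzpow_powi x_def y_def \<epsilon>_def g_def)
  qed
  show ?thesis unfolding colored_def using labT cr by blast
qed

definition Sb :: "diagram \<Rightarrow> nat set" where
  "Sb D = {e \<in> Es D \<union> Fs D. bad (elab D e)}"

lemma orient_Sb: "orient_bg D = reverse_edges (Sb D) D"
  unfolding orient_bg_def Sb_def bad_def ..

lemma closed_Sb: assumes wf: "wf_pd D" and col: "colored D" shows "closedS (Sb D) D"
  unfolding closedS_def
proof
  fix e assume e: "e \<in> Es D"
  have H: "sysH (Es D \<union> Fs D) (esucc D) (ufactor D) (elab D)" by (rule sysH_diag[OF wf col])
  have se: "esucc D e \<in> Es D" using esucc_props(1)[OF wf e] .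
  have "bad (elab D (esucc D e)) \<longleftrightarrow> bad (elab D e)"
    using local_col[OF wf col e] bad_conj[OF ufactor_T[OF wf col] colored_T[OF col]] e by simp
  then show "esucc D e \<in> Sb D \<longleftrightarrow> e \<in> Sb D" using e se by (simp add: Sb_def)
qed

lemma orient_ok: assumes wf: "wf_pd D" and col: "colored D"
  shows "wf_pd (orient_bg D)" "colored (orient_bg D)"
  unfolding orient_Sb using rev_wf[OF wf closed_Sb[OF wf col]] rev_colored[OF wf col closed_Sb[OF wf col]] by auto


definition omegas :: "diagram \<Rightarrow> int \<times> int \<times> int" where
  "omegas D = (omega_b D, l_bg D, omega_c D)"

lemma sub_esucc: "wf_pd E \<Longrightarrow> esucc E ` (Es E \<union> Fs E) \<subseteq> Es E \<union> Fs E"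
  using permH_esucc by (simp add: permH_def)

lemma core_add:
  assumes wf: "wf_pd E" and col: "colored E" and cP: "classP P N"
    and X: "Xs E' = Xs E" and Ee: "Es E' = Es E"
    and ag: "\<forall>e\<in>Es E. ehead E' e = ehead E e \<and> etail E' e = etail E e \<and> elab E' e = elab E e"
    and F: "Fs E' = insert fr (Fs E)" and fr: "fr \<notin> Es E \<union> Fs E"
    and agF: "\<forall>e\<in>Fs E. elab E' e = elab E e" and frT: "elab E' fr \<in> Tstar"
  shows "aSum P N (Es E' \<union> Fs E') (esucc E') (ufactor E') (elab E') = aSum P N (Es E \<union> Fs E) (esucc E) (ufactor E) (elab E)"
    "omegas E' = omegas E"
proof -
  note T = agree_transfer[OF wf X Ee ag]
  show "omegas E' = omegas E" using T by (simp add: omegas_def)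
  let ?A = "Es E \<union> Fs E"
  have H: "sysH ?A (esucc E) (ufactor E) (elab E)" by (rule sysH_diag[OF wf col])
  have frE: "fr \<notin> Es E" using fr by simp
  have pf: "esucc E fr = fr" using frE by (simp add: esucc_def)
  have uf: "ufactor E fr = 1" using frE by (rule ufactor_nEs)
  have chi: "\<forall>a\<in>?A. elab E' a = elab E a" using ag agF by blast
  have H': "sysH (insert fr ?A) (esucc E) (ufactor E) (elab E')"
    by (rule sysH_add[OF H fr pf uf frT chi refl])
  have A': "Es E' \<union> Fs E' = insert fr ?A" using Ee F by auto
  have "aSum P N (insert fr ?A - {fr}) (esucc E) (ufactor E) (elab E') = aSum P N (insert fr ?A) (esucc E) (ufactor E) (elab E')"
    by (rule FL_remove[OF H' cP _ pf uf]) simp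
  moreover have "insert fr ?A - {fr} = ?A" using fr by auto
  moreover have "aSum P N ?A (esucc E) (ufactor E) (elab E') = aSum P N ?A (esucc E) (ufactor E) (elab E)"
    using aSum_cong_chi[OF sub_esucc[OF wf]] chi by metis
  ultimately show "aSum P N (Es E' \<union> Fs E') (esucc E') (ufactor E') (elab E') = aSum P N ?A (esucc E) (ufactor E) (elab E)"
    using A' T by simp
qed

lemma core_rem:
  assumes wf: "wf_pd E" and col: "colored E" and cP: "classP P N"
    and X: "Xs E' = Xs E" and Ee: "Es E' = Es E"
    and ag: "\<forall>e\<in>Es E. ehead E' e = ehead E e \<and> etail E' e = etail E e \<and> elab E' e = elab E e"
    and F: "Fs E' = Fs E - {f}" and f: "f \<in> Fs E"
    and agF: "\<forall>e\<in>Fs E - {f}. elab E' e = elab E e"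
  shows "aSum P N (Es E' \<union> Fs E') (esucc E') (ufactor E') (elab E') = aSum P N (Es E \<union> Fs E) (esucc E) (ufactor E) (elab E)"
    "omegas E' = omegas E"
proof -
  note T = agree_transfer[OF wf X Ee ag]
  show "omegas E' = omegas E" using T by (simp add: omegas_def)
  let ?A = "Es E \<union> Fs E"
  have H: "sysH ?A (esucc E) (ufactor E) (elab E)" by (rule sysH_diag[OF wf col])
  have dj: "Es E \<inter> Fs E = {}" using wf by (simp add: wf_pd_def)
  have fE: "f \<notin> Es E" using f dj by blast
  have pf: "esucc E f = f" using fE by (simp add: esucc_def)
  have uf: "ufactor E f = 1" using fE by (rule ufactor_nEs)
  have A': "Es E' \<union> Fs E' = ?A - {f}" using Ee F fE by auto
  have sub: "esucc E ` (?A - {f}) \<subseteq> ?A - {f}"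
  proof
    fix y assume "y \<in> esucc E ` (?A - {f})"
    then obtain x where x: "x \<in> ?A - {f}" "y = esucc E x" by blast
    show "y \<in> ?A - {f}"
    proof (cases "x \<in> Es E")
      case True
      then have "y \<in> Es E" using esucc_props(1)[OF wf True] x by simp
      then show ?thesis using fE by auto
    next
      case False then show ?thesis using x by (simp add: esucc_def)
    qed
  qed
  have chi: "\<forall>a\<in>?A - {f}. elab E' a = elab E a" using ag agF fE by blast
  have "aSum P N (?A - {f}) (esucc E) (ufactor E) (elab E') = aSum P N (?A - {f}) (esucc E) (ufactor E) (elab E)"
    using aSum_cong_chi[OF sub] chi by metis
  also have "\<dots> = aSum P N ?A (esucc E) (ufactor E) (elab E)"
    using FL_remove[OF H cP _ pf uf] f by simp
  finally show "aSum P N (Es E' \<union> Fs E') (esucc E') (ufactor E') (elab E') = aSum P N ?A (esucc E) (ufactor E) (elab E)"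
    using A' T by simp
qed

lemma core_hs:
  assumes wf: "wf_pd E" and col: "colored E" and cP: "classP P N"
    and e1: "e1 \<in> Es E" and e2: "e2 \<in> Es E" and lab: "elab E e1 = elab E e2"
    and X: "Xs E' = Xs E" and Ee: "Es E' = Es E" and F: "Fs E' = Fs E"
    and ag: "\<forall>e\<in>Es E. ehead E' e = ehead E (sw e1 e2 e) \<and> etail E' e = etail E e \<and> elab E' e = elab E e"
    and agF: "\<forall>e\<in>Fs E. elab E' e = elab E e"
  shows "aSum P N (Es E' \<union> Fs E') (esucc E') (ufactor E') (elab E') = aSum P N (Es E \<union> Fs E) (esucc E) (ufactor E) (elab E)"
    "omegas E' = omegas E"
proof -
  note T = headswap[OF wf e1 e2 lab X Ee ag]
  show "omegas E' = omegas E" using T by (simp add: omegas_def)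
  let ?A = "Es E \<union> Fs E"
  have H: "sysH ?A (esucc E) (ufactor E) (elab E)" by (rule sysH_diag[OF wf col])
  have A': "Es E' \<union> Fs E' = ?A" using Ee F by simp
  have chi: "\<forall>a\<in>?A. elab E' a = elab E a" using ag agF by blast
  have sub: "esucc E' ` ?A \<subseteq> ?A"
  proof -
    have "sysH ?A (esucc E \<circ> sw e1 e2) (ufactor E \<circ> sw e1 e2) (elab E)"
      using sysH_HS[OF H _ _ lab] e1 e2 by simp
    moreover have "esucc E' = esucc E \<circ> sw e1 e2" using T(1) by (simp add: fun_eq_iff)
    ultimately show ?thesis by (simp add: sysH_def permH_def)
  qed
  have "aSum P N ?A (esucc E') (ufactor E') (elab E') = aSum P N ?A (esucc E') (ufactor E') (elab E)"
    using aSum_cong_chi[OF sub] chi by metis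
  also have "\<dots> = aSum P N ?A (esucc E) (ufactor E) (elab E)"
    using HS[OF H cP _ _ lab T(1) T(2)] e1 e2 by simp
  finally show "aSum P N (Es E' \<union> Fs E') (esucc E') (ufactor E') (elab E') = aSum P N ?A (esucc E) (ufactor E) (elab E)"
    using A' by simp
qed

lemma core_ts:
  assumes wf: "wf_pd E" and col: "colored E" and cP: "classP P N"
    and e1: "e1 \<in> Es E" and e2: "e2 \<in> Es E" and lab: "elab E e1 = elab E e2"
    and X: "Xs E' = Xs E" and Ee: "Es E' = Es E" and F: "Fs E' = Fs E"
    and ag: "\<forall>e\<in>Es E. ehead E' e = ehead E e \<and> etail E' e = etail E (sw e1 e2 e) \<and> elab E' e = elab E e"
    and agF: "\<forall>e\<in>Fs E. elab E' e = elab E e"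
  shows "aSum P N (Es E' \<union> Fs E') (esucc E') (ufactor E') (elab E') = aSum P N (Es E \<union> Fs E) (esucc E) (ufactor E) (elab E)"
    "omegas E' = omegas E"
proof -
  note T = tailswap[OF wf e1 e2 lab X Ee ag]
  show "omegas E' = omegas E" using T by (simp add: omegas_def)
  let ?A = "Es E \<union> Fs E"
  have H: "sysH ?A (esucc E) (ufactor E) (elab E)" by (rule sysH_diag[OF wf col])
  have A': "Es E' \<union> Fs E' = ?A" using Ee F by simp
  have chi: "\<forall>a\<in>?A. elab E' a = elab E a" using ag agF by blast
  have sub: "esucc E' ` ?A \<subseteq> ?A"
  proof -
    have "sysH ?A (sw e1 e2 \<circ> esucc E) (ufactor E) (elab E)"
      using sysH_TS[OF H _ _ lab] e1 e2 by simp
    moreover have "esucc E' = sw e1 e2 \<circ> esucc E" using T(1) by (simp add: fun_eq_iff)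
    ultimately show ?thesis by (simp add: sysH_def permH_def)
  qed
  have "aSum P N ?A (esucc E') (ufactor E') (elab E') = aSum P N ?A (esucc E') (ufactor E') (elab E)"
    using aSum_cong_chi[OF sub] chi by metis
  also have "\<dots> = aSum P N ?A (esucc E) (ufactor E) (elab E)"
    using TS[OF H cP _ _ lab T(1)] e1 e2 T(2) by simp
  finally show "aSum P N (Es E' \<union> Fs E') (esucc E') (ufactor E') (elab E') = aSum P N ?A (esucc E) (ufactor E) (elab E)"
    using A' by simp
qed


lemma fresh_notin: assumes "finite (Es D \<union> Fs D)" shows "fresh D \<notin> Es D \<union> Fs D"
proof
  assume a: "fresh D \<in> Es D \<union> Fs D"
  have "fresh D \<le> Max (insert 0 (Es D \<union> Fs D))" using assms a by (intro Max_ge) auto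
  then show False by (simp add: fresh_def)
qed

lemma wf_fin: "wf_pd D \<Longrightarrow> finite (Es D \<union> Fs D)" by (simp add: wf_pd_def)
lemma wf_dj: "wf_pd D \<Longrightarrow> Es D \<inter> Fs D = {}" by (simp add: wf_pd_def)

lemma sw_ehead: "e1 \<noteq> e2 \<Longrightarrow> ((ehead D)(e1 := ehead D e2, e2 := ehead D e1)) e = ehead D (sw e1 e2 e)"
  by (simp add: sw_def)

lemma bm_cases[consumes 3, case_names same swap rem1 rem2]:
  assumes "e1 \<in> Es D \<union> Fs D" "e2 \<in> Es D \<union> Fs D" "Es D \<inter> Fs D = {}"
  obtains (same) "e1 = e2" "band_move D e1 e2 = add_free_loop (elab D e1) D"
  | (swap) "e1 \<noteq> e2" "e1 \<in> Es D" "e2 \<in> Es D"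
      "band_move D e1 e2 = D\<lparr>ehead := (ehead D)(e1 := ehead D e2, e2 := ehead D e1)\<rparr>"
  | (rem1) "e1 \<noteq> e2" "e1 \<in> Fs D" "band_move D e1 e2 = D\<lparr>Fs := Fs D - {e1}\<rparr>"
  | (rem2) "e1 \<noteq> e2" "e2 \<in> Fs D" "e1 \<notin> Fs D" "band_move D e1 e2 = D\<lparr>Fs := Fs D - {e2}\<rparr>"
proof -
  consider "e1 = e2" | "e1 \<noteq> e2" "e1 \<in> Es D" "e2 \<in> Es D" | "e1 \<noteq> e2" "e1 \<in> Fs D"
    | "e1 \<noteq> e2" "e1 \<notin> Fs D" "\<not> (e1 \<in> Es D \<and> e2 \<in> Es D)" by blast
  then show ?thesis
  proof cases
    case 1 then show ?thesis using same by (simp add: band_move_def)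
  next
    case 2 then show ?thesis using swap by (simp add: band_move_def)
  next
    case 3
    then have "e1 \<notin> Es D" using assms(3) by blast
    then show ?thesis using rem1 3 by (simp add: band_move_def)
  next
    case 4
    then have "e2 \<in> Fs D" using assms by blast
    then show ?thesis using rem2 4 by (simp add: band_move_def)
  qed
qed

lemma Qc_inv:
  assumes wf: "wf_pd D" and col: "colored D" and e1: "e1 \<in> Es D \<union> Fs D" and e2: "e2 \<in> Es D \<union> Fs D"
    and lab: "elab D e1 = elab D e2"
  shows "Qc (band_move D e1 e2) = Qc D"
proof -
  let ?D' = "band_move D e1 e2"
  have cP: "classP is_Q8loop 4" by (rule classP_Q8)
  have main: "aSum is_Q8loop 4 (Es ?D' \<union> Fs ?D') (esucc ?D') (ufactor ?D') (elab ?D') =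
        aSum is_Q8loop 4 (Es D \<union> Fs D) (esucc D) (ufactor D) (elab D) \<and> omegas ?D' = omegas D"
  using e1 e2 wf_dj[OF wf]
  proof (cases rule: bm_cases)
    case same
    have fr: "fresh D \<notin> Es D \<union> Fs D" using fresh_notin[OF wf_fin[OF wf]] .
    have x: "elab D e1 \<in> Tstar" using colored_T[OF col e1] .
    show ?thesis
      using core_add[OF wf col cP, of ?D' "fresh D"] same fr x
      by (auto simp: add_free_loop_def)
  next
    case swap
    show ?thesis
      using core_hs[OF wf col cP swap(2,3) lab, of ?D'] swap sw_ehead[OF swap(1), of D] by auto
  next
    case rem1
    show ?thesis using core_rem[OF wf col cP, of ?D' e1] rem1 by auto
  next
    case rem2
    show ?thesis using core_rem[OF wf col cP, of ?D' e2] rem2 by auto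
  qed
  then show ?thesis unfolding Qc_aSum by (simp add: omegas_def)
qed


lemma Qb_aSum: "Qb D = (aSum is_black 6 (Es (orient_bg D) \<union> Fs (orient_bg D)) (esucc (orient_bg D))
      (ufactor (orient_bg D)) (elab (orient_bg D)) - omega_b (orient_bg D) - 4 * l_bg (orient_bg D)) mod 6"
  unfolding Qb_def Qb_oriented_aSum ..

lemma orient_simps:
  "Xs (orient_bg D) = Xs D" "Es (orient_bg D) = Es D" "Fs (orient_bg D) = Fs D"
  "ehead (orient_bg D) e = (if e \<in> Sb D then etail D e else ehead D e)"
  "etail (orient_bg D) e = (if e \<in> Sb D then ehead D e else etail D e)"
  "elab (orient_bg D) e = (if e \<in> Sb D then inverse (elab D e) else elab D e)"
  unfolding orient_Sb rev_simps by simp_all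

lemma Sb_ehead[simp]: "Sb (D\<lparr>ehead := h\<rparr>) = Sb D" by (simp add: Sb_def)

lemma Qb_inv:
  assumes wf: "wf_pd D" and col: "colored D" and e1: "e1 \<in> Es D \<union> Fs D" and e2: "e2 \<in> Es D \<union> Fs D"
    and lab: "elab D e1 = elab D e2"
  shows "Qb (band_move D e1 e2) = Qb D"
proof -
  let ?D' = "band_move D e1 e2"
  let ?E = "orient_bg D"
  let ?E' = "orient_bg ?D'"
  define S where "S = Sb D"
  have E: "?E = reverse_edges S D" by (simp add: orient_Sb S_def)
  have wfE: "wf_pd ?E" and colE: "colored ?E" using orient_ok[OF wf col] by auto
  have cP: "classP is_black 6" by (rule classP_black)
  have main: "aSum is_black 6 (Es ?E' \<union> Fs ?E') (esucc ?E') (ufactor ?E') (elab ?E') =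
        aSum is_black 6 (Es ?E \<union> Fs ?E) (esucc ?E) (ufactor ?E) (elab ?E) \<and> omegas ?E' = omegas ?E"
    using e1 e2 wf_dj[OF wf]
  proof (cases rule: bm_cases)
    case same
    define fr where "fr = fresh D"
    define x where "x = elab D e1"
    have fr: "fr \<notin> Es D \<union> Fs D" using fresh_notin[OF wf_fin[OF wf]] by (simp add: fr_def)
    have xT: "x \<in> Tstar" using colored_T[OF col e1] by (simp add: x_def)
    have D': "?D' = D\<lparr>Fs := insert fr (Fs D), elab := (elab D)(fr := x)\<rparr>"
      using same by (simp add: add_free_loop_def fr_def x_def)
    have S': "e \<in> Sb ?D' \<longleftrightarrow> e \<in> S" if "e \<in> Es D \<union> Fs D" for e
      using that fr by (auto simp: Sb_def S_def D')
    have E': "?E' = reverse_edges (Sb ?D') ?D'" by (simp add: orient_Sb)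
    have "elab ?E' fr = (if fr \<in> Sb ?D' then inverse (elab ?D' fr) else elab ?D' fr)"
      by (simp only: E' rev_simps)
    moreover have "elab ?D' fr = x" by (simp add: D')
    ultimately have frT: "elab ?E' fr \<in> Tstar" using xT Tstar_inverse by simp
    show ?thesis
    proof (rule conjI)
      note C = core_add[OF wfE colE cP, of ?E' fr]
      have a1: "Xs ?E' = Xs ?E" "Es ?E' = Es ?E" "Fs ?E' = insert fr (Fs ?E)" "fr \<notin> Es ?E \<union> Fs ?E"
        using fr by (simp_all add: orient_simps S_def D')
      have a2: "\<forall>e\<in>Es ?E. ehead ?E' e = ehead ?E e \<and> etail ?E' e = etail ?E e \<and> elab ?E' e = elab ?E e"
      proof
        fix e assume "e \<in> Es ?E"
        then have e: "e \<in> Es D" "e \<noteq> fr" using fr by (auto simp: orient_simps S_def)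
        then show "ehead ?E' e = ehead ?E e \<and> etail ?E' e = etail ?E e \<and> elab ?E' e = elab ?E e"
          using S'[of e] by (simp add: orient_simps S_def D')
      qed
      have a3: "\<forall>e\<in>Fs ?E. elab ?E' e = elab ?E e"
      proof
        fix e assume "e \<in> Fs ?E"
        then have e: "e \<in> Fs D" "e \<noteq> fr" using fr by (auto simp: orient_simps S_def)
        then show "elab ?E' e = elab ?E e"
          using S'[of e] by (simp add: orient_simps S_def D')
      qed
      show "aSum is_black 6 (Es ?E' \<union> Fs ?E') (esucc ?E') (ufactor ?E') (elab ?E') =
        aSum is_black 6 (Es ?E \<union> Fs ?E) (esucc ?E) (ufactor ?E) (elab ?E)"
        using C(1)[OF a1(1,2) a2 a1(3,4) a3 frT] .
      show "omegas ?E' = omegas ?E"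
        using C(2)[OF a1(1,2) a2 a1(3,4) a3 frT] .
    qed
  next
    case swap
    have D': "?D' = D\<lparr>ehead := (ehead D)(e1 := ehead D e2, e2 := ehead D e1)\<rparr>" using swap by simp
    have S': "Sb ?D' = S" by (simp add: Sb_def S_def D')
    have E': "?E' = reverse_edges S ?D'" by (simp add: orient_Sb S')
    have labE: "elab ?E e1 = elab ?E e2"
    proof -
      have "e1 \<in> S \<longleftrightarrow> e2 \<in> S" using lab swap by (simp add: S_def Sb_def)
      then show ?thesis using lab by (simp add: orient_simps S_def)
    qed
    have b: "Xs ?E' = Xs ?E" "Es ?E' = Es ?E" "Fs ?E' = Fs ?E" by (simp_all add: orient_simps S_def D')
    have e12: "e1 \<in> Es ?E" "e2 \<in> Es ?E" using swap by (simp_all add: orient_simps S_def)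
    have agF: "\<forall>e\<in>Fs ?E. elab ?E' e = elab ?E e" by (simp add: orient_simps S_def D')
    have sS: "sw e1 e2 e \<in> S \<longleftrightarrow> e \<in> S" if "e1 \<in> S \<longleftrightarrow> e2 \<in> S" for e
      using that by (auto simp: sw_def)
    have Seq: "e1 \<in> S \<longleftrightarrow> e2 \<in> S" using lab swap by (simp add: S_def Sb_def)
    show ?thesis
    proof (cases "e1 \<in> S")
      case True
      then have T2: "e2 \<in> S" using Seq by simp
      have ag: "\<forall>e\<in>Es ?E. ehead ?E' e = ehead ?E e \<and> etail ?E' e = etail ?E (sw e1 e2 e) \<and> elab ?E' e = elab ?E e"
      proof
        fix e assume "e \<in> Es ?E"
        show "ehead ?E' e = ehead ?E e \<and> etail ?E' e = etail ?E (sw e1 e2 e) \<and> elab ?E' e = elab ?E e"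
        proof (cases "e \<in> S")
          case True
          then have "sw e1 e2 e \<in> S" using sS Seq by simp
          then show ?thesis using True swap by (simp add: orient_simps S_def D' sw_ehead)
        next
          case False
          then have "e \<noteq> e1" "e \<noteq> e2" using \<open>e1 \<in> S\<close> T2 by auto
          then show ?thesis using False by (simp add: orient_simps S_def D')
        qed
      qed
      note C = core_ts[OF wfE colE cP e12 labE b ag agF]
      show ?thesis using C by simp
    next
      case False
      then have T2: "e2 \<notin> S" using Seq by simp
      have ag: "\<forall>e\<in>Es ?E. ehead ?E' e = ehead ?E (sw e1 e2 e) \<and> etail ?E' e = etail ?E e \<and> elab ?E' e = elab ?E e"
      proof
        fix e assume "e \<in> Es ?E"
        show "ehead ?E' e = ehead ?E (sw e1 e2 e) \<and> etail ?E' e = etail ?E e \<and> elab ?E' e = elab ?E e"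
        proof (cases "e \<in> S")
          case True
          then have "e \<noteq> e1" "e \<noteq> e2" using \<open>e1 \<notin> S\<close> T2 by auto
          then show ?thesis using True by (simp add: orient_simps S_def D')
        next
          case False
          then have "sw e1 e2 e \<notin> S" using sS Seq by simp
          then show ?thesis using False swap by (simp add: orient_simps S_def D' sw_ehead)
        qed
      qed
      note C = core_hs[OF wfE colE cP e12 labE b ag agF]
      show ?thesis using C by simp
    qed
  next
    case rem1
    have D': "?D' = D\<lparr>Fs := Fs D - {e1}\<rparr>" using rem1 by simp
    have E': "?E' = reverse_edges (Sb ?D') ?D'" by (simp add: orient_Sb)
    have S': "e \<in> Sb ?D' \<longleftrightarrow> e \<in> S" if "e \<in> Es D \<union> Fs D" "e \<noteq> e1" for e
      using that by (auto simp: Sb_def S_def D')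
    have e1E: "e1 \<notin> Es D" using rem1 wf_dj[OF wf] by blast
    have b: "Xs ?E' = Xs ?E" "Es ?E' = Es ?E" "Fs ?E' = Fs ?E - {e1}" "e1 \<in> Fs ?E"
      using rem1 by (simp_all add: orient_simps S_def D')
    have ag: "\<forall>e\<in>Es ?E. ehead ?E' e = ehead ?E e \<and> etail ?E' e = etail ?E e \<and> elab ?E' e = elab ?E e"
    proof
      fix e assume "e \<in> Es ?E"
      then have e: "e \<in> Es D" "e \<noteq> e1" using e1E by (auto simp: orient_simps S_def)
      then show "ehead ?E' e = ehead ?E e \<and> etail ?E' e = etail ?E e \<and> elab ?E' e = elab ?E e"
        using S'[of e] by (simp add: orient_simps S_def D')
    qed
    have agF: "\<forall>e\<in>Fs ?E - {e1}. elab ?E' e = elab ?E e"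
    proof
      fix e assume "e \<in> Fs ?E - {e1}"
      then have e: "e \<in> Fs D" "e \<noteq> e1" by (auto simp: orient_simps S_def)
      then show "elab ?E' e = elab ?E e" using S'[of e] by (simp add: orient_simps S_def D')
    qed
    note C = core_rem[OF wfE colE cP b(1,2) ag b(3,4) agF]
    show ?thesis using C by simp
  next
    case rem2
    have D': "?D' = D\<lparr>Fs := Fs D - {e2}\<rparr>" using rem2 by simp
    have E': "?E' = reverse_edges (Sb ?D') ?D'" by (simp add: orient_Sb)
    have S': "e \<in> Sb ?D' \<longleftrightarrow> e \<in> S" if "e \<in> Es D \<union> Fs D" "e \<noteq> e2" for e
      using that by (auto simp: Sb_def S_def D')
    have e2E: "e2 \<notin> Es D" using rem2 wf_dj[OF wf] by blast
    have b: "Xs ?E' = Xs ?E" "Es ?E' = Es ?E" "Fs ?E' = Fs ?E - {e2}" "e2 \<in> Fs ?E"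
      using rem2 by (simp_all add: orient_simps S_def D')
    have ag: "\<forall>e\<in>Es ?E. ehead ?E' e = ehead ?E e \<and> etail ?E' e = etail ?E e \<and> elab ?E' e = elab ?E e"
    proof
      fix e assume "e \<in> Es ?E"
      then have e: "e \<in> Es D" "e \<noteq> e2" using e2E by (auto simp: orient_simps S_def)
      then show "ehead ?E' e = ehead ?E e \<and> etail ?E' e = etail ?E e \<and> elab ?E' e = elab ?E e"
        using S'[of e] by (simp add: orient_simps S_def D')
    qed
    have agF: "\<forall>e\<in>Fs ?E - {e2}. elab ?E' e = elab ?E e"
    proof
      fix e assume "e \<in> Fs ?E - {e2}"
      then have e: "e \<in> Fs D" "e \<noteq> e2" by (auto simp: orient_simps S_def)
      then show "elab ?E' e = elab ?E e" using S'[of e] by (simp add: orient_simps S_def D')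
    qed
    note C = core_rem[OF wfE colE cP b(1,2) ag b(3,4) agF]
    show ?thesis using C by simp
  qed
  then show ?thesis unfolding Qb_aSum by (simp add: omegas_def)
qed


lemma rho_bm: "rho (band_move D e1 e2) = band_move (rho D) e1 e2"
  by (simp add: band_move_def rho_def add_free_loop_def fresh_def fun_eq_iff)

theorem mainTheorem7:
  assumes "Tstar_diagram D"
    and "allowed_reconnection D e1 e2 s"
  shows "Qb (band_move D e1 e2) = Qb D
       \<and> Qg (band_move D e1 e2) = Qg D
       \<and> Qc (band_move D e1 e2) = Qc D"
proof -
  have wf: "wf_pd D" and col: "colored D" using assms(1) by (auto simp: Tstar_diagram_def)
  have e1: "e1 \<in> Es D \<union> Fs D" and e2: "e2 \<in> Es D \<union> Fs D" and lab: "elab D e1 = elab D e2"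
    using assms(2) by (auto simp: allowed_reconnection_def)
  have b: "Qb (band_move D e1 e2) = Qb D" by (rule Qb_inv[OF wf col e1 e2 lab])
  have c: "Qc (band_move D e1 e2) = Qc D" by (rule Qc_inv[OF wf col e1 e2 lab])
  have wf': "wf_pd (rho D)" using wf by (simp add: rho_wf)
  have col': "colored (rho D)" by (rule rho_colored[OF wf col])
  have e1': "e1 \<in> Es (rho D) \<union> Fs (rho D)" and e2': "e2 \<in> Es (rho D) \<union> Fs (rho D)"
    using e1 e2 by (simp_all add: rho_simps)
  have lab': "elab (rho D) e1 = elab (rho D) e2" using lab by (simp add: rho_simps)
  have g: "Qg (band_move D e1 e2) = Qg D"
    unfolding Qg_def rho_bm using Qb_inv[OF wf' col' e1' e2' lab'] .
  show ?thesis using b g c by simp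
qed


end
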